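(* Let $G$ be an abelian group and let $A$ be an augmented algebra in the monoidal category ${}^{\Bbbk G}_{\Bbbk G}\mathcal{YD}$. Suppose that there exists a chain complex $P_\bullet\to A$ of $A$-bimodules in ${}^{\Bbbk G}_{\Bbbk G}\mathcal{YD}$ which is a resolution of $A$ in the category of (ordinary) $A$-bimodules, and such that for every $n\in\mathbb{N}_0$ the $A$-bimodule $P_n$ is isomorphic, as an $A$-bimodule in $G$-graded vector spaces, to $A\otimes V_n\otimes A$ with $V_n$ a finite dimensional $G$-graded vector space. Then there is an isomorphism of $\mathbb{Z}$-graded vector spaces $\mathrm{H}^\bullet(A,\Bbbk)\cong H(\hom_{AA}(P_\bullet,\Bbbk))$.
   Context: For $G$ abelian, a Yetter–Drinfeld module over $\Bbbk G$ is a $G$-graded vector space with a $G$-action preserving each homogeneous component; the tensor product is graded by $(V\otimes W)_g=\bigoplus_{st=g}V_s\otimes W_t$ with diagonal action, unit $\Bbbk$ in degree $1_G$ with trivial action. An augmented algebra in this category is an algebra $A$ whose multiplication and unit are Yetter–Drinfeld morphisms, together with an algebra map $\varepsilon:A\to\Bbbk$ that is a Yetter–Drinfeld morphism; $\Bbbk$ is an $A$-bimodule via $\varepsilon$. An $A$-bimodule in ${}^{\Bbbk G}_{\Bbbk G}\mathcal{YD}$ has actions which are Yetter–Drinfeld morphisms. $\mathrm{H}^\bullet(A,\Bbbk)=\operatorname{Ext}^\bullet_{A\text{-}A}(A,\Bbbk)$ is Hochschild cohomology with trivial coefficients. For $A$-bimodules $M,N$ in the category, $\hom_{AA}(M,N)=\bigoplus_{h\in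 G}\hom_{AA}(M,N)_h$ where $\hom_{AA}(M,N)_h$ consists of $\Bbbk$-linear $A$-bimodule maps $f:M\to N$ with $f(M_s)\subseteq N_{hs}$ for all $s\in G$ (with $G$-action $(g\cdot f)(x)=g\cdot f(g^{-1}\cdot x)$); $\hom_{AA}(P_\bullet,\Bbbk)$ is a cochain complex with differentials given by precomposition with those of $P_\bullet$. *)

theory Defs
  imports Complex_Main
begin

text \<open>The abelian group G is a type
 'g::ab_group_add, written additively (so the unit 1_G is 0). Subspaces of a fixed ambient type are given as sets.\<close>

definition subsp :: "('k::field \<Rightarrow> 'v::ab_group_add \<Rightarrow> 'v) \<Rightarrow> 'v set \<Rightarrow> bool" where
  "subsp sc S \<longleftrightarrow> 0 \<in> S \<and> (\<forall>x\<in>S. \<forall>y\<in>S. x + y \<in> S) \<and> (\<forall>c. \<forall>x\<in>S. sc c x \<in> S)"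

definition lin_on :: "('k::field \<Rightarrow> 'v::ab_group_add \<Rightarrow> 'v) \<Rightarrow> ('k \<Rightarrow> 'w::ab_group_add \<Rightarrow> 'w)
    \<Rightarrow> 'v set \<Rightarrow> ('v \<Rightarrow> 'w) \<Rightarrow> bool" where
  "lin_on sc1 sc2 S f \<longleftrightarrow> (\<forall>x\<in>S. \<forall>y\<in>S. f (x + y) = f x + f y) \<and> (\<forall>c. \<forall>x\<in>S. f (sc1 c x) = sc2 c (f x))"

definition graded_on :: "('k::field \<Rightarrow> 'v::ab_group_add \<Rightarrow> 'v) \<Rightarrow> 'v set \<Rightarrow> ('g \<Rightarrow> 'v set) \<Rightarrow> bool" where
  "graded_on sc S H \<longleftrightarrow> subsp sc S \<and> (\<forall>g. subsp sc (H g) \<and> H g \<subseteq> S) \<and>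
     (\<forall>x\<in>S. \<exists>!c. finite {g. c g \<noteq> 0} \<and> (\<forall>g. c g \<in> H g) \<and> x = (\<Sum>g\<in>{g. c g \<noteq> 0}. c g))"

definition action_on :: "('k::field \<Rightarrow> 'v::ab_group_add \<Rightarrow> 'v) \<Rightarrow> 'v set \<Rightarrow> ('g::ab_group_add \<Rightarrow> 'v set)
    \<Rightarrow> ('g \<Rightarrow> 'v \<Rightarrow> 'v) \<Rightarrow> bool" where
  "action_on sc S H act \<longleftrightarrow> (\<forall>g. lin_on sc sc S (act g) \<and> (\<forall>s. act g ` H s \<subseteq> H s)) \<and>
     (\<forall>x\<in>S. act 0 x = x) \<and> (\<forall>g h. \<forall>x\<in>S. act (g + h) x = act g (act h x))"

definition yd_mod :: "('k::field \<Rightarrow> 'v::ab_group_add \<Rightarrow> 'v) \<Rightarrow> 'v set \<Rightarrow> ('g::ab_group_add \<Rightarrow> 'v set)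
    \<Rightarrow> ('g \<Rightarrow> 'v \<Rightarrow> 'v) \<Rightarrow> bool" where
  "yd_mod sc S H act \<longleftrightarrow> graded_on sc S H \<and> action_on sc S H act"

text \<open>Augmented algebra in the category of Yetter-Drinfeld modules over kG; the
 algebra A is the whole type 'a; k sits in degree 0 with trivial action.\<close>
definition yd_aug_alg :: "('k::field \<Rightarrow> 'a::ab_group_add \<Rightarrow> 'a) \<Rightarrow> ('g::ab_group_add \<Rightarrow> 'a set)
    \<Rightarrow> ('g \<Rightarrow> 'a \<Rightarrow> 'a) \<Rightarrow> ('a \<Rightarrow> 'a \<Rightarrow> 'a) \<Rightarrow> 'a \<Rightarrow> ('a \<Rightarrow> 'k) \<Rightarrow> bool" where
  "yd_aug_alg sc H act mul one eps \<longleftrightarrow>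
     vector_space sc \<and> yd_mod sc UNIV H act \<and>
     (\<forall>x. lin_on sc sc UNIV (mul x)) \<and> (\<forall>y. lin_on sc sc UNIV (\<lambda>x. mul x y)) \<and>
     (\<forall>x y z. mul (mul x y) z = mul x (mul y z)) \<and> (\<forall>x. mul one x = x \<and> mul x one = x) \<and>
     (\<forall>s t. \<forall>x\<in>H s. \<forall>y\<in>H t. mul x y \<in> H (s + t)) \<and>
     (\<forall>g x y. act g (mul x y) = mul (act g x) (act g y)) \<and>
     one \<in> H 0 \<and> (\<forall>g. act g one = one) \<and>
     lin_on sc (*) UNIV eps \<and> eps one = 1 \<and> (\<forall>x y. eps (mul x y) = eps x * eps y) \<and>
     (\<forall>s. s \<noteq> 0 \<longrightarrow> (\<forall>x\<in>H s. eps x = 0)) \<and> (\<forall>g x. eps (act g x) = eps x)"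

definition yd_bimod :: "('k::field \<Rightarrow> 'a::ab_group_add \<Rightarrow> 'a) \<Rightarrow> ('g::ab_group_add \<Rightarrow> 'a set)
    \<Rightarrow> ('g \<Rightarrow> 'a \<Rightarrow> 'a) \<Rightarrow> ('a \<Rightarrow> 'a \<Rightarrow> 'a) \<Rightarrow> 'a
    \<Rightarrow> ('k \<Rightarrow> 'p::ab_group_add \<Rightarrow> 'p) \<Rightarrow> 'p set \<Rightarrow> ('g \<Rightarrow> 'p set) \<Rightarrow> ('g \<Rightarrow> 'p \<Rightarrow> 'p)
    \<Rightarrow> ('a \<Rightarrow> 'p \<Rightarrow> 'p) \<Rightarrow> ('p \<Rightarrow> 'a \<Rightarrow> 'p) \<Rightarrow> bool" where
  "yd_bimod sc H act mul one scp S HP actp lft rgt \<longleftrightarrow>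
     yd_mod scp S HP actp \<and>
     (\<forall>a. \<forall>x\<in>S. lft a x \<in> S \<and> rgt x a \<in> S) \<and>
     (\<forall>a. lin_on scp scp S (lft a)) \<and> (\<forall>x\<in>S. lin_on sc scp UNIV (\<lambda>a. lft a x)) \<and>
     (\<forall>a. lin_on scp scp S (\<lambda>x. rgt x a)) \<and> (\<forall>x\<in>S. lin_on sc scp UNIV (rgt x)) \<and>
     (\<forall>a b. \<forall>x\<in>S. lft (mul a b) x = lft a (lft b x)) \<and> (\<forall>x\<in>S. lft one x = x) \<and>
     (\<forall>a b. \<forall>x\<in>S. rgt x (mul a b) = rgt (rgt x a) b) \<and> (\<forall>x\<in>S. rgt x one = x) \<and>
     (\<forall>a b. \<forall>x\<in>S. lft a (rgt x b) = rgt (lft a x) b) \<and>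
     (\<forall>s t. \<forall>a\<in>H s. \<forall>x\<in>HP t. lft a x \<in> HP (s + t) \<and> rgt x a \<in> HP (t + s)) \<and>
     (\<forall>g a. \<forall>x\<in>S. actp g (lft a x) = lft (act g a) (actp g x) \<and>
                  actp g (rgt x a) = rgt (actp g x) (act g a))"

definition yd_bimod_hom :: "('k::field \<Rightarrow> 'p::ab_group_add \<Rightarrow> 'p) \<Rightarrow> 'p set \<Rightarrow> ('g \<Rightarrow> 'p set)
    \<Rightarrow> ('g \<Rightarrow> 'p \<Rightarrow> 'p) \<Rightarrow> ('a \<Rightarrow> 'p \<Rightarrow> 'p) \<Rightarrow> ('p \<Rightarrow> 'a \<Rightarrow> 'p)
    \<Rightarrow> ('k \<Rightarrow> 'q::ab_group_add \<Rightarrow> 'q) \<Rightarrow> 'q set \<Rightarrow> ('g \<Rightarrow> 'q set)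
    \<Rightarrow> ('g \<Rightarrow> 'q \<Rightarrow> 'q) \<Rightarrow> ('a \<Rightarrow> 'q \<Rightarrow> 'q) \<Rightarrow> ('q \<Rightarrow> 'a \<Rightarrow> 'q) \<Rightarrow> ('p \<Rightarrow> 'q) \<Rightarrow> bool" where
  "yd_bimod_hom scp S HP actp lftp rgtp scq T HQ actq lftq rgtq f \<longleftrightarrow>
     lin_on scp scq S f \<and> f ` S \<subseteq> T \<and> (\<forall>s. f ` HP s \<subseteq> HQ s) \<and>
     (\<forall>g. \<forall>x\<in>S. f (actp g x) = actq g (f x)) \<and>
     (\<forall>a. \<forall>x\<in>S. f (lftp a x) = lftq a (f x) \<and> f (rgtp x a) = rgtq (f x) a)"

definition bilin :: "('k::field \<Rightarrow> 'a::ab_group_add \<Rightarrow> 'a) \<Rightarrow> ('a \<Rightarrow> 'a \<Rightarrow> 'k) \<Rightarrow> bool" where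
  "bilin sc \<beta> \<longleftrightarrow> (\<forall>x. lin_on sc (*) UNIV (\<beta> x)) \<and> (\<forall>y. lin_on sc (*) UNIV (\<lambda>x. \<beta> x y))"

text \<open>The bimodule S is isomorphic, as an A-bimodule in G-graded vector spaces, to
 A \<otimes> V \<otimes> A with V a finite-dimensional G-graded vector space.  Unfolded: there is a
 finite set B of homogeneous elements of S (the images of 1 \<otimes> v \<otimes> 1 for a homogeneous
 basis v of V) such that the map from the direct sum over b \<in> B of A \<otimes> A to S,
 x \<otimes> y (in summand b) \<mapsto> x b y, is bijective. Injectivity is expressed by: an element
 sum_j x_j \<otimes> y_j of A \<otimes> A vanishes iff every bilinear form \<beta> on A has sum_j \<beta> x_j y_j = 0.\<close>
definition free_fin_graded :: "('k::field \<Rightarrow> 'a::ab_group_add \<Rightarrow> 'a) \<Rightarrow> ('a \<Rightarrow> 'p::ab_group_add \<Rightarrow> 'p)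
    \<Rightarrow> ('p \<Rightarrow> 'a \<Rightarrow> 'p) \<Rightarrow> 'p set \<Rightarrow> ('g \<Rightarrow> 'p set) \<Rightarrow> bool" where
  "free_fin_graded sc lft rgt S HP \<longleftrightarrow> (\<exists>B. finite B \<and> B \<subseteq> S \<and> (\<forall>b\<in>B. \<exists>s. b \<in> HP s) \<and>
     (\<forall>x\<in>S. \<exists>ts :: ('a \<times> 'p \<times> 'a) list. (\<forall>(a, b, c)\<in>set ts. b \<in> B) \<and>
            x = sum_list (map (\<lambda>(a, b, c). lft a (rgt b c)) ts)) \<and>
     (\<forall>ts :: ('a \<times> 'p \<times> 'a) list. (\<forall>(a, b, c)\<in>set ts. b \<in> B) \<and>
            sum_list (map (\<lambda>(a, b, c). lft a (rgt b c)) ts) = 0 \<longrightarrow>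
            (\<forall>b0\<in>B. \<forall>\<beta>. bilin sc \<beta> \<longrightarrow>
               sum_list (map (\<lambda>(a, b, c). if b = b0 then \<beta> a c else 0) ts) = 0)))"

subsection \<open>Hochschild cohomology H^n(A,k) = Ext^n_{A-A}(A,k) via the (normalized-free)
 bar resolution: cochains are k-multilinear maps A^n \<rightarrow> k (= linear maps A^{\<otimes>n} \<rightarrow> k).\<close>

definition hoch_cochains :: "('k::field \<Rightarrow> 'a::ab_group_add \<Rightarrow> 'a) \<Rightarrow> nat \<Rightarrow> ('a list \<Rightarrow> 'k) set" where
  "hoch_cochains sc n = {f. (\<forall>xs. length xs \<noteq> n \<longrightarrow> f xs = 0) \<and>
      (\<forall>us vs. length us + length vs + 1 = n \<longrightarrow> lin_on sc (*) UNIV (\<lambda>x. f (us @ x # vs)))}"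

definition hoch_diff :: "('a \<Rightarrow> 'a \<Rightarrow> 'a) \<Rightarrow> ('a \<Rightarrow> 'k::field) \<Rightarrow> nat \<Rightarrow> ('a list \<Rightarrow> 'k) \<Rightarrow> 'a list \<Rightarrow> 'k" where
  "hoch_diff mul eps n f xs = (if length xs = Suc n then
      eps (xs ! 0) * f (tl xs)
      + (\<Sum>i<n. (-1) ^ (i + 1) * f (take i xs @ mul (xs ! i) (xs ! Suc i) # drop (i + 2) xs))
      + (-1) ^ (n + 1) * f (butlast xs) * eps (last xs)
    else 0)"

definition hoch_cocycles :: "('k::field \<Rightarrow> 'a::ab_group_add \<Rightarrow> 'a) \<Rightarrow> ('a \<Rightarrow> 'a \<Rightarrow> 'a) \<Rightarrow> ('a \<Rightarrow> 'k)
    \<Rightarrow> nat \<Rightarrow> ('a list \<Rightarrow> 'k) set" where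
  "hoch_cocycles sc mul eps n = {f \<in> hoch_cochains sc n. hoch_diff mul eps n f = (\<lambda>_. 0)}"

definition hoch_coboundaries :: "('k::field \<Rightarrow> 'a::ab_group_add \<Rightarrow> 'a) \<Rightarrow> ('a \<Rightarrow> 'a \<Rightarrow> 'a) \<Rightarrow> ('a \<Rightarrow> 'k)
    \<Rightarrow> nat \<Rightarrow> ('a list \<Rightarrow> 'k) set" where
  "hoch_coboundaries sc mul eps n = (case n of 0 \<Rightarrow> {\<lambda>_. 0}
      | Suc m \<Rightarrow> hoch_diff mul eps m ` hoch_cochains sc m)"

text \<open>hom_AA(M,k)_h: A-bimodule maps M \<rightarrow> k (k a bimodule via eps, concentrated in degree 0)
 with f(M_s) \<subseteq> k_{h+s}, i.e. f vanishes on M_s unless h + s = 0. Maps are normalized to be 0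
 outside the carrier S.\<close>
definition homAA_deg :: "('k::field \<Rightarrow> 'p::ab_group_add \<Rightarrow> 'p) \<Rightarrow> 'p set \<Rightarrow> ('g::ab_group_add \<Rightarrow> 'p set)
    \<Rightarrow> ('a \<Rightarrow> 'p \<Rightarrow> 'p) \<Rightarrow> ('p \<Rightarrow> 'a \<Rightarrow> 'p) \<Rightarrow> ('a \<Rightarrow> 'k) \<Rightarrow> 'g \<Rightarrow> ('p \<Rightarrow> 'k) set" where
  "homAA_deg scp S HP lft rgt eps h = {f. (\<forall>x. x \<notin> S \<longrightarrow> f x = 0) \<and> lin_on scp (*) S f \<and>
      (\<forall>a. \<forall>x\<in>S. f (lft a x) = eps a * f x \<and> f (rgt x a) = f x * eps a) \<and>
      (\<forall>s. h + s \<noteq> 0 \<longrightarrow> (\<forall>x\<in>HP s. f x = 0))}"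

definition homAA :: "('k::field \<Rightarrow> 'p::ab_group_add \<Rightarrow> 'p) \<Rightarrow> 'p set \<Rightarrow> ('g::ab_group_add \<Rightarrow> 'p set)
    \<Rightarrow> ('a \<Rightarrow> 'p \<Rightarrow> 'p) \<Rightarrow> ('p \<Rightarrow> 'a \<Rightarrow> 'p) \<Rightarrow> ('a \<Rightarrow> 'k) \<Rightarrow> ('p \<Rightarrow> 'k) set" where
  "homAA scp S HP lft rgt eps = {f. \<exists>F fs. finite F \<and> (\<forall>h\<in>F. fs h \<in> homAA_deg scp S HP lft rgt eps h) \<and>
      f = (\<lambda>x. \<Sum>h\<in>F. fs h x)}"

definition hom_diff :: "(nat \<Rightarrow> 'p set) \<Rightarrow> (nat \<Rightarrow> 'p \<Rightarrow> 'p) \<Rightarrow> nat \<Rightarrow> ('p \<Rightarrow> 'k::field) \<Rightarrow> 'p \<Rightarrow> 'k" where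
  "hom_diff P d n f = (\<lambda>x. if x \<in> P (Suc n) then f (d n x) else 0)"

definition hom_cocycles :: "('k::field \<Rightarrow> 'p::ab_group_add \<Rightarrow> 'p) \<Rightarrow> (nat \<Rightarrow> 'p set) \<Rightarrow> (nat \<Rightarrow> 'g::ab_group_add \<Rightarrow> 'p set)
    \<Rightarrow> ('a \<Rightarrow> 'p \<Rightarrow> 'p) \<Rightarrow> ('p \<Rightarrow> 'a \<Rightarrow> 'p) \<Rightarrow> ('a \<Rightarrow> 'k) \<Rightarrow> (nat \<Rightarrow> 'p \<Rightarrow> 'p) \<Rightarrow> nat \<Rightarrow> ('p \<Rightarrow> 'k) set" where
  "hom_cocycles scp P HP lft rgt eps d n =
     {f \<in> homAA scp (P n) (HP n) lft rgt eps. hom_diff P d n f = (\<lambda>_. 0)}"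

definition hom_coboundaries :: "('k::field \<Rightarrow> 'p::ab_group_add \<Rightarrow> 'p) \<Rightarrow> (nat \<Rightarrow> 'p set) \<Rightarrow> (nat \<Rightarrow> 'g::ab_group_add \<Rightarrow> 'p set)
    \<Rightarrow> ('a \<Rightarrow> 'p \<Rightarrow> 'p) \<Rightarrow> ('p \<Rightarrow> 'a \<Rightarrow> 'p) \<Rightarrow> ('a \<Rightarrow> 'k) \<Rightarrow> (nat \<Rightarrow> 'p \<Rightarrow> 'p) \<Rightarrow> nat \<Rightarrow> ('p \<Rightarrow> 'k) set" where
  "hom_coboundaries scp P HP lft rgt eps d n = (case n of 0 \<Rightarrow> {\<lambda>_. 0}
      | Suc m \<Rightarrow> hom_diff P d m ` homAA scp (P m) (HP m) lft rgt eps)"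

text \<open>Z1/B1 and Z2/B2 are isomorphic k-vector spaces: there is a k-linear map Z1 \<rightarrow> Z2
 inducing a bijection Z1/B1 \<rightarrow> Z2/B2.\<close>
definition quot_iso :: "('x \<Rightarrow> 'k::field) set \<Rightarrow> ('x \<Rightarrow> 'k) set \<Rightarrow> ('y \<Rightarrow> 'k) set \<Rightarrow> ('y \<Rightarrow> 'k) set \<Rightarrow> bool" where
  "quot_iso Z1 B1 Z2 B2 \<longleftrightarrow> (\<exists>\<phi>. (\<forall>z\<in>Z1. \<phi> z \<in> Z2) \<and>
     (\<forall>z\<in>Z1. \<forall>w\<in>Z1. \<phi> (\<lambda>x. z x + w x) = (\<lambda>y. \<phi> z y + \<phi> w y)) \<and>
     (\<forall>c. \<forall>z\<in>Z1. \<phi> (\<lambda>x. c * z x) = (\<lambda>y. c * \<phi> z y)) \<and>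
     (\<forall>z\<in>Z1. \<phi> z \<in> B2 \<longleftrightarrow> z \<in> B1) \<and>
     (\<forall>w\<in>Z2. \<exists>z\<in>Z1. (\<lambda>y. w y - \<phi> z y) \<in> B2))"

end

theory Submission
  imports Defs
begin

lemma vs_self: "vector_space ((*) :: 'k::field \<Rightarrow> 'k \<Rightarrow> 'k)"
  by unfold_locales (auto simp: algebra_simps)

lemma lin_on_linear: "Vector_Spaces.linear s1 s2 f \<Longrightarrow> lin_on s1 s2 S f"
  by (auto simp: Vector_Spaces.linear_iff lin_on_def)

lemma separate:
  fixes scv :: "'k::field \<Rightarrow> 'v::ab_group_add \<Rightarrow> 'v"
  assumes vs: "vector_space scv" and v: "v \<noteq> 0"
  shows "\<exists>l. lin_on scv (*) UNIV l \<and> l v \<noteq> 0"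
proof -
  interpret vs1: vector_space scv by fact
  interpret vs2: vector_space "(*) :: 'k::field \<Rightarrow> 'k \<Rightarrow> 'k" by (rule vs_self)
  interpret p: vector_space_pair scv "(*) :: 'k \<Rightarrow> 'k \<Rightarrow> 'k" by unfold_locales
  have ind: "vs1.independent {v}"
    using v vs1.independent_insert[of v "{}"] by auto
  show ?thesis
    apply (rule exI[of _ "p.construct {v} (\<lambda>_. 1)"])
    using p.linear_construct[OF ind] p.construct_basis[OF ind, of v]
    by (auto intro: lin_on_linear)
qed

lemma separate2:
  fixes scv :: "'k::field \<Rightarrow> 'v::ab_group_add \<Rightarrow> 'v"
  assumes vs: "vector_space scv" and "\<And>l. lin_on scv (*) UNIV l \<Longrightarrow> (l v :: 'k::field) = 0"
  shows "v = 0"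
  using separate[OF vs, of v] assms(2) by blast

lemma lin_on_zero: "lin_on s1 s2 V f \<Longrightarrow> 0 \<in> V \<Longrightarrow> f 0 = 0"
  unfolding lin_on_def by (metis add.right_neutral add_left_cancel)

lemma linear_extension:
  assumes vs1: "vector_space s1" and vs2: "vector_space s2"
    and V: "subsp s1 V" and f: "lin_on s1 s2 V f"
  shows "\<exists>f'. Vector_Spaces.linear s1 s2 f' \<and> (\<forall>x\<in>V. f' x = f x)"
proof -
  interpret vs1: vector_space s1 by fact
  interpret vs2: vector_space s2 by fact
  interpret p: vector_space_pair s1 s2 by unfold_locales
  obtain B where B: "B \<subseteq> V" "vs1.independent B" "V \<subseteq> vs1.span B"
    using vs1.maximal_independent_subset by blast
  define f' where "f' = p.construct B f"
  have lf: "Vector_Spaces.linear s1 s2 f'" unfolding f'_def by (rule p.linear_construct[OF B(2)])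
  have sub: "vs1.subspace {x \<in> V. f' x = f x}"
    unfolding vs1.subspace_def
  proof (intro conjI ballI allI)
    show "0 \<in> {x \<in> V. f' x = f x}"
      using V f lf lin_on_zero[OF f] by (auto simp: subsp_def p.linear_0)
    fix x y assume x: "x \<in> {x \<in> V. f' x = f x}" and y: "y \<in> {x \<in> V. f' x = f x}"
    then show "x + y \<in> {x \<in> V. f' x = f x}"
      using V f p.linear_add[OF lf] by (auto simp: subsp_def lin_on_def)
  next
    fix c x assume x: "x \<in> {x \<in> V. f' x = f x}"
    then show "s1 c x \<in> {x \<in> V. f' x = f x}"
      using V f p.linear_scale[OF lf] by (auto simp: subsp_def lin_on_def)
  qed
  have "B \<subseteq> {x \<in> V. f' x = f x}"
    using B p.construct_basis[OF B(2)] by (auto simp: f'_def)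
  then have "vs1.span B \<subseteq> {x \<in> V. f' x = f x}" by (rule vs1.span_minimal[OF _ sub])
  then show ?thesis using B lf by blast
qed

lemma linear_section:
  assumes vs1: "vector_space s1" and vs2: "vector_space s2"
    and V: "subsp s1 V" and f: "lin_on s1 s2 V f"
  shows "\<exists>g. (\<forall>y. g y \<in> V) \<and> Vector_Spaces.linear s2 s1 g \<and> (\<forall>y\<in>f ` V. f (g y) = y)"
proof -
  interpret vs1: vector_space s1 by fact
  interpret vs2: vector_space s2 by fact
  interpret p: vector_space_pair s1 s2 by unfold_locales
  obtain f' where f': "Vector_Spaces.linear s1 s2 f'" "\<forall>x\<in>V. f' x = f x"
    using linear_extension[OF vs1 vs2 V f] by blast
  have "vs1.subspace V" using V by (simp add: subsp_def vs1.subspace_def)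
  from p.linear_exists_right_inverse_on[OF f'(1) this]
  obtain g where g: "g ` UNIV \<subseteq> V" "Vector_Spaces.linear s2 s1 g" "\<forall>v\<in>f' ` V. f' (g v) = v" by blast
  have "f' ` V = f ` V" using f'(2) by auto
  moreover have "f (g y) = y" if "y \<in> f ` V" for y
    proof -
    have "g y \<in> V" using g(1) by auto
    then have "f (g y) = f' (g y)" using f'(2) by auto
    also have "\<dots> = y" using g(3) that \<open>f' ` V = f ` V\<close> by auto
    finally show ?thesis .
  qed
  ultimately show ?thesis using g by (intro exI[of _ g]) auto
qed



lemma addS:
  assumes "\<forall>x\<in>S. \<forall>y\<in>S. f (x+y) = f x + f y" "0 \<in> S" "\<forall>x\<in>S. -x \<in> S"
  shows addS_0: "f 0 = (0::'b::ab_group_add)" and addS_minus: "x\<in>S \<Longrightarrow> f (-(x::'a::ab_group_add)) = - f x"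
    and addS_diff: "x\<in>S \<Longrightarrow> y\<in>S \<Longrightarrow> f (x - y) = f x - f y"
proof -
  show z: "f 0 = 0" using assms(1,2) by (metis add.right_neutral add_left_cancel)
  show m: "x\<in>S \<Longrightarrow> f (-x) = - f x" for x
    using assms(1,3)[rule_format, of x] z by (metis add.right_inverse eq_neg_iff_add_eq_0)
  show "x\<in>S \<Longrightarrow> y\<in>S \<Longrightarrow> f (x - y) = f x - f y"
    using assms(1) m assms(3) by (metis diff_conv_add_uminus)
qed

locale R =
  fixes sc :: "'k::field \<Rightarrow> 'a::ab_group_add \<Rightarrow> 'a"
    and H :: "'g::ab_group_add \<Rightarrow> 'a set"
    and act :: "'g \<Rightarrow> 'a \<Rightarrow> 'a"
    and mul :: "'a \<Rightarrow> 'a \<Rightarrow> 'a" and one :: 'a and eps :: "'a \<Rightarrow> 'k"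
    and scp :: "'k \<Rightarrow> 'p::ab_group_add \<Rightarrow> 'p"
    and P :: "nat \<Rightarrow> 'p set" and HP :: "nat \<Rightarrow> 'g \<Rightarrow> 'p set" and actp :: "'g \<Rightarrow> 'p \<Rightarrow> 'p"
    and lft :: "'a \<Rightarrow> 'p \<Rightarrow> 'p" and rgt :: "'p \<Rightarrow> 'a \<Rightarrow> 'p"
    and d :: "nat \<Rightarrow> 'p \<Rightarrow> 'p" and aug :: "'p \<Rightarrow> 'a"
  assumes alg: "yd_aug_alg sc H act mul one eps"
    and vsp: "vector_space scp"
    and bimod: "\<forall>n. yd_bimod sc H act mul one scp (P n) (HP n) actp lft rgt"
    and diff: "\<forall>n. yd_bimod_hom scp (P (Suc n)) (HP (Suc n)) actp lft rgt scp (P n) (HP n) actp lft rgt (d n)"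
    and augm: "yd_bimod_hom scp (P 0) (HP 0) actp lft rgt sc UNIV H act mul mul aug"
    and exact_aug: "aug ` P 0 = UNIV"
    and exact_0: "{x \<in> P 0. aug x = 0} = d 0 ` P 1"
    and exact_n: "\<forall>n. {x \<in> P (Suc n). d n x = 0} = d (Suc n) ` P (Suc (Suc n))"
    and free: "\<forall>n. free_fin_graded sc lft rgt (P n) (HP n)"
begin

lemma VA: "vector_space sc" using alg by (simp add: yd_aug_alg_def)
lemma VK: "vector_space ((*) :: 'k \<Rightarrow> 'k \<Rightarrow> 'k)" by (rule vs_self)

sublocale A: vector_space sc by (rule VA)
sublocale Pv: vector_space scp by (rule vsp)

lemma mul_addL: "mul (x + y) z = mul x z + mul y z"
  and mul_addR: "mul z (x + y) = mul z x + mul z y"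
  and mul_scL: "mul (sc c x) y = sc c (mul x y)"
  and mul_scR: "mul x (sc c y) = sc c (mul x y)"
  and mul_assoc: "mul (mul x y) z = mul x (mul y z)"
  and mul_oneL: "mul one x = x" and mul_oneR: "mul x one = x"
  and eps_add: "eps (x + y) = eps x + eps y"
  and eps_sc: "eps (sc c x) = c * eps x"
  and eps_mul: "eps (mul x y) = eps x * eps y"
  and eps_one: "eps one = 1"
  using alg by (auto simp: yd_aug_alg_def lin_on_def)

lemma mul_zeroL: "mul 0 y = 0" and mul_zeroR: "mul y 0 = 0"
  and mul_minusL: "mul (-x) y = - mul x y" and mul_minusR: "mul y (-x) = - mul y x"
  and mul_diffL: "mul (x - x') y = mul x y - mul x' y" and mul_diffR: "mul y (x - x') = mul y x - mul y x'"
  and eps_zero: "eps 0 = 0" and eps_minus: "eps (-x) = - eps x" and eps_diff: "eps (x - x') = eps x - eps x'"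
  using addS[of UNIV "\<lambda>x. mul x y"] addS[of UNIV "mul y"] addS[of UNIV eps]
  by (auto simp: mul_addL mul_addR eps_add)

lemma eps_lin: "lin_on sc (*) UNIV eps" by (simp add: lin_on_def eps_add eps_sc)

lemma bm: "yd_bimod sc H act mul one scp (P n) (HP n) actp lft rgt" using bimod by blast

lemma P_sub: "subsp scp (P n)" using bm[of n] by (simp add: yd_bimod_def yd_mod_def graded_on_def)
lemma P_0: "0 \<in> P n" and P_add: "x \<in> P n \<Longrightarrow> y \<in> P n \<Longrightarrow> x + y \<in> P n"
  and P_sc: "x \<in> P n \<Longrightarrow> scp c x \<in> P n"
  using P_sub[of n] by (auto simp: subsp_def)
lemma P_minus: "x \<in> P n \<Longrightarrow> -x \<in> P n"
  using P_sc[of x n "-1"] by simp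
lemma P_diff: "x \<in> P n \<Longrightarrow> y \<in> P n \<Longrightarrow> x - y \<in> P n"
  using P_add P_minus by (metis diff_conv_add_uminus)
lemma P_sum: "(\<And>i. i \<in> I \<Longrightarrow> f i \<in> P n) \<Longrightarrow> sum f I \<in> P n"
  by (induction I rule: infinite_finite_induct) (auto intro: P_0 P_add)
lemma P_sum_list: "(\<And>t. t \<in> set ts \<Longrightarrow> f t \<in> P n) \<Longrightarrow> sum_list (map f ts) \<in> P n"
  by (induction ts) (auto intro: P_0 P_add)

lemma lft_P: "x \<in> P n \<Longrightarrow> lft a x \<in> P n" and rgt_P: "x \<in> P n \<Longrightarrow> rgt x a \<in> P n"
  using bm[of n] by (auto simp: yd_bimod_def)

lemma lft_add: "x \<in> P n \<Longrightarrow> y \<in> P n \<Longrightarrow> lft a (x + y) = lft a x + lft a y"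
  and lft_sc: "x \<in> P n \<Longrightarrow> lft a (scp c x) = scp c (lft a x)"
  and lft_addL: "x \<in> P n \<Longrightarrow> lft (a + a') x = lft a x + lft a' x"
  and lft_scL: "x \<in> P n \<Longrightarrow> lft (sc c a) x = scp c (lft a x)"
  and rgt_add: "x \<in> P n \<Longrightarrow> y \<in> P n \<Longrightarrow> rgt (x + y) a = rgt x a + rgt y a"
  and rgt_sc: "x \<in> P n \<Longrightarrow> rgt (scp c x) a = scp c (rgt x a)"
  and rgt_addR: "x \<in> P n \<Longrightarrow> rgt x (a + a') = rgt x a + rgt x a'"
  and rgt_scR: "x \<in> P n \<Longrightarrow> rgt x (sc c a) = scp c (rgt x a)"
  and lft_mul: "x \<in> P n \<Longrightarrow> lft (mul a b) x = lft a (lft b x)"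
  and lft_one: "x \<in> P n \<Longrightarrow> lft one x = x"
  and rgt_mul: "x \<in> P n \<Longrightarrow> rgt x (mul a b) = rgt (rgt x a) b"
  and rgt_one: "x \<in> P n \<Longrightarrow> rgt x one = x"
  and lft_rgt: "x \<in> P n \<Longrightarrow> lft a (rgt x b) = rgt (lft a x) b"
  using bm[of n] by (auto simp: yd_bimod_def lin_on_def)

lemma lft_0: "lft a 0 = 0"
proof - have "lft a (0+0) = lft a 0 + lft a 0" by (rule lft_add[OF P_0 P_0]) then show ?thesis by simp qed
lemma rgt_0: "rgt 0 a = 0"
proof - have "rgt (0+0) a = rgt 0 a + rgt 0 a" by (rule rgt_add[OF P_0 P_0]) then show ?thesis by simp qed
lemma lft_minus: "x \<in> P n \<Longrightarrow> lft a (-x) = - lft a x"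
  using lft_add[OF _ P_minus, of x n x a] lft_0 by (metis add.right_inverse eq_neg_iff_add_eq_0)
lemma rgt_minus: "x \<in> P n \<Longrightarrow> rgt (-x) a = - rgt x a"
  using rgt_add[OF _ P_minus, of x n x a] rgt_0 by (metis add.right_inverse eq_neg_iff_add_eq_0)
lemma lft_diff: "x \<in> P n \<Longrightarrow> y \<in> P n \<Longrightarrow> lft a (x - y) = lft a x - lft a y"
  by (metis P_minus diff_conv_add_uminus lft_add lft_minus)
lemma rgt_diff: "x \<in> P n \<Longrightarrow> y \<in> P n \<Longrightarrow> rgt (x - y) a = rgt x a - rgt y a"
  by (metis P_minus diff_conv_add_uminus rgt_add rgt_minus)
lemma lft_zeroL: "x \<in> P n \<Longrightarrow> lft 0 x = 0"
  using lft_addL[of x n 0 0] by simp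
lemma rgt_zeroR: "x \<in> P n \<Longrightarrow> rgt x 0 = 0"
  using rgt_addR[of x n 0 0] by simp
lemma lft_minusL: "x \<in> P n \<Longrightarrow> lft (-a) x = - lft a x"
  using lft_addL[of x n a "-a"] lft_zeroL[of x n] by (simp add: eq_neg_iff_add_eq_0 add.commute)
lemma rgt_minusR: "x \<in> P n \<Longrightarrow> rgt x (-a) = - rgt x a"
  using rgt_addR[of x n a "-a"] rgt_zeroR[of x n] by (simp add: eq_neg_iff_add_eq_0 add.commute)

lemma lft_sum: "x \<in> P n \<Longrightarrow> lft (sum f I) x = (\<Sum>i\<in>I. lft (f i) x)"
  by (induction I rule: infinite_finite_induct) (auto simp: lft_zeroL lft_addL)
lemma rgt_sum: "x \<in> P n \<Longrightarrow> rgt x (sum f I) = (\<Sum>i\<in>I. rgt x (f i))"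
  by (induction I rule: infinite_finite_induct) (auto simp: rgt_zeroR rgt_addR)
lemma lft_sumP: "(\<And>i. i \<in> I \<Longrightarrow> f i \<in> P n) \<Longrightarrow> lft a (sum f I) = (\<Sum>i\<in>I. lft a (f i))"
  by (induction I rule: infinite_finite_induct) (auto simp: lft_0 intro!: trans[OF lft_add] P_sum)
lemma rgt_sumP: "(\<And>i. i \<in> I \<Longrightarrow> f i \<in> P n) \<Longrightarrow> rgt (sum f I) a = (\<Sum>i\<in>I. rgt (f i) a)"
  by (induction I rule: infinite_finite_induct) (auto simp: rgt_0 intro!: trans[OF rgt_add] P_sum)
lemma lft_sum_list: "(\<And>t. t \<in> set ts \<Longrightarrow> f t \<in> P n) \<Longrightarrow> lft a (sum_list (map f ts)) = sum_list (map (\<lambda>t. lft a (f t)) ts)"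
  by (induction ts) (auto simp: lft_0 intro!: trans[OF lft_add] P_sum_list)
lemma rgt_sum_list: "(\<And>t. t \<in> set ts \<Longrightarrow> f t \<in> P n) \<Longrightarrow> rgt (sum_list (map f ts)) a = sum_list (map (\<lambda>t. rgt (f t) a) ts)"
  by (induction ts) (auto simp: rgt_0 intro!: trans[OF rgt_add] P_sum_list)

lemma dh: "yd_bimod_hom scp (P (Suc n)) (HP (Suc n)) actp lft rgt scp (P n) (HP n) actp lft rgt (d n)"
  using diff by blast
lemma d_P: "x \<in> P (Suc n) \<Longrightarrow> d n x \<in> P n"
  and d_add: "x \<in> P (Suc n) \<Longrightarrow> y \<in> P (Suc n) \<Longrightarrow> d n (x + y) = d n x + d n y"
  and d_sc: "x \<in> P (Suc n) \<Longrightarrow> d n (scp c x) = scp c (d n x)"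
  and d_lft: "x \<in> P (Suc n) \<Longrightarrow> d n (lft a x) = lft a (d n x)"
  and d_rgt: "x \<in> P (Suc n) \<Longrightarrow> d n (rgt x a) = rgt (d n x) a"
  using dh[of n] by (auto simp: yd_bimod_hom_def lin_on_def)
lemma d_0: "d n 0 = 0"
proof - have "d n (0+0) = d n 0 + d n 0" by (rule d_add[OF P_0 P_0]) then show ?thesis by simp qed
lemma d_minus: "x \<in> P (Suc n) \<Longrightarrow> d n (-x) = - d n x"
  using d_add[OF _ P_minus, of x n x] d_0 by (metis add.right_inverse eq_neg_iff_add_eq_0)
lemma d_diff: "x \<in> P (Suc n) \<Longrightarrow> y \<in> P (Suc n) \<Longrightarrow> d n (x - y) = d n x - d n y"
  by (metis P_minus diff_conv_add_uminus d_add d_minus)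

lemma aug_add: "x \<in> P 0 \<Longrightarrow> y \<in> P 0 \<Longrightarrow> aug (x + y) = aug x + aug y"
  and aug_sc: "x \<in> P 0 \<Longrightarrow> aug (scp c x) = sc c (aug x)"
  and aug_lft: "x \<in> P 0 \<Longrightarrow> aug (lft a x) = mul a (aug x)"
  and aug_rgt: "x \<in> P 0 \<Longrightarrow> aug (rgt x a) = mul (aug x) a"
  using augm by (auto simp: yd_bimod_hom_def lin_on_def)
lemma aug_0: "aug 0 = 0"
proof - have "aug (0+0) = aug 0 + aug 0" by (rule aug_add[OF P_0 P_0]) then show ?thesis by simp qed

lemma dd: "x \<in> P (Suc (Suc n)) \<Longrightarrow> d n (d (Suc n) x) = 0"
  using exact_n d_P by blast
lemma aug_d: "x \<in> P 1 \<Longrightarrow> aug (d 0 x) = 0"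
  using exact_0 by blast
lemma exact_Suc: "x \<in> P (Suc n) \<Longrightarrow> d n x = 0 \<Longrightarrow> x \<in> d (Suc n) ` P (Suc (Suc n))"
  using exact_n by blast
lemma exact_Z: "x \<in> P 0 \<Longrightarrow> aug x = 0 \<Longrightarrow> x \<in> d 0 ` P 1"
  using exact_0 by blast

end


context R begin

definition lmul :: "'a \<Rightarrow> 'a list \<Rightarrow> 'a list" where
  "lmul a xs = (case xs of [] \<Rightarrow> [] | x # r \<Rightarrow> mul a x # r)"
definition rmul :: "'a \<Rightarrow> 'a list \<Rightarrow> 'a list" where
  "rmul c xs = (if xs = [] then [] else butlast xs @ [mul (last xs) c])"

lemma lmul_Nil[simp]: "lmul a [] = []" and lmul_Cons[simp]: "lmul a (x # r) = mul a x # r"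
  by (simp_all add: lmul_def)
lemma rmul_Nil[simp]: "rmul c [] = []"
  and rmul_single[simp]: "rmul c [x] = [mul x c]"
  and rmul_Cons: "r \<noteq> [] \<Longrightarrow> rmul c (x # r) = x # rmul c r"
  by (auto simp: rmul_def)
lemma rmul_Cons_len: "length r = Suc k \<Longrightarrow> rmul c (x # r) = x # rmul c r"
  by (auto intro: rmul_Cons)
lemma rmul_Cons2[simp]: "rmul c (x # y # r) = x # rmul c (y # r)"
  by (simp add: rmul_Cons)
lemma length_lmul[simp]: "length (lmul a xs) = length xs" by (cases xs) auto
lemma length_rmul[simp]: "length (rmul c xs) = length xs" by (auto simp: rmul_def)
lemma lmul_lmul: "lmul a (lmul b xs) = lmul (mul a b) xs"
  by (cases xs) (auto simp: mul_assoc)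
lemma rmul_rmul: "rmul c (rmul c' xs) = rmul (mul c' c) xs"
  by (auto simp: rmul_def mul_assoc)
lemma lmul_rmul: "lmul a (rmul c xs) = rmul c (lmul a xs)"
proof (cases xs)
  case (Cons x r) then show ?thesis by (cases r) (auto simp: mul_assoc rmul_Cons)
qed simp
lemma rmul_snoc: "rmul c (xs @ [x]) = xs @ [mul x c]" by (simp add: rmul_def)
lemma lmul_one: "lmul one xs = xs" by (cases xs) (auto simp: mul_oneL)
lemma rmul_one: "rmul one xs = xs" by (auto simp: rmul_def mul_oneR)

fun bdst :: "('a list \<Rightarrow> 'v::ab_group_add) \<Rightarrow> 'a list \<Rightarrow> 'v" where
  "bdst f (a0 # a1 # r) = f (mul a0 a1 # r) - bdst (\<lambda>ys. f (a0 # ys)) (a1 # r)"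
| "bdst f _ = 0"

definition eqon :: "nat \<Rightarrow> ('a list \<Rightarrow> 'v) \<Rightarrow> ('a list \<Rightarrow> 'v) \<Rightarrow> bool" where
  "eqon m f g \<longleftrightarrow> (\<forall>xs. length xs = m \<longrightarrow> f xs = g xs)"

lemma bdst_cong: "eqon m f g \<Longrightarrow> length xs = Suc m \<Longrightarrow> bdst f xs = bdst g xs"
proof (induction f xs arbitrary: g m rule: bdst.induct)
  case (1 f a0 a1 r)
  have "eqon (m - 1) (\<lambda>ys. f (a0 # ys)) (\<lambda>ys. g (a0 # ys))"
    using 1(2,3) by (auto simp: eqon_def)
  with 1 show ?case by (auto simp: eqon_def)
qed auto

lemma bdst_add: "bdst (\<lambda>ys. f ys + g ys) xs = bdst f xs + bdst g xs"
  by (induction f xs arbitrary: g rule: bdst.induct) auto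

lemma bdst_nat:
  assumes "\<forall>x y. l (x + y) = l x + l y"
  shows "l (bdst f xs) = bdst (\<lambda>ys. l (f ys)) xs"
proof -
  have l0: "l 0 = 0" and ld: "\<And>x y. l (x - y) = l x - l y"
    using addS[of UNIV l] assms by auto
  show ?thesis by (induction f xs rule: bdst.induct) (auto simp: l0 ld)
qed

lemma bdst_natS:
  assumes "\<forall>x\<in>S. \<forall>y\<in>S. l (x + y) = l x + l y" "0 \<in> S" "\<forall>x\<in>S. \<forall>y\<in>S. x - y \<in> S"
    and "\<forall>ys. f ys \<in> S"
  shows "bdst f xs \<in> S \<and> l (bdst f xs) = bdst (\<lambda>ys. l (f ys)) xs"
proof -
  have mS: "\<forall>x\<in>S. -x \<in> S" using assms(2,3) by (metis diff_0)
  have l0: "l 0 = 0" and ld: "\<And>x y. x \<in> S \<Longrightarrow> y \<in> S \<Longrightarrow> l (x - y) = l x - l y"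
    using addS[of S l] assms(1,2) mS by auto
  show ?thesis using assms(4)
    by (induction f xs rule: bdst.induct) (auto simp: l0 ld assms(2,3))
qed

lemma bdst_minus: "bdst (\<lambda>ys. - f ys) xs = - bdst f xs"
  using bdst_nat[of uminus f xs] by simp
lemma bdst_diff: "bdst (\<lambda>ys. f ys - g ys) xs = bdst f xs - bdst g xs"
  using bdst_add[of f "\<lambda>ys. - g ys" xs] bdst_minus[of g xs] by simp
lemma bdst_zero: "bdst (\<lambda>ys. 0) xs = 0"
  using bdst_nat[of "\<lambda>x. 0" f xs] by simp

lemma bdst_lmul: "bdst (\<lambda>ys. f (lmul a ys)) xs = bdst f (lmul a xs)"
proof (cases xs rule: remdups_adj.cases)
  case (3 a0 a1 r)
  then show ?thesis by (simp add: mul_assoc)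
qed auto

lemma bdst_rmul: "bdst (\<lambda>ys. f (rmul c ys)) xs = bdst f (rmul c xs)"
proof (induction f xs rule: bdst.induct)
  case (1 f a0 a1 r)
  show ?case
  proof (cases r)
    case Nil then show ?thesis by (simp add: mul_assoc)
  next
    case (Cons r0 r')
    have "bdst (\<lambda>ys. f (rmul c (a0 # ys))) (a1 # r) = bdst (\<lambda>ys. f (a0 # rmul c ys)) (a1 # r)"
      by (rule bdst_cong[of "length r"]) (auto simp: eqon_def Cons rmul_Cons_len)
    also have "\<dots> = bdst (\<lambda>ys. f (a0 # ys)) (rmul c (a1 # r))" using 1 by simp
    finally show ?thesis using Cons by (simp add: rmul_Cons)
  qed
qed auto

lemma bdst_Cons: "ys \<noteq> [] \<Longrightarrow> bdst f (a0 # ys) = f (lmul a0 ys) - bdst (\<lambda>zs. f (a0 # zs)) ys"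
  by (cases ys) auto

lemma bdst_bdst: "bdst (bdst f) xs = 0"
proof (induction "length xs" arbitrary: f xs rule: less_induct)
  case less
  show ?case
  proof (cases xs rule: remdups_adj.cases)
    case (3 a0 a1 r)
    show ?thesis
    proof (cases r)
      case Nil then show ?thesis using 3 by simp
    next
      case (Cons r0 r')
      have "bdst (\<lambda>ys. bdst f (a0 # ys)) (a1 # r)
          = bdst (\<lambda>ys. f (lmul a0 ys) - bdst (\<lambda>zs. f (a0 # zs)) ys) (a1 # r)"
        by (rule bdst_cong[of "length r"]) (auto simp: eqon_def Cons intro!: bdst_Cons)
      also have "\<dots> = bdst f (lmul a0 (a1 # r)) - bdst (bdst (\<lambda>zs. f (a0 # zs))) (a1 # r)"
        by (simp add: bdst_diff bdst_lmul)
      also have "bdst (bdst (\<lambda>zs. f (a0 # zs))) (a1 # r) = 0"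
        using less[of "a1 # r"] 3 by simp
      finally show ?thesis using 3 Cons by simp
    qed
  qed auto
qed

lemma bdst_one: "ys \<noteq> [] \<Longrightarrow> bdst f (one # ys) = f ys - bdst (\<lambda>zs. f (one # zs)) ys"
  by (simp add: bdst_Cons lmul_one)

definition mlf :: "('k \<Rightarrow> 'v::ab_group_add \<Rightarrow> 'v) \<Rightarrow> nat \<Rightarrow> ('a list \<Rightarrow> 'v) \<Rightarrow> bool" where
  "mlf scv m f \<longleftrightarrow> (\<forall>us vs. length us + length vs + 1 = m \<longrightarrow> lin_on sc scv UNIV (\<lambda>x. f (us @ x # vs)))"

lemma lin_diff:
  assumes "vector_space scv" "lin_on s scv S f" "lin_on s scv S g"
  shows "lin_on s scv S (\<lambda>x. f x - g x)"
proof -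
  interpret V: vector_space scv by fact
  show ?thesis using assms(2,3) by (auto simp: lin_on_def V.scale_right_diff_distrib)
qed

lemma lin_add:
  assumes "vector_space scv" "lin_on s scv S f" "lin_on s scv S g"
  shows "lin_on s scv S (\<lambda>x. f x + g x)"
proof -
  interpret V: vector_space scv by fact
  show ?thesis using assms(2,3) by (auto simp: lin_on_def V.scale_right_distrib)
qed

lemma lin_zero:
  assumes "vector_space scv"
  shows "lin_on s scv S (\<lambda>x. 0)"
proof -
  interpret V: vector_space scv by fact
  show ?thesis by (auto simp: lin_on_def)
qed

lemma lin_comp: "lin_on sc sc UNIV g \<Longrightarrow> lin_on sc scv UNIV f \<Longrightarrow> lin_on sc scv UNIV (\<lambda>x. f (g x))"
  by (auto simp: lin_on_def)

lemma lin_mulL: "lin_on sc sc UNIV (\<lambda>x. mul x v)" by (auto simp: lin_on_def mul_addL mul_scL)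
lemma lin_mulR: "lin_on sc sc UNIV (\<lambda>x. mul v x)" by (auto simp: lin_on_def mul_addR mul_scR)

lemma mlf_slot: "mlf scv m f \<Longrightarrow> length us + length vs + 1 = m \<Longrightarrow> lin_on sc scv UNIV (\<lambda>x. f (us @ x # vs))"
  by (auto simp: mlf_def)

lemma mlf_Cons: assumes a: "mlf scv m f" shows "mlf scv (m - 1) (\<lambda>ys. f (u # ys))"
proof (unfold mlf_def, intro allI impI)
  fix us vs :: "'a list" assume l: "length us + length vs + 1 = m - 1"
  then have "length (u # us) + length vs + 1 = m" by simp
  from a[unfolded mlf_def, rule_format, OF this] show "lin_on sc scv UNIV (\<lambda>x. f (u # us @ x # vs))" by simp
qed

lemma bdst_ml_aux:
  assumes V: "vector_space scv"
  shows "mlf scv m f \<Longrightarrow> length us + length vs = m \<Longrightarrow> lin_on sc scv UNIV (\<lambda>x. bdst f (us @ x # vs))"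
proof (induction us arbitrary: f m vs)
  case Nil
  interpret V: vector_space scv by fact
  show ?case
  proof (cases vs)
    case Nil then show ?thesis by (simp add: lin_zero[OF V])
  next
    case (Cons v r)
    have l1: "lin_on sc scv UNIV (\<lambda>x. f (mul x v # r))"
      using lin_comp[OF lin_mulL mlf_slot[OF Nil.prems(1), of "[]" r]] Nil.prems Cons by simp
    have e: "\<And>x y. eqon (length r) (\<lambda>ys. f ((x + y) # ys)) (\<lambda>ys. f (x # ys) + f (y # ys))"
      using mlf_slot[OF Nil.prems(1), of "[]"] Nil.prems Cons by (auto simp: eqon_def lin_on_def)
    have e2: "\<And>c x. eqon (length r) (\<lambda>ys. f (sc c x # ys)) (\<lambda>ys. scv c (f (x # ys)))"
      using mlf_slot[OF Nil.prems(1), of "[]"] Nil.prems Cons by (auto simp: eqon_def lin_on_def)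
    have l2: "lin_on sc scv UNIV (\<lambda>x. bdst (\<lambda>ys. f (x # ys)) (v # r))"
      unfolding lin_on_def
    proof (intro conjI ballI allI)
      fix x y
      show "bdst (\<lambda>ys. f ((x + y) # ys)) (v # r) = bdst (\<lambda>ys. f (x # ys)) (v # r) + bdst (\<lambda>ys. f (y # ys)) (v # r)"
        using bdst_cong[OF e[of x y], of "v # r"] by (simp add: bdst_add)
    next
      fix c x
      show "bdst (\<lambda>ys. f (sc c x # ys)) (v # r) = scv c (bdst (\<lambda>ys. f (x # ys)) (v # r))"
        using bdst_cong[OF e2[of c x], of "v # r"] bdst_nat[of "scv c" "\<lambda>ys. f (x # ys)" "v # r"]
        by (simp add: V.scale_right_distrib)
    qed
    show ?thesis using lin_diff[OF V l1 l2] Cons by simp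
  qed
next
  case (Cons u us')
  show ?case
  proof (cases us')
    case Nil
    have l1: "lin_on sc scv UNIV (\<lambda>x. f (mul u x # vs))"
      using lin_comp[OF lin_mulR mlf_slot[OF Cons.prems(1), of "[]" vs]] Cons.prems Nil by simp
    have l2: "lin_on sc scv UNIV (\<lambda>x. bdst (\<lambda>ys. f (u # ys)) ([] @ x # vs))"
      using Cons.IH[OF mlf_Cons[OF Cons.prems(1), of u]] Cons.prems Nil by simp
    show ?thesis using lin_diff[OF V l1 l2] Nil by simp
  next
    case Cons2: (Cons u' us'')
    have l1: "lin_on sc scv UNIV (\<lambda>x. f ((mul u u' # us'') @ x # vs))"
      using mlf_slot[OF Cons.prems(1), of "mul u u' # us''" vs] Cons.prems Cons2 by simp
    have l2: "lin_on sc scv UNIV (\<lambda>x. bdst (\<lambda>ys. f (u # ys)) (us' @ x # vs))"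
      using Cons.IH[OF mlf_Cons[OF Cons.prems(1), of u]] Cons.prems Cons2 by simp
    show ?thesis using lin_diff[OF V l1 l2] Cons2 by simp
  qed
qed

lemma bdst_ml: "vector_space scv \<Longrightarrow> mlf scv m f \<Longrightarrow> mlf scv (Suc m) (bdst f)"
  unfolding mlf_def[of _ "Suc m"] using bdst_ml_aux[of scv m f] by auto

end


context R begin

definition tsum :: "('a \<times> 'p \<times> 'a) list \<Rightarrow> 'p" where
  "tsum ts = sum_list (map (\<lambda>(a, b, c). lft a (rgt b c)) ts)"

definition freeB :: "nat \<Rightarrow> 'p set \<Rightarrow> bool" where
  "freeB n B \<longleftrightarrow> finite B \<and> B \<subseteq> P n \<and> (\<forall>b\<in>B. \<exists>s. b \<in> HP n s) \<and>
     (\<forall>x\<in>P n. \<exists>ts :: ('a \<times> 'p \<times> 'a) list. (\<forall>(a, b, c)\<in>set ts. b \<in> B) \<and>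
            x = sum_list (map (\<lambda>(a, b, c). lft a (rgt b c)) ts)) \<and>
     (\<forall>ts :: ('a \<times> 'p \<times> 'a) list. (\<forall>(a, b, c)\<in>set ts. b \<in> B) \<and>
            sum_list (map (\<lambda>(a, b, c). lft a (rgt b c)) ts) = 0 \<longrightarrow>
            (\<forall>b0\<in>B. \<forall>\<beta>. bilin sc \<beta> \<longrightarrow>
               sum_list (map (\<lambda>(a, b, c). if b = b0 then \<beta> a c else 0) ts) = 0))"

definition Bs :: "nat \<Rightarrow> 'p set" where "Bs n = (SOME B. freeB n B)"

lemma freeB_Bs: "freeB n (Bs n)"
proof -
  have "free_fin_graded sc lft rgt (P n) (HP n)" using free by blast
  then have "\<exists>B. freeB n B" unfolding free_fin_graded_def freeB_def .
  then show ?thesis unfolding Bs_def by (rule someI_ex)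
qed

definition inB :: "nat \<Rightarrow> ('a \<times> 'p \<times> 'a) list \<Rightarrow> bool" where
  "inB n ts \<longleftrightarrow> (\<forall>(a, b, c)\<in>set ts. b \<in> Bs n)"

lemma Bs_fin: "finite (Bs n)"
  using freeB_Bs[of n] unfolding freeB_def by (elim conjE)
lemma Bs_P: "Bs n \<subseteq> P n"
  using freeB_Bs[of n] unfolding freeB_def by (elim conjE)
lemma Bs_hom: "b \<in> Bs n \<Longrightarrow> \<exists>s. b \<in> HP n s"
  using freeB_Bs[of n] unfolding freeB_def by (elim conjE) blast

lemma Bs_span: "x \<in> P n \<Longrightarrow> \<exists>ts. inB n ts \<and> tsum ts = x"
proof -
  assume x: "x \<in> P n"
  have "\<forall>x\<in>P n. \<exists>ts :: ('a \<times> 'p \<times> 'a) list. (\<forall>(a, b, c)\<in>set ts. b \<in> Bs n) \<and>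
            x = sum_list (map (\<lambda>(a, b, c). lft a (rgt b c)) ts)"
    using freeB_Bs[of n] unfolding freeB_def by (elim conjE)
  then obtain ts :: "('a \<times> 'p \<times> 'a) list" where "(\<forall>(a, b, c)\<in>set ts. b \<in> Bs n)"
     "x = sum_list (map (\<lambda>(a, b, c). lft a (rgt b c)) ts)" using x by blast
  then show ?thesis unfolding inB_def tsum_def by blast
qed

lemma Bs_inj: "inB n ts \<Longrightarrow> tsum ts = 0 \<Longrightarrow> b0 \<in> Bs n \<Longrightarrow> bilin sc \<beta> \<Longrightarrow>
      sum_list (map (\<lambda>(a, b, c). if b = b0 then \<beta> a c else 0) ts) = 0"
proof -
  assume a: "inB n ts" "tsum ts = 0" "b0 \<in> Bs n" "bilin sc \<beta>"
  have "\<forall>ts :: ('a \<times> 'p \<times> 'a) list. (\<forall>(a, b, c)\<in>set ts. b \<in> Bs n) \<and>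
            sum_list (map (\<lambda>(a, b, c). lft a (rgt b c)) ts) = 0 \<longrightarrow>
            (\<forall>b0\<in>Bs n. \<forall>\<beta>. bilin sc \<beta> \<longrightarrow>
               sum_list (map (\<lambda>(a, b, c). if b = b0 then \<beta> a c else 0) ts) = 0)"
    using freeB_Bs[of n] unfolding freeB_def by (elim conjE)
  then show ?thesis using a unfolding inB_def tsum_def by blast
qed

lemma Bs_P': "b \<in> Bs n \<Longrightarrow> b \<in> P n" using Bs_P by auto

definition rep :: "nat \<Rightarrow> 'p \<Rightarrow> ('a \<times> 'p \<times> 'a) list" where
  "rep n x = (SOME ts. inB n ts \<and> tsum ts = x)"

lemma rep: assumes "x \<in> P n" shows "inB n (rep n x) \<and> tsum (rep n x) = x"
proof -
  obtain ts where "inB n ts \<and> tsum ts = x" using Bs_span[OF assms] by blast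
  then show ?thesis unfolding rep_def by (rule someI)
qed

definition ext :: "nat \<Rightarrow> ('a \<Rightarrow> 'p \<Rightarrow> 'a \<Rightarrow> 'v::ab_group_add) \<Rightarrow> 'p \<Rightarrow> 'v" where
  "ext n T x = sum_list (map (\<lambda>(a, b, c). T a b c) (rep n x))"

definition goodT :: "('k \<Rightarrow> 'v::ab_group_add \<Rightarrow> 'v) \<Rightarrow> nat \<Rightarrow> ('a \<Rightarrow> 'p \<Rightarrow> 'a \<Rightarrow> 'v) \<Rightarrow> bool" where
  "goodT scv n T \<longleftrightarrow> (\<forall>b\<in>Bs n. \<forall>c. lin_on sc scv UNIV (\<lambda>a. T a b c)) \<and>
                      (\<forall>b\<in>Bs n. \<forall>a. lin_on sc scv UNIV (\<lambda>c. T a b c))"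

lemma inB_append[simp]: "inB n (xs @ ys) \<longleftrightarrow> inB n xs \<and> inB n ys"
  unfolding inB_def by (simp only: set_append ball_Un)
lemma inB_Cons[simp]: "inB n ((a, b, c) # ts) \<longleftrightarrow> b \<in> Bs n \<and> inB n ts"
  by (auto simp: inB_def)
lemma inB_Nil[simp]: "inB n []" by (simp add: inB_def)

lemma tsum_Nil[simp]: "tsum [] = 0" and tsum_Cons[simp]: "tsum ((a, b, c) # ts) = lft a (rgt b c) + tsum ts"
  and tsum_append[simp]: "tsum (xs @ ys) = tsum xs + tsum ys"
  by (auto simp: tsum_def)

lemma tsum_sc: "inB n ts \<Longrightarrow> tsum (map (\<lambda>(a, b, c'). (sc c a, b, c')) ts) = scp c (tsum ts)"
proof (induction ts)
  case (Cons t ts)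
  obtain a b c' where t: "t = (a, b, c')" and b: "b \<in> Bs n" and i: "inB n ts"
    using Cons.prems by (cases t) auto
  have "tsum (map (\<lambda>(a, b, c'). (sc c a, b, c')) (t # ts))
      = lft (sc c a) (rgt b c') + tsum (map (\<lambda>(a, b, c'). (sc c a, b, c')) ts)" by (simp add: t)
  also have "\<dots> = scp c (lft a (rgt b c')) + scp c (tsum ts)"
    using Cons.IH[OF i] lft_scL[OF rgt_P[OF Bs_P'[OF b]]] by simp
  also have "\<dots> = scp c (tsum (t # ts))" by (simp add: t Pv.scale_right_distrib)
  finally show ?case .
qed simp

lemma term_P: "b \<in> Bs n \<Longrightarrow> lft a (rgt b c) \<in> P n"
  using Bs_P' lft_P rgt_P by blast

lemma tsum_P: "inB n ts \<Longrightarrow> tsum ts \<in> P n"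
  by (induction ts) (auto intro!: P_add P_0 term_P)

lemma sum_list_T_induct:
  "inB n ts \<Longrightarrow> sum_list (map (\<lambda>(a, b, c). T a b c) ts) =
     (\<Sum>b0\<in>Bs n. sum_list (map (\<lambda>(a, b, c). if b = b0 then T a b0 c else 0) ts))"
proof (induction ts)
  case Nil then show ?case by simp
next
  case (Cons t ts)
  obtain a b c where t: "t = (a, b, c)" by (cases t) auto
  have b: "b \<in> Bs n" and i: "inB n ts" using Cons.prems t by auto
  have e: "(\<Sum>b0\<in>Bs n. (if b = b0 then T a b0 c else 0)) = T a b c"
    using b Bs_fin[of n] by (simp add: sum.delta)
  have "sum_list (map (\<lambda>(a, b, c). T a b c) (t # ts)) = T a b c + sum_list (map (\<lambda>(a, b, c). T a b c) ts)"
    by (simp add: t)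
  also have "\<dots> = (\<Sum>b0\<in>Bs n. (if b = b0 then T a b0 c else 0)) +
      (\<Sum>b0\<in>Bs n. sum_list (map (\<lambda>(a, b, c). if b = b0 then T a b0 c else 0) ts))"
    using Cons.IH[OF i] e by simp
  also have "\<dots> = (\<Sum>b0\<in>Bs n. (if b = b0 then T a b0 c else 0) + sum_list (map (\<lambda>(a, b, c). if b = b0 then T a b0 c else 0) ts))"
    by (rule sum.distrib[symmetric])
  also have "\<dots> = (\<Sum>b0\<in>Bs n. sum_list (map (\<lambda>(a, b, c). if b = b0 then T a b0 c else 0) (t # ts)))"
    by (simp add: t)
  finally show ?case .
qed

lemma lin_sum_list:
  fixes l :: "'b::ab_group_add \<Rightarrow> 'c::ab_group_add"
  assumes "\<forall>x y. l (x + y) = l x + l y"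
  shows "l (sum_list (map f ts)) = sum_list (map (\<lambda>t. l (f t)) ts)"
proof -
  have "l 0 = 0" using assms by (metis add.right_neutral add_left_cancel)
  then show ?thesis by (induction ts) (simp_all add: assms)
qed


lemma ext_wd:
  fixes T :: "'a \<Rightarrow> 'p \<Rightarrow> 'a \<Rightarrow> 'v::ab_group_add" and scv :: "'k \<Rightarrow> 'v \<Rightarrow> 'v"
  assumes V: "vector_space scv" and g: "goodT scv n T" and ts: "inB n ts" "tsum ts = 0"
  shows "sum_list (map (\<lambda>(a, b, c). T a b c) ts) = 0"
proof -
  have "sum_list (map (\<lambda>(a, b, c). if b = b0 then T a b0 c else 0) ts) = 0" if b0: "b0 \<in> Bs n" for b0
  proof (rule separate2[OF V])
    fix l :: "'v \<Rightarrow> 'k" assume l: "lin_on scv (*) UNIV l"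
    have la: "\<forall>x y. l (x + y) = l x + l y" using l by (simp add: lin_on_def)
    have l0: "l 0 = 0" using la by (metis add.right_neutral add_left_cancel)
    have bil: "bilin sc (\<lambda>a c. l (T a b0 c))"
      using g b0 l unfolding bilin_def goodT_def lin_on_def by auto
    have "l (sum_list (map (\<lambda>(a, b, c). if b = b0 then T a b0 c else 0) ts))
       = sum_list (map (\<lambda>t. l ((\<lambda>(a, b, c). if b = b0 then T a b0 c else 0) t)) ts)"
      by (rule lin_sum_list[OF la])
    also have "map (\<lambda>t. l ((\<lambda>(a, b, c). if b = b0 then T a b0 c else 0) t)) ts
       = map (\<lambda>(a, b, c). if b = b0 then l (T a b0 c) else 0) ts"
      by (rule map_cong) (auto simp: l0 split: prod.splits)
    also have "sum_list \<dots> = 0" using Bs_inj[OF ts b0 bil] .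
    finally show "l (sum_list (map (\<lambda>(a, b, c). if b = b0 then T a b0 c else 0) ts)) = 0" .
  qed
  then show ?thesis using sum_list_T_induct[OF ts(1), of T] by simp
qed

lemma goodT_minus:
  assumes "goodT scv n T" "b \<in> Bs n" shows "T (-a) b c = - T a b c"
proof -
  have "\<forall>x\<in>UNIV. \<forall>y\<in>UNIV. T (x + y) b c = T x b c + T y b c"
    using assms by (auto simp: goodT_def lin_on_def)
  then show ?thesis using addS_minus[of UNIV "\<lambda>a. T a b c"] by auto
qed

lemma tsum_neg: "inB n ts \<Longrightarrow> tsum (map (\<lambda>(a, b, c). (-a, b, c)) ts) = - tsum ts"
proof (induction ts)
  case (Cons t ts)
  obtain a b c' where t: "t = (a, b, c')" and b: "b \<in> Bs n" and i: "inB n ts"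
    using Cons.prems by (cases t) auto
  show ?case using Cons.IH[OF i] lft_minusL[OF rgt_P[OF Bs_P'[OF b]]] by (simp add: t)
qed simp

lemma ext_rep:
  fixes T :: "'a \<Rightarrow> 'p \<Rightarrow> 'a \<Rightarrow> 'v::ab_group_add" and scv :: "'k \<Rightarrow> 'v \<Rightarrow> 'v"
  assumes V: "vector_space scv" and g: "goodT scv n T" and ts: "inB n ts"
  shows "ext n T (tsum ts) = sum_list (map (\<lambda>(a, b, c). T a b c) ts)"
proof -
  define r where "r = rep n (tsum ts)"
  have r: "inB n r" "tsum r = tsum ts" using rep[OF tsum_P[OF ts]] by (auto simp: r_def)
  define ts' where "ts' = ts @ map (\<lambda>(a, b, c). (-a, b, c)) r"
  have "inB n ts'" using ts r by (auto simp: ts'_def inB_def)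
  moreover have "tsum ts' = 0" using tsum_neg[OF r(1)] r by (simp add: ts'_def)
  ultimately have "sum_list (map (\<lambda>(a, b, c). T a b c) ts') = 0" by (rule ext_wd[OF V g])
  moreover have "sum_list (map (\<lambda>(a, b, c). T a b c) (map (\<lambda>(a, b, c). (-a, b, c)) r))
     = - sum_list (map (\<lambda>(a, b, c). T a b c) r)"
    using r(1) by (induction r) (auto simp: goodT_minus[OF g])
  ultimately have "sum_list (map (\<lambda>(a, b, c). T a b c) ts) + - sum_list (map (\<lambda>(a, b, c). T a b c) r) = 0"
    by (simp only: ts'_def map_append sum_list_append)
  then show ?thesis by (simp add: ext_def r_def[symmetric] add_eq_0_iff)
qed

lemma ext_gen:
  assumes V: "vector_space scv" and g: "goodT scv n T" and b: "b \<in> Bs n"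
  shows "ext n T b = T one b one"
  using ext_rep[OF V g, of "[(one, b, one)]"] b lft_one[OF Bs_P'[OF b]] rgt_one[OF Bs_P'[OF b]]
  by simp

lemma ext_add:
  assumes V: "vector_space scv" and g: "goodT scv n T" and x: "x \<in> P n" and y: "y \<in> P n"
  shows "ext n T (x + y) = ext n T x + ext n T y"
proof -
  have "ext n T (tsum (rep n x @ rep n y)) = sum_list (map (\<lambda>(a, b, c). T a b c) (rep n x @ rep n y))"
    using rep[OF x] rep[OF y] by (intro ext_rep[OF V g]) auto
  then show ?thesis using rep[OF x] rep[OF y] by (simp add: ext_def)
qed

lemma scale_sum_list: assumes "vector_space scv" shows "scv c (sum_list (map f ts)) = sum_list (map (\<lambda>t. scv c (f t)) ts)"
proof -
  interpret V: vector_space scv by fact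
  show ?thesis by (induction ts) (auto simp: V.scale_right_distrib)
qed

lemma ext_sc:
  assumes V: "vector_space scv" and g: "goodT scv n T" and x: "x \<in> P n"
  shows "ext n T (scp c x) = scv c (ext n T x)"
proof -
  define ts where "ts = map (\<lambda>(a, b, c'). (sc c a, b, c')) (rep n x)"
  have its: "inB n ts" using rep[OF x] by (auto simp: ts_def inB_def)
  have "tsum ts = scp c (tsum (rep n x))" unfolding ts_def using tsum_sc rep[OF x] by blast
  then have "tsum ts = scp c x" using rep[OF x] by simp
  then have "ext n T (scp c x) = sum_list (map (\<lambda>(a, b, c). T a b c) ts)"
    using ext_rep[OF V g its] by simp
  also have "\<dots> = scv c (ext n T x)"
  proof -
    have "\<forall>t\<in>set (rep n x). (\<lambda>(a, b, c'). T (sc c a) b c') t = scv c ((\<lambda>(a, b, c). T a b c) t)"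
      using rep[OF x] g unfolding inB_def goodT_def lin_on_def by auto
    then show ?thesis unfolding ext_def ts_def scale_sum_list[OF V]
      by (simp add: case_prod_unfold cong: map_cong)
  qed
  finally show ?thesis .
qed

lemma ext_lin:
  assumes V: "vector_space scv" and g: "goodT scv n T"
  shows "lin_on scp scv (P n) (ext n T)"
  using ext_add[OF V g] ext_sc[OF V g] by (auto simp: lin_on_def)

lemma ext_cong: "x \<in> P n \<Longrightarrow> (\<And>a b c. b \<in> Bs n \<Longrightarrow> T a b c = T' a b c) \<Longrightarrow> ext n T x = ext n T' x"
  using rep[of x n] unfolding ext_def inB_def
  by (intro arg_cong[where f=sum_list] map_cong) auto

lemma ext_nat: "\<forall>x y. l (x + y) = l x + l y \<Longrightarrow> l (ext n T x) = ext n (\<lambda>a b c. l (T a b c)) x"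
  unfolding ext_def by (simp add: lin_sum_list case_prod_unfold)

lemma ext_addT: "ext n (\<lambda>a b c. T a b c + T' a b c) x = ext n T x + ext n T' x"
  unfolding ext_def by (simp add: case_prod_unfold sum_list_addf)

lemma ext_in:
  assumes "x \<in> P n" "\<And>a b c. b \<in> Bs n \<Longrightarrow> T a b c \<in> S" "0 \<in> S" "\<And>u v. u \<in> S \<Longrightarrow> v \<in> S \<Longrightarrow> u + v \<in> S"
  shows "ext n T x \<in> S"
proof -
  have "\<forall>t\<in>set ts. (\<lambda>(a, b, c). T a b c) t \<in> S \<Longrightarrow> sum_list (map (\<lambda>(a, b, c). T a b c) ts) \<in> S" for ts
    by (induction ts) (auto simp: assms(3,4))
  then show ?thesis using rep[OF assms(1)] assms(2) unfolding ext_def inB_def by fastforce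
qed

end


context R begin

lemma tsum_bim: "inB n ts \<Longrightarrow> lft a (rgt (tsum ts) c) = tsum (map (\<lambda>(a', b, c'). (mul a a', b, mul c' c)) ts)"
proof (induction ts)
  case Nil then show ?case by (simp add: lft_0 rgt_0)
next
  case (Cons t ts)
  obtain a' b c' where t: "t = (a', b, c')" and b: "b \<in> Bs n" and i: "inB n ts"
    using Cons.prems by (cases t) auto
  have tP: "lft a' (rgt b c') \<in> P n" by (rule term_P[OF b])
  have "lft a (rgt (tsum (t # ts)) c) = lft a (rgt (lft a' (rgt b c')) c) + lft a (rgt (tsum ts) c)"
    by (simp add: t rgt_add[OF tP tsum_P[OF i]] lft_add[OF rgt_P[OF tP] rgt_P[OF tsum_P[OF i]]])
  also have "lft a (rgt (lft a' (rgt b c')) c) = lft (mul a a') (rgt b (mul c' c))"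
  proof -
    have y: "rgt b c' \<in> P n" using Bs_P'[OF b] by (rule rgt_P)
    have "lft a (rgt (lft a' (rgt b c')) c) = lft a (lft a' (rgt (rgt b c') c))"
      by (simp add: lft_rgt[OF y])
    also have "\<dots> = lft (mul a a') (rgt (rgt b c') c)" by (simp add: lft_mul[OF rgt_P[OF y]])
    also have "\<dots> = lft (mul a a') (rgt b (mul c' c))" by (simp add: rgt_mul[OF Bs_P'[OF b]])
    finally show ?thesis .
  qed
  finally show ?case using Cons.IH[OF i] by (simp add: t)
qed

lemma ext_bim:
  assumes V: "vector_space scv" and g: "goodT scv n T" and x: "x \<in> P n"
  shows "ext n T (lft a (rgt x c)) = ext n (\<lambda>a' b c'. T (mul a a') b (mul c' c)) x"
proof -
  define ts where "ts = map (\<lambda>(a', b, c'). (mul a a', b, mul c' c)) (rep n x)"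
  have its: "inB n ts" using rep[OF x] by (auto simp: ts_def inB_def)
  have "tsum ts = lft a (rgt x c)" using tsum_bim[of n "rep n x" a c] rep[OF x] by (simp add: ts_def)
  then have "ext n T (lft a (rgt x c)) = sum_list (map (\<lambda>(a, b, c). T a b c) ts)"
    using ext_rep[OF V g its] by simp
  then show ?thesis by (simp add: ext_def ts_def case_prod_unfold comp_def)
qed

lemma ext_unique:
  assumes add: "\<forall>x\<in>P n. \<forall>y\<in>P n. f (x + y) = f x + f y"
    and gen: "\<And>a b c. b \<in> Bs n \<Longrightarrow> f (lft a (rgt b c)) = T a b c" and x: "x \<in> P n"
  shows "f x = ext n T x"
proof -
  have f0: "f 0 = 0" using add P_0 by (metis add.right_neutral add_left_cancel)
  have "inB n ts \<Longrightarrow> f (tsum ts) = sum_list (map (\<lambda>(a, b, c). T a b c) ts)" for ts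
  proof (induction ts)
    case (Cons t ts)
    obtain a b c where t: "t = (a, b, c)" and b: "b \<in> Bs n" and i: "inB n ts"
      using Cons.prems by (cases t) auto
    show ?case using add term_P[OF b] tsum_P[OF i] Cons.IH[OF i] gen[OF b] by (simp add: t)
  qed (simp add: f0)
  then show ?thesis using rep[OF x] unfolding ext_def by metis
qed

lemma ext_sumT: "ext n (\<lambda>a b c. \<Sum>h\<in>F. T h a b c) x = (\<Sum>h\<in>F. ext n (T h) x)"
  unfolding ext_def by (induction F rule: infinite_finite_induct) (auto simp: case_prod_unfold sum_list_addf)

end


context R begin

definition bimk :: "nat \<Rightarrow> ('p \<Rightarrow> 'k) \<Rightarrow> bool" where
  "bimk n f \<longleftrightarrow> (\<forall>x. x \<notin> P n \<longrightarrow> f x = 0) \<and> lin_on scp (*) (P n) f \<and>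
     (\<forall>a. \<forall>x\<in>P n. f (lft a x) = eps a * f x \<and> f (rgt x a) = f x * eps a)"

lemma bimk_zero: "bimk n (\<lambda>x. 0)" by (simp add: bimk_def lin_on_def)

lemma bimk_add: "bimk n f \<Longrightarrow> bimk n g \<Longrightarrow> bimk n (\<lambda>x. f x + g x)"
  by (simp add: bimk_def lin_on_def algebra_simps lft_P rgt_P)

lemma bimk_sum: "finite F \<Longrightarrow> (\<And>h. h \<in> F \<Longrightarrow> bimk n (fs h)) \<Longrightarrow> bimk n (\<lambda>x. \<Sum>h\<in>F. fs h x)"
  by (induction F rule: finite_induct) (auto simp: bimk_zero bimk_add)

lemma homAA_bimk: "f \<in> homAA scp (P n) (HP n) lft rgt eps \<Longrightarrow> bimk n f"
proof -
  assume "f \<in> homAA scp (P n) (HP n) lft rgt eps"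
  then obtain F fs where F: "finite F" "\<forall>h\<in>F. fs h \<in> homAA_deg scp (P n) (HP n) lft rgt eps h"
    "f = (\<lambda>x. \<Sum>h\<in>F. fs h x)" unfolding homAA_def by blast
  have "bimk n (fs h)" if "h \<in> F" for h
    using F(2) that unfolding homAA_deg_def bimk_def by blast
  then show ?thesis using bimk_sum[OF F(1)] F(3) by blast
qed

lemma bimk_lin: "bimk n f \<Longrightarrow> lin_on scp (*) (P n) f" by (simp add: bimk_def)
lemma bimk_out: "bimk n f \<Longrightarrow> x \<notin> P n \<Longrightarrow> f x = 0" by (simp add: bimk_def)
lemma bimk_lft: "bimk n f \<Longrightarrow> x \<in> P n \<Longrightarrow> f (lft a x) = eps a * f x" by (simp add: bimk_def)
lemma bimk_rgt: "bimk n f \<Longrightarrow> x \<in> P n \<Longrightarrow> f (rgt x a) = f x * eps a" by (simp add: bimk_def)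
lemma bimk_add': "bimk n f \<Longrightarrow> x \<in> P n \<Longrightarrow> y \<in> P n \<Longrightarrow> f (x + y) = f x + f y"
  by (simp add: bimk_def lin_on_def)
lemma bimk_0: "bimk n f \<Longrightarrow> f 0 = 0"
proof -
  assume "bimk n f"
  then have "f (0 + 0) = f 0 + f 0" using bimk_add'[OF _ P_0 P_0] by blast
  then show ?thesis by (metis add.right_neutral add_left_cancel)
qed

lemma A_graded: "graded_on sc UNIV H"
  using alg by (simp add: yd_aug_alg_def yd_mod_def)

lemma eps_H: "s \<noteq> 0 \<Longrightarrow> x \<in> H s \<Longrightarrow> eps x = 0"
  using alg by (simp add: yd_aug_alg_def)

definition compA :: "'a \<Rightarrow> 'g \<Rightarrow> 'a" where
  "compA a = (THE c. finite {g. c g \<noteq> 0} \<and> (\<forall>g. c g \<in> H g) \<and> a = (\<Sum>g\<in>{g. c g \<noteq> 0}. c g))"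

lemma compA: "finite {g. compA a g \<noteq> 0} \<and> (\<forall>g. compA a g \<in> H g) \<and> a = (\<Sum>g\<in>{g. compA a g \<noteq> 0}. compA a g)"
proof -
  have "\<exists>!c. finite {g. c g \<noteq> 0} \<and> (\<forall>g. c g \<in> H g) \<and> a = (\<Sum>g\<in>{g. c g \<noteq> 0}. c g)"
    using A_graded unfolding graded_on_def by blast
  then show ?thesis unfolding compA_def by (rule theI')
qed

lemma P_graded: "graded_on scp (P n) (HP n)"
  using bm[of n] by (simp add: yd_bimod_def yd_mod_def)

lemma HP_sub: "subsp scp (HP n g)" and HP_P: "HP n g \<subseteq> P n"
  using P_graded[of n] unfolding graded_on_def by blast+

lemma HP_uniq: "x \<in> P n \<Longrightarrow> \<exists>!c. finite {g. c g \<noteq> 0} \<and> (\<forall>g. c g \<in> HP n g) \<and> x = (\<Sum>g\<in>{g. c g \<noteq> 0}. c g)"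
  using P_graded[of n] unfolding graded_on_def by blast

lemma lft_H: "a \<in> H s \<Longrightarrow> x \<in> HP n t \<Longrightarrow> lft a x \<in> HP n (s + t)"
  and rgt_H: "a \<in> H s \<Longrightarrow> x \<in> HP n t \<Longrightarrow> rgt x a \<in> HP n (t + s)"
  using bm[of n] unfolding yd_bimod_def by blast+

lemma HP_0: "0 \<in> HP n g" and HP_add: "x \<in> HP n g \<Longrightarrow> y \<in> HP n g \<Longrightarrow> x + y \<in> HP n g"
  using HP_sub[of n g] by (auto simp: subsp_def)

definition deg :: "nat \<Rightarrow> 'p \<Rightarrow> 'g" where "deg n b = (SOME s. b \<in> HP n s)"
lemma deg: "b \<in> Bs n \<Longrightarrow> b \<in> HP n (deg n b)"
  unfolding deg_def using Bs_hom by (rule someI_ex)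

definition dg :: "'a \<Rightarrow> 'g" where "dg a = (SOME g. a \<in> H g)"

lemma GL:
  assumes x: "x \<in> HP n s" and xs: "x = sum_list (map y js)" and hj: "\<forall>j\<in>set js. y j \<in> HP n (\<delta> j)"
  shows "sum_list (map (\<lambda>j. if \<delta> j = t then y j else 0) js) = (if t = s then x else 0)"
proof -
  define c where "c g = sum_list (map (\<lambda>j. if \<delta> j = g then y j else 0) js)" for g
  have cH: "c g \<in> HP n g" for g
    unfolding c_def using hj by (induction js) (auto intro: HP_add HP_0)
  have supp: "{g. c g \<noteq> 0} \<subseteq> \<delta> ` set js"
  proof
    fix g assume "g \<in> {g. c g \<noteq> 0}"
    then have "c g \<noteq> 0" by simp
    then show "g \<in> \<delta> ` set js" unfolding c_def by (induction js) (auto split: if_splits)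
  qed
  have fin: "finite {g. c g \<noteq> 0}" by (rule finite_subset[OF supp]) auto
  have regroup: "finite D \<Longrightarrow> \<delta> ` set js \<subseteq> D \<Longrightarrow> (\<Sum>g\<in>D. c g) = sum_list (map y js)" for D
    unfolding c_def
  proof (induction js)
    case (Cons j js)
    have "(\<Sum>g\<in>D. (if \<delta> j = g then y j else 0)) = y j" using Cons.prems by (simp add: sum.delta)
    then show ?case using Cons by (simp add: sum.distrib)
  qed simp
  have xc: "x = (\<Sum>g\<in>{g. c g \<noteq> 0}. c g)"
  proof -
    have "(\<Sum>g\<in>{g. c g \<noteq> 0}. c g) = (\<Sum>g\<in>\<delta> ` set js. c g)"
      by (rule sum.mono_neutral_left) (use supp in auto)
    also have "\<dots> = x" using regroup[of "\<delta> ` set js"] xs by simp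
    finally show ?thesis by simp
  qed
  define c' where "c' g = (if g = s then x else 0)" for g
  have c'1: "finite {g. c' g \<noteq> 0}" by (rule finite_subset[of _ "{s}"]) (auto simp: c'_def)
  have c'2: "\<forall>g. c' g \<in> HP n g" using x by (auto simp: c'_def HP_0)
  have c'3: "x = (\<Sum>g\<in>{g. c' g \<noteq> 0}. c' g)"
  proof (cases "x = 0")
    case True then show ?thesis by (simp add: c'_def)
  next
    case False
    then have "{g. c' g \<noteq> 0} = {s}" by (auto simp: c'_def)
    then show ?thesis by (simp add: c'_def)
  qed
  have "x \<in> P n" using x HP_P by blast
  from HP_uniq[OF this] have "c = c'" using fin cH xc c'1 c'2 c'3 by blast
  then show ?thesis using c_def c'_def by metis
qed


definition homog :: "('a \<times> 'p \<times> 'a) list \<Rightarrow> bool" where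
  "homog ts \<longleftrightarrow> (\<forall>(a, b, c)\<in>set ts. (\<exists>g. a \<in> H g) \<and> (\<exists>g. c \<in> H g))"

definition Qh :: "nat \<Rightarrow> 'p \<Rightarrow> bool" where
  "Qh n x \<longleftrightarrow> (\<exists>ts. inB n ts \<and> tsum ts = x \<and> homog ts)"

lemma Qh_0: "Qh n 0"
  unfolding Qh_def by (rule exI[of _ "[]"]) (simp add: homog_def)

lemma Qh_add: "Qh n x \<Longrightarrow> Qh n y \<Longrightarrow> Qh n (x + y)"
proof -
  assume "Qh n x" "Qh n y"
  then obtain t1 t2 where "inB n t1" "tsum t1 = x" "homog t1" "inB n t2" "tsum t2 = y" "homog t2"
    unfolding Qh_def by blast
  then show ?thesis unfolding Qh_def
    by (intro exI[of _ "t1 @ t2"]) (simp add: homog_def ball_Un)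
qed

lemma Qh_sum: "(\<And>i. i \<in> I \<Longrightarrow> Qh n (F i)) \<Longrightarrow> Qh n (sum F I)"
  by (induction I rule: infinite_finite_induct) (auto simp: Qh_0 Qh_add)

lemma Qh_single: "b \<in> Bs n \<Longrightarrow> a \<in> H g \<Longrightarrow> c \<in> H g' \<Longrightarrow> Qh n (lft a (rgt b c))"
  unfolding Qh_def homog_def by (rule exI[of _ "[(a, b, c)]"]) auto

lemma Qh_term:
  assumes b: "b \<in> Bs n" shows "Qh n (lft a (rgt b c))"
proof -
  have bP: "b \<in> P n" using Bs_P'[OF b] .
  have e1: "lft a (rgt b c) = (\<Sum>g\<in>{g. compA a g \<noteq> 0}. lft (compA a g) (rgt b c))"
    using lft_sum[OF rgt_P[OF bP], of "compA a" "{g. compA a g \<noteq> 0}"] compA[of a] by simp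
  have e2: "lft a' (rgt b c) = (\<Sum>g'\<in>{g. compA c g \<noteq> 0}. lft a' (rgt b (compA c g')))" for a'
  proof -
    have "rgt b c = (\<Sum>g'\<in>{g. compA c g \<noteq> 0}. rgt b (compA c g'))"
      using rgt_sum[OF bP, of "compA c" "{g. compA c g \<noteq> 0}"] compA[of c] by simp
    then show ?thesis using lft_sumP[of "{g. compA c g \<noteq> 0}" "\<lambda>g'. rgt b (compA c g')" n a'] rgt_P[OF bP] by simp
  qed
  show ?thesis unfolding e1
    by (rule Qh_sum, subst e2, rule Qh_sum, rule Qh_single[OF b]) (use compA in blast)+
qed

lemma ELEM: assumes x: "x \<in> P n" shows "\<exists>ts. inB n ts \<and> tsum ts = x \<and> homog ts"
proof -
  have "inB n ts \<Longrightarrow> Qh n (tsum ts)" for ts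
  proof (induction ts)
    case (Cons t ts)
    then show ?case by (cases t) (auto intro!: Qh_add Qh_term)
  qed (simp add: Qh_0)
  then have "Qh n (tsum (rep n x))" using rep[OF x] by blast
  then show ?thesis using rep[OF x] unfolding Qh_def by simp
qed

lemma add_sum_list_P:
  assumes "\<And>x y. x \<in> P n \<Longrightarrow> y \<in> P n \<Longrightarrow> f (x + y) = f x + f y" "f 0 = 0"
  shows "\<forall>j\<in>set ts. g j \<in> P n \<Longrightarrow> f (sum_list (map g ts)) = sum_list (map (\<lambda>j. f (g j)) ts)"
  by (induction ts) (auto simp: assms P_sum_list)

definition Phi :: "nat \<Rightarrow> ('p \<Rightarrow> 'k) \<Rightarrow> 'g \<Rightarrow> 'p \<Rightarrow> 'k" where
  "Phi n f t = ext n (\<lambda>a b c. if deg n b = t then eps a * f b * eps c else 0)"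

lemma goodT_Phi: "goodT (*) n (\<lambda>a b c. if deg n b = t then eps a * f b * eps c else 0)"
  unfolding goodT_def lin_on_def by (auto simp: eps_add eps_sc algebra_simps)

lemma Phi_vanish:
  assumes f: "bimk n f" and x: "x \<in> HP n s" and tne: "t \<noteq> s"
  shows "Phi n f t x = 0"
proof -
  have xP: "x \<in> P n" using x HP_P by blast
  obtain ts where ts: "inB n ts" "tsum ts = x" "homog ts" using ELEM[OF xP] by blast
  define y where "y = (\<lambda>(a, b, c). lft a (rgt b c))"
  define \<delta> where "\<delta> = (\<lambda>(a::'a, b, c::'a). dg a + deg n b + dg c)"
  have hom: "\<forall>j\<in>set ts. y j \<in> HP n (\<delta> j)"
  proof
    fix j assume j: "j \<in> set ts"
    obtain a b c where jj: "j = (a, b, c)" by (cases j) auto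
    have b: "b \<in> Bs n" using ts(1) j jj by (auto simp: inB_def)
    have "a \<in> H (dg a)" "c \<in> H (dg c)" using ts(3) j jj unfolding homog_def dg_def by (auto intro: someI_ex)
    then show "y j \<in> HP n (\<delta> j)"
      using lft_H[OF _ rgt_H[OF _ deg[OF b]]] by (auto simp: y_def \<delta>_def jj add.assoc)
  qed
  have G: "sum_list (map (\<lambda>j. if \<delta> j = t then y j else 0) ts) = 0"
    using GL[OF x _ hom, of t] ts(2) tne by (simp add: tsum_def y_def)
  have elem: "(\<lambda>(a, b, c). if deg n b = t then eps a * f b * eps c else 0) j = f (if \<delta> j = t then y j else 0)"
    if j: "j \<in> set ts" for j
  proof -
    obtain a b c where jj: "j = (a, b, c)" by (cases j) auto
    have b: "b \<in> Bs n" using ts(1) j jj by (auto simp: inB_def)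
    have ha: "a \<in> H (dg a)" and hc: "c \<in> H (dg c)"
      using ts(3) j jj unfolding homog_def dg_def by (auto intro: someI_ex)
    have fy: "f (y j) = eps a * f b * eps c"
      using bimk_lft[OF f rgt_P[OF Bs_P'[OF b]]] bimk_rgt[OF f Bs_P'[OF b]] by (simp add: y_def jj)
    show ?thesis
    proof (cases "dg a = 0 \<and> dg c = 0")
      case True then show ?thesis using fy by (simp add: jj \<delta>_def bimk_0[OF f])
    next
      case False
      then have "eps a = 0 \<or> eps c = 0" using eps_H ha hc by blast
      then show ?thesis using fy by (auto simp: jj bimk_0[OF f])
    qed
  qed
  have "Phi n f t x = sum_list (map (\<lambda>(a, b, c). if deg n b = t then eps a * f b * eps c else 0) ts)"
    unfolding Phi_def using ext_rep[OF VK goodT_Phi ts(1)] ts(2) by simp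
  also have "\<dots> = sum_list (map (\<lambda>j. f (if \<delta> j = t then y j else 0)) ts)"
    using elem by (intro arg_cong[where f=sum_list] map_cong) auto
  also have "\<dots> = f (sum_list (map (\<lambda>j. if \<delta> j = t then y j else 0) ts))"
  proof -
    have "\<forall>j\<in>set ts. (if \<delta> j = t then y j else 0) \<in> P n"
      using hom HP_P P_0 by auto
    then show ?thesis using add_sum_list_P[where n=n and f=f and g="\<lambda>j. if \<delta> j = t then y j else 0" and ts=ts, OF bimk_add'[OF f] bimk_0[OF f]]
      by simp
  qed
  also have "\<dots> = 0" using G bimk_0[OF f] by simp
  finally show ?thesis .
qed


lemma Phi_lft: "x \<in> P n \<Longrightarrow> Phi n f t (lft a x) = eps a * Phi n f t x"
proof -
  assume x: "x \<in> P n"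
  have "Phi n f t (lft a x) = Phi n f t (lft a (rgt x one))" by (simp add: rgt_one[OF x])
  also have "\<dots> = ext n (\<lambda>a' b c'. (\<lambda>a b c. if deg n b = t then eps a * f b * eps c else 0) (mul a a') b (mul c' one)) x"
    unfolding Phi_def by (rule ext_bim[OF VK goodT_Phi x])
  also have "\<dots> = ext n (\<lambda>a' b c'. eps a * (if deg n b = t then eps a' * f b * eps c' else 0)) x"
    by (rule ext_cong[OF x]) (simp add: eps_mul mul_oneR)
  also have "\<dots> = eps a * Phi n f t x"
    unfolding Phi_def by (rule ext_nat[symmetric]) (simp add: algebra_simps)
  finally show ?thesis .
qed

lemma Phi_rgt: "x \<in> P n \<Longrightarrow> Phi n f t (rgt x a) = Phi n f t x * eps a"
proof -
  assume x: "x \<in> P n"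
  have "Phi n f t (rgt x a) = Phi n f t (lft one (rgt x a))" by (simp add: lft_one[OF rgt_P[OF x]])
  also have "\<dots> = ext n (\<lambda>a' b c'. (\<lambda>a b c. if deg n b = t then eps a * f b * eps c else 0) (mul one a') b (mul c' a)) x"
    unfolding Phi_def by (rule ext_bim[OF VK goodT_Phi x])
  also have "\<dots> = ext n (\<lambda>a' b c'. (\<lambda>v. v * eps a) (if deg n b = t then eps a' * f b * eps c' else 0)) x"
    by (rule ext_cong[OF x]) (simp add: eps_mul mul_oneL)
  also have "\<dots> = Phi n f t x * eps a"
    unfolding Phi_def by (rule ext_nat[where l="\<lambda>v. v * eps a", symmetric]) (simp add: algebra_simps)
  finally show ?thesis .
qed

lemma bimk_homAA:
  assumes f: "bimk n f" shows "f \<in> homAA scp (P n) (HP n) lft rgt eps"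
proof -
  define F where "F = (\<lambda>b. - deg n b) ` Bs n"
  define fs where "fs h = (\<lambda>x. if x \<in> P n then Phi n f (-h) x else 0)" for h
  have finF: "finite F" using Bs_fin by (simp add: F_def)
  have "fs h \<in> homAA_deg scp (P n) (HP n) lft rgt eps h" for h
    unfolding homAA_deg_def
  proof (intro CollectI conjI allI ballI impI)
    show "x \<notin> P n \<Longrightarrow> fs h x = 0" for x by (simp add: fs_def)
    show "lin_on scp (*) (P n) (fs h)"
      using ext_lin[OF VK goodT_Phi, of n "-h" f] by (simp add: lin_on_def fs_def Phi_def P_add P_sc)
    show "fs h (lft a x) = eps a * fs h x" if "x \<in> P n" for a x
      using that by (simp add: fs_def Phi_lft lft_P)
    show "fs h (rgt x a) = fs h x * eps a" if "x \<in> P n" for a x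
      using that by (simp add: fs_def Phi_rgt rgt_P)
    show "fs h x = 0" if "h + s \<noteq> 0" "x \<in> HP n s" for s x
    proof -
      have "-h \<noteq> s" using that(1) by (metis add.right_inverse minus_minus)
      then show ?thesis using Phi_vanish[OF f that(2)] by (simp add: fs_def)
    qed
  qed
  moreover have "f = (\<lambda>x. \<Sum>h\<in>F. fs h x)"
  proof
    fix x show "f x = (\<Sum>h\<in>F. fs h x)"
    proof (cases "x \<in> P n")
      case False then show ?thesis using bimk_out[OF f False] by (simp add: fs_def)
    next
      case True
      have "(\<Sum>h\<in>F. fs h x) = (\<Sum>h\<in>F. Phi n f (-h) x)" using True by (simp add: fs_def)
      also have "\<dots> = ext n (\<lambda>a b c. \<Sum>h\<in>F. (if deg n b = -h then eps a * f b * eps c else 0)) x"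
        unfolding Phi_def by (rule ext_sumT[symmetric])
      also have "\<dots> = ext n (\<lambda>a b c. eps a * f b * eps c) x"
      proof (rule ext_cong[OF True])
        fix a b c assume b: "b \<in> Bs n"
        have "(\<Sum>h\<in>F. (if deg n b = -h then eps a * f b * eps c else 0))
            = (\<Sum>h\<in>F. (if h = - deg n b then eps a * f b * eps c else 0))"
          by (rule sum.cong) (auto simp: minus_equation_iff)
        also have "\<dots> = eps a * f b * eps c" using b finF by (simp add: F_def)
        finally show "(\<Sum>h\<in>F. (if deg n b = -h then eps a * f b * eps c else 0)) = eps a * f b * eps c" .
      qed
      also have "\<dots> = f x"
      proof (rule ext_unique[symmetric, OF _ _ True])
        show "\<forall>x\<in>P n. \<forall>y\<in>P n. f (x + y) = f x + f y" using bimk_add'[OF f] by blast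
        fix a b c assume b: "b \<in> Bs n"
        show "f (lft a (rgt b c)) = eps a * f b * eps c"
          using bimk_lft[OF f rgt_P[OF Bs_P'[OF b]]] bimk_rgt[OF f Bs_P'[OF b]] by simp
      qed
      finally show ?thesis by simp
    qed
  qed
  ultimately show ?thesis unfolding homAA_def using finF by blast
qed

lemma homAA_iff: "f \<in> homAA scp (P n) (HP n) lft rgt eps \<longleftrightarrow> bimk n f"
  using homAA_bimk bimk_homAA by blast

end


context R begin

lemma rmul_append_Cons: "vs \<noteq> [] \<Longrightarrow> rmul c (us @ x # vs) = us @ x # rmul c vs"
  by (auto simp: rmul_def butlast_append)
lemma rmul_append_single: "rmul c (us @ [x]) = us @ [mul x c]"
  by (simp add: rmul_def)

lemma mlf_rmul: "mlf scv m f \<Longrightarrow> mlf scv m (\<lambda>ys. f (rmul c ys))"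
  unfolding mlf_def
proof (intro allI impI)
  fix us vs :: "'a list"
  assume f: "\<forall>us vs. length us + length vs + 1 = m \<longrightarrow> lin_on sc scv UNIV (\<lambda>x. f (us @ x # vs))"
    and l: "length us + length vs + 1 = m"
  show "lin_on sc scv UNIV (\<lambda>x. f (rmul c (us @ x # vs)))"
  proof (cases "vs = []")
    case True
    then show ?thesis using lin_comp[OF lin_mulL f[rule_format, OF l]] by (simp add: rmul_append_single)
  next
    case False
    have "length us + length (rmul c vs) + 1 = m" using l by simp
    then show ?thesis using f False by (simp add: rmul_append_Cons)
  qed
qed

lemma mlf_lmul: "mlf scv m f \<Longrightarrow> mlf scv m (\<lambda>ys. f (lmul a ys))"
  unfolding mlf_def
proof (intro allI impI)
  fix us vs :: "'a list"
  assume f: "\<forall>us vs. length us + length vs + 1 = m \<longrightarrow> lin_on sc scv UNIV (\<lambda>x. f (us @ x # vs))"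
    and l: "length us + length vs + 1 = m"
  show "lin_on sc scv UNIV (\<lambda>x. f (lmul a (us @ x # vs)))"
  proof (cases us)
    case Nil
    then show ?thesis using lin_comp[OF lin_mulR f[rule_format, OF l]] by simp
  next
    case (Cons u us')
    have "length (mul a u # us') + length vs + 1 = m" using l Cons by simp
    then show ?thesis using f[rule_format, of "mul a u # us'" vs] Cons by simp
  qed
qed

lemma mlf_zero: "mlf scv m f \<Longrightarrow> vector_space scv \<Longrightarrow> length us + length vs + 1 = m \<Longrightarrow> f (us @ 0 # vs) = 0"
  using mlf_slot[of scv m f us vs] lin_on_zero[of sc scv UNIV] by blast

primrec Fd :: "nat \<Rightarrow> ('a list \<Rightarrow> 'v::ab_group_add) \<Rightarrow> 'p \<Rightarrow> 'v" where
  "Fd 0 f = ext 0 (\<lambda>a b c. f [a, mul (aug b) c])"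
| "Fd (Suc n) f = ext (Suc n) (\<lambda>a b c. Fd n (\<lambda>ys. f (a # rmul c ys)) (d n b))"

definition FK :: "nat \<Rightarrow> ('a list \<Rightarrow> 'v::ab_group_add) \<Rightarrow> 'a \<Rightarrow> 'p \<Rightarrow> 'a \<Rightarrow> 'v" where
  "FK n f = (case n of 0 \<Rightarrow> (\<lambda>a b c. f [a, mul (aug b) c])
      | Suc m \<Rightarrow> (\<lambda>a b c. Fd m (\<lambda>ys. f (a # rmul c ys)) (d m b)))"

lemma Fd_FK: "Fd n f = ext n (FK n f)"
  by (cases n) (simp_all add: FK_def)

lemma Fd_cong: "eqon (Suc (Suc n)) f g \<Longrightarrow> x \<in> P n \<Longrightarrow> Fd n f x = Fd n g x"
proof (induction n arbitrary: f g x)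
  case 0 then show ?case by (simp add: eqon_def cong: ext_cong)
next
  case (Suc n)
  show ?case unfolding Fd.simps
  proof (rule ext_cong[OF Suc.prems(2)])
    fix a b c assume b: "b \<in> Bs (Suc n)"
    have "eqon (Suc (Suc n)) (\<lambda>ys. f (a # rmul c ys)) (\<lambda>ys. g (a # rmul c ys))"
      using Suc.prems(1) by (auto simp: eqon_def)
    then show "Fd n (\<lambda>ys. f (a # rmul c ys)) (d n b) = Fd n (\<lambda>ys. g (a # rmul c ys)) (d n b)"
      using Suc.IH d_P[OF Bs_P'[OF b]] by blast
  qed
qed

lemma Fd_nat: "\<forall>x y. l (x + y) = l x + l y \<Longrightarrow> l (Fd n f x) = Fd n (\<lambda>ys. l (f ys)) x"
proof (induction n arbitrary: f x)
  case 0 then show ?case by (simp add: ext_nat)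
next
  case (Suc n) then show ?case by (simp add: ext_nat)
qed

lemma Fd_add: "Fd n (\<lambda>ys. f ys + g ys) x = Fd n f x + Fd n g x"
proof (induction n arbitrary: f g x)
  case 0 then show ?case by (simp add: ext_addT)
next
  case (Suc n) then show ?case by (simp add: ext_addT)
qed

lemma Fd_minus: "Fd n (\<lambda>ys. - f ys) x = - Fd n f x"
  using Fd_nat[of uminus n f x] by simp

lemma Fd_diff: "Fd n (\<lambda>ys. f ys - g ys) x = Fd n f x - Fd n g x"
  using Fd_add[of n f "\<lambda>ys. - g ys" x] Fd_minus[of n g x] by simp

lemma FK_good:
  fixes scv :: "'k \<Rightarrow> 'v::ab_group_add \<Rightarrow> 'v"
  assumes V: "vector_space scv" and f: "mlf scv (Suc (Suc n)) f"
  shows "goodT scv n (FK n f)"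
proof (cases n)
  case 0
  have l0: "lin_on sc scv UNIV (\<lambda>a. f [a, v])" for v using mlf_slot[OF f, of "[]" "[v]"] 0 by simp
  have l1: "lin_on sc scv UNIV (\<lambda>c. f [a, c])" for a using mlf_slot[OF f, of "[a]" "[]"] 0 by simp
  show ?thesis unfolding goodT_def FK_def using 0 l0 lin_comp[OF lin_mulR l1] by simp
next
  case (Suc m)
  interpret V: vector_space scv by fact
  have fP: "b \<in> Bs (Suc m) \<Longrightarrow> d m b \<in> P m" for b using d_P[OF Bs_P'] by blast
  have e1: "eqon (Suc (Suc m)) (\<lambda>ys. f ((a + a') # rmul c ys)) (\<lambda>ys. f (a # rmul c ys) + f (a' # rmul c ys))" for a a' c
    using mlf_slot[OF f, of "[]"] Suc by (auto simp: eqon_def lin_on_def)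
  have e2: "eqon (Suc (Suc m)) (\<lambda>ys. f (sc k a # rmul c ys)) (\<lambda>ys. scv k (f (a # rmul c ys)))" for k a c
    using mlf_slot[OF f, of "[]"] Suc by (auto simp: eqon_def lin_on_def)
  have e3: "eqon (Suc (Suc m)) (\<lambda>ys. f (a # rmul (c + c') ys)) (\<lambda>ys. f (a # rmul c ys) + f (a # rmul c' ys))" for a c c'
  proof (unfold eqon_def, intro allI impI)
    fix ys :: "'a list" assume l: "length ys = Suc (Suc m)"
    then obtain zs z where ys: "ys = zs @ [z]" by (metis length_Suc_conv_rev)
    have "length (a # zs) + length ([]::'a list) + 1 = Suc (Suc n)" using l ys Suc by simp
    from mlf_slot[OF f this] show "f (a # rmul (c + c') ys) = f (a # rmul c ys) + f (a # rmul c' ys)"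
      by (simp add: ys rmul_append_single lin_on_def mul_addR)
  qed
  have e4: "eqon (Suc (Suc m)) (\<lambda>ys. f (a # rmul (sc k c) ys)) (\<lambda>ys. scv k (f (a # rmul c ys)))" for a c k
  proof (unfold eqon_def, intro allI impI)
    fix ys :: "'a list" assume l: "length ys = Suc (Suc m)"
    then obtain zs z where ys: "ys = zs @ [z]" by (metis length_Suc_conv_rev)
    have "length (a # zs) + length ([]::'a list) + 1 = Suc (Suc n)" using l ys Suc by simp
    from mlf_slot[OF f this] show "f (a # rmul (sc k c) ys) = scv k (f (a # rmul c ys))"
      by (simp add: ys rmul_append_single lin_on_def mul_scR)
  qed
  show ?thesis unfolding goodT_def FK_def Suc nat.case lin_on_def
  proof (intro conjI ballI allI)
    fix b c x y assume b: "b \<in> Bs (Suc m)"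
    show "Fd m (\<lambda>ys. f ((x + y) # rmul c ys)) (d m b) = Fd m (\<lambda>ys. f (x # rmul c ys)) (d m b) + Fd m (\<lambda>ys. f (y # rmul c ys)) (d m b)"
      using Fd_cong[OF e1 fP[OF b]] Fd_add by simp
  next
    fix b c k x assume b: "b \<in> Bs (Suc m)"
    show "Fd m (\<lambda>ys. f (sc k x # rmul c ys)) (d m b) = scv k (Fd m (\<lambda>ys. f (x # rmul c ys)) (d m b))"
      using Fd_cong[OF e2 fP[OF b]] Fd_nat[of "scv k"] V.scale_right_distrib by simp
  next
    fix b a x y assume b: "b \<in> Bs (Suc m)"
    show "Fd m (\<lambda>ys. f (a # rmul (x + y) ys)) (d m b) = Fd m (\<lambda>ys. f (a # rmul x ys)) (d m b) + Fd m (\<lambda>ys. f (a # rmul y ys)) (d m b)"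
      using Fd_cong[OF e3 fP[OF b]] Fd_add by simp
  next
    fix b a k x assume b: "b \<in> Bs (Suc m)"
    show "Fd m (\<lambda>ys. f (a # rmul (sc k x) ys)) (d m b) = scv k (Fd m (\<lambda>ys. f (a # rmul x ys)) (d m b))"
      using Fd_cong[OF e4 fP[OF b]] Fd_nat[of "scv k"] V.scale_right_distrib by simp
  qed
qed

lemma Fd_lin: "vector_space scv \<Longrightarrow> mlf scv (Suc (Suc n)) f \<Longrightarrow> lin_on scp scv (P n) (Fd n f)"
  unfolding Fd_FK by (rule ext_lin[OF _ FK_good])


lemma Fd_bim:
  assumes V: "vector_space scv" and f: "mlf scv (Suc (Suc n)) f" and x: "x \<in> P n"
  shows "Fd n f (lft a (rgt x c)) = Fd n (\<lambda>ys. f (lmul a (rmul c ys))) x"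
proof -
  have "Fd n f (lft a (rgt x c)) = ext n (\<lambda>a' b c'. FK n f (mul a a') b (mul c' c)) x"
    unfolding Fd_FK by (rule ext_bim[OF V FK_good[OF V f] x])
  also have "\<dots> = ext n (FK n (\<lambda>ys. f (lmul a (rmul c ys)))) x"
  proof (rule ext_cong[OF x])
    fix a' b c' assume b: "b \<in> Bs n"
    show "FK n f (mul a a') b (mul c' c) = FK n (\<lambda>ys. f (lmul a (rmul c ys))) a' b c'"
    proof (cases n)
      case 0 then show ?thesis by (simp add: FK_def mul_assoc)
    next
      case (Suc m)
      have "eqon (Suc (Suc m)) (\<lambda>ys. f (mul a a' # rmul (mul c' c) ys)) (\<lambda>ys. f (lmul a (rmul c (a' # rmul c' ys))))"
        by (auto simp: eqon_def rmul_Cons_len rmul_rmul)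
      then show ?thesis using Fd_cong d_P[OF Bs_P'[OF b[unfolded Suc]]] by (simp add: FK_def Suc)
    qed
  qed
  finally show ?thesis by (simp add: Fd_FK)
qed

lemma Fd_gen:
  assumes V: "vector_space scv" and f: "mlf scv (Suc (Suc (Suc n))) f" and b: "b \<in> Bs (Suc n)"
  shows "Fd (Suc n) f b = Fd n (\<lambda>ys. f (one # ys)) (d n b)"
proof -
  have "Fd (Suc n) f b = FK (Suc n) f one b one" using ext_gen[OF V FK_good[OF V f] b] by (simp only: Fd_FK)
  also have "\<dots> = Fd n (\<lambda>ys. f (one # ys)) (d n b)" by (simp only: FK_def nat.case rmul_one)
  finally show ?thesis .
qed

lemma Fd_in:
  assumes "x \<in> P n" "\<And>ys. f ys \<in> S" "0 \<in> S" "\<And>u v. u \<in> S \<Longrightarrow> v \<in> S \<Longrightarrow> u + v \<in> S"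
  shows "Fd n f x \<in> S"
  using assms
proof (induction n arbitrary: f x)
  case 0 then show ?case by (auto intro!: ext_in)
next
  case (Suc n)
  show ?case unfolding Fd.simps
    by (rule ext_in[OF Suc.prems(1)]) (auto intro!: Suc.IH d_P[OF Bs_P'] Suc.prems)
qed

lemma Fd_chain0:
  fixes f :: "'a list \<Rightarrow> 'v::ab_group_add"
  assumes V: "vector_space scv" and f: "mlf scv 1 f" and x: "x \<in> P 0"
  shows "Fd 0 (bdst f) x = f [aug x]"
proof -
  have add: "\<forall>x\<in>P 0. \<forall>y\<in>P 0. f [aug (x + y)] = f [aug x] + f [aug y]"
    using mlf_slot[OF f, of "[]" "[]"] by (simp add: aug_add lin_on_def)
  have "f [aug x] = ext 0 (\<lambda>a b c. f [aug (lft a (rgt b c))]) x"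
    by (rule ext_unique[OF add _ x]) simp
  also have "\<dots> = Fd 0 (bdst f) x" unfolding Fd.simps
    by (rule ext_cong[OF x]) (simp add: aug_lft aug_rgt rgt_P Bs_P')
  finally show ?thesis by simp
qed

lemma Fd_chain_step:
  fixes f :: "'a list \<Rightarrow> 'v::ab_group_add" and scv :: "'k \<Rightarrow> 'v \<Rightarrow> 'v"
  assumes V: "vector_space scv" and f: "mlf scv (Suc (Suc n)) f" and x: "x \<in> P (Suc n)"
    and hyp: "\<And>\<Xi> b. mlf scv (Suc n) \<Xi> \<Longrightarrow> b \<in> Bs (Suc n) \<Longrightarrow> Fd n (bdst \<Xi>) (d n b) = 0"
  shows "Fd (Suc n) (bdst f) x = Fd n f (d n x)"
proof -
  have lin: "lin_on scp scv (P n) (Fd n f)" by (rule Fd_lin[OF V f])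
  have add: "\<forall>x\<in>P (Suc n). \<forall>y\<in>P (Suc n). Fd n f (d n (x + y)) = Fd n f (d n x) + Fd n f (d n y)"
    using lin d_P by (simp add: d_add lin_on_def)
  have "Fd n f (d n x) = ext (Suc n) (\<lambda>a b c. Fd n f (d n (lft a (rgt b c)))) x"
    by (rule ext_unique[OF add _ x]) simp
  also have "\<dots> = Fd (Suc n) (bdst f) x" unfolding Fd.simps
  proof (rule ext_cong[OF x])
    fix a b c assume b: "b \<in> Bs (Suc n)"
    have bP: "b \<in> P (Suc n)" by (rule Bs_P'[OF b])
    have dbP: "d n b \<in> P n" by (rule d_P[OF bP])
    define \<Xi> where "\<Xi> = (\<lambda>zs. f (a # rmul c zs))"
    have mX: "mlf scv (Suc n) \<Xi>" unfolding \<Xi>_def using mlf_rmul[OF mlf_Cons[OF f, of a]] by simp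
    have e: "eqon (Suc (Suc n)) (\<lambda>ys. bdst f (a # rmul c ys)) (\<lambda>ys. f (lmul a (rmul c ys)) - bdst \<Xi> ys)"
    proof (unfold eqon_def, intro allI impI)
      fix ys :: "'a list" assume l: "length ys = Suc (Suc n)"
      then have ne: "rmul c ys \<noteq> []" by (metis length_rmul list.size(3) nat.distinct(1))
      show "bdst f (a # rmul c ys) = f (lmul a (rmul c ys)) - bdst \<Xi> ys"
        using bdst_Cons[OF ne, of f a] bdst_rmul[of "\<lambda>zs. f (a # zs)" c ys] by (simp add: \<Xi>_def)
    qed
    have "Fd n f (d n (lft a (rgt b c))) = Fd n f (lft a (rgt (d n b) c))"
      by (simp add: d_lft[OF rgt_P[OF bP]] d_rgt[OF bP])
    also have "\<dots> = Fd n (\<lambda>ys. f (lmul a (rmul c ys))) (d n b)" by (rule Fd_bim[OF V f dbP])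
    also have "\<dots> = Fd n (\<lambda>ys. f (lmul a (rmul c ys))) (d n b) - Fd n (bdst \<Xi>) (d n b)"
      using hyp[OF mX b] by simp
    also have "\<dots> = Fd n (\<lambda>ys. f (lmul a (rmul c ys)) - bdst \<Xi> ys) (d n b)" by (simp add: Fd_diff)
    also have "\<dots> = Fd n (\<lambda>ys. bdst f (a # rmul c ys)) (d n b)" using Fd_cong[OF e dbP] by simp
    finally show "Fd n f (d n (lft a (rgt b c))) = Fd n (\<lambda>ys. bdst f (a # rmul c ys)) (d n b)" .
  qed
  finally show ?thesis by simp
qed

lemma Fd_chain:
  fixes f :: "'a list \<Rightarrow> 'v::ab_group_add" and scv :: "'k \<Rightarrow> 'v \<Rightarrow> 'v"
  assumes V: "vector_space scv"
  shows "mlf scv (Suc (Suc n)) f \<Longrightarrow> x \<in> P (Suc n) \<Longrightarrow> Fd (Suc n) (bdst f) x = Fd n f (d n x)"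
proof (induction n arbitrary: f x)
  case (0 f x)
  show ?case
  proof (rule Fd_chain_step[OF V 0])
    fix \<Xi> :: "'a list \<Rightarrow> 'v" and b assume X: "mlf scv (Suc 0) \<Xi>" and b: "b \<in> Bs (Suc 0)"
    have "Fd 0 (bdst \<Xi>) (d 0 b) = \<Xi> [aug (d 0 b)]"
      using Fd_chain0[OF V _ d_P[OF Bs_P'[OF b]]] X by simp
    also have "\<dots> = 0" using aug_d[of b] Bs_P'[OF b] mlf_zero[OF X V, of "[]" "[]"] by simp
    finally show "Fd 0 (bdst \<Xi>) (d 0 b) = 0" .
  qed
next
  case (Suc n f x)
  show ?case
  proof (rule Fd_chain_step[OF V Suc.prems])
    fix \<Xi> :: "'a list \<Rightarrow> 'v" and b assume X: "mlf scv (Suc (Suc n)) \<Xi>" and b: "b \<in> Bs (Suc (Suc n))"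
    have bP: "b \<in> P (Suc (Suc n))" by (rule Bs_P'[OF b])
    have "Fd (Suc n) (bdst \<Xi>) (d (Suc n) b) = Fd n \<Xi> (d n (d (Suc n) b))"
      by (rule Suc.IH[OF X d_P[OF bP]])
    also have "\<dots> = 0" using dd[OF bP] lin_on_zero[OF Fd_lin[OF V X] P_0] by simp
    finally show "Fd (Suc n) (bdst \<Xi>) (d (Suc n) b) = 0" .
  qed
qed

end


context R begin

lemma d_lin: "lin_on scp scp (P (Suc n)) (d n)"
  using d_add d_sc by (simp add: lin_on_def)

definition sig :: "nat \<Rightarrow> 'p \<Rightarrow> 'p" where
  "sig n = (SOME s. (\<forall>y. s y \<in> P (Suc n)) \<and> Vector_Spaces.linear scp scp s \<and> (\<forall>y\<in>d n ` P (Suc n). d n (s y) = y))"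

lemma sig: "(\<forall>y. sig n y \<in> P (Suc n)) \<and> Vector_Spaces.linear scp scp (sig n) \<and> (\<forall>y\<in>d n ` P (Suc n). d n (sig n y) = y)"
  unfolding sig_def by (rule someI_ex[OF linear_section[OF vsp vsp P_sub d_lin]])

lemma sig_P: "sig n y \<in> P (Suc n)" using sig by blast
lemma sig_d: "y \<in> d n ` P (Suc n) \<Longrightarrow> d n (sig n y) = y" using sig by blast
lemma sig_lin: "lin_on scp scp UNIV (sig n)"
  using sig[of n] by (auto simp: Vector_Spaces.linear_iff lin_on_def)

definition p0 :: 'p where "p0 = (SOME p. p \<in> P 0 \<and> aug p = one)"
lemma p0: "p0 \<in> P 0 \<and> aug p0 = one"
proof -
  have "one \<in> aug ` P 0" using exact_aug by simp
  then obtain p where "p \<in> P 0" "aug p = one" by blast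
  then show ?thesis unfolding p0_def by (metis (mono_tags, lifting) someI)
qed

primrec g :: "nat \<Rightarrow> 'a list \<Rightarrow> 'p" where
  "g 0 xs = p0"
| "g (Suc n) xs = sig n (bdst (\<lambda>ys. lft (hd ys) (rgt (g n (butlast (tl ys))) (last ys))) (one # xs @ [one]))"

definition Gf :: "nat \<Rightarrow> 'a list \<Rightarrow> 'p" where
  "Gf n ys = lft (hd ys) (rgt (g n (butlast (tl ys))) (last ys))"

lemma g_Suc: "g (Suc n) xs = sig n (bdst (Gf n) (one # xs @ [one]))"
proof -
  have "Gf n = (\<lambda>ys. lft (hd ys) (rgt (g n (butlast (tl ys))) (last ys)))" by (rule ext) (simp only: Gf_def)
  then show ?thesis by (simp only: g.simps)
qed

declare g.simps(2)[simp del]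

lemma g_P: "g n xs \<in> P n"
  by (cases n) (auto simp: p0 sig_P g_Suc)

lemma Gf_P: "Gf n ys \<in> P n"
  by (simp add: Gf_def lft_P rgt_P g_P)

lemma Gf_split: "Gf n (a # zs @ [c]) = lft a (rgt (g n zs) c)"
  by (simp add: Gf_def)

lemma len2_split: assumes "2 \<le> length ys" shows "\<exists>y0 mid yl. ys = y0 # mid @ [yl]"
proof (cases ys)
  case Nil then show ?thesis using assms by simp
next
  case (Cons y0 rest)
  then have "rest \<noteq> []" using assms by auto
  then obtain mid yl where "rest = mid @ [yl]" using rev_exhaust by blast
  then show ?thesis using Cons by blast
qed

lemma Gf_bim: "2 \<le> length ys \<Longrightarrow> Gf n (lmul a (rmul c ys)) = lft a (rgt (Gf n ys) c)"
proof -
  assume "2 \<le> length ys"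
  then obtain y0 mid yl where ys: "ys = y0 # mid @ [yl]" using len2_split by blast
  have gP: "g n mid \<in> P n" by (rule g_P)
  have "lmul a (rmul c ys) = mul a y0 # mid @ [mul yl c]"
    by (simp add: ys rmul_def butlast_append)
  then have "Gf n (lmul a (rmul c ys)) = lft (mul a y0) (rgt (g n mid) (mul yl c))" by (simp add: Gf_split)
  also have "\<dots> = lft (mul a y0) (rgt (rgt (g n mid) yl) c)" by (simp only: rgt_mul[OF gP])
  also have "\<dots> = lft a (lft y0 (rgt (rgt (g n mid) yl) c))" by (rule lft_mul[OF rgt_P[OF rgt_P[OF gP]]])
  also have "\<dots> = lft a (rgt (lft y0 (rgt (g n mid) yl)) c)"
    by (simp add: lft_rgt[OF rgt_P[OF gP]])
  finally show ?thesis by (simp add: ys Gf_split)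
qed

lemma P_closed: "0 \<in> P n" "\<forall>x\<in>P n. \<forall>y\<in>P n. x - y \<in> P n"
  using P_0 P_diff by auto

lemma bdst_Gf_in: "bdst (Gf n) ys \<in> P n"
  using bdst_natS[of "P n" id "Gf n" ys] P_closed Gf_P by simp

lemma bdst_Gf_bim:
  assumes l: "length ys = Suc (Suc (Suc n))"
  shows "bdst (Gf n) (lmul a (rmul c ys)) = lft a (rgt (bdst (Gf n) ys) c)"
proof -
  have "bdst (Gf n) (lmul a (rmul c ys)) = bdst (\<lambda>z. Gf n (lmul a (rmul c z))) ys"
    by (simp add: bdst_lmul[symmetric] bdst_rmul[symmetric])
  also have "\<dots> = bdst (\<lambda>z. lft a (rgt (Gf n z) c)) ys"
    by (rule bdst_cong[of "Suc (Suc n)"]) (auto simp: eqon_def l Gf_bim)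
  also have "\<dots> = lft a (rgt (bdst (Gf n) ys) c)"
  proof -
    have "\<forall>x\<in>P n. \<forall>y\<in>P n. lft a (rgt (x + y) c) = lft a (rgt x c) + lft a (rgt y c)"
    proof (intro ballI)
      fix x y assume x: "x \<in> P n" and y: "y \<in> P n"
      show "lft a (rgt (x + y) c) = lft a (rgt x c) + lft a (rgt y c)"
        by (simp add: rgt_add[OF x y] lft_add[OF rgt_P[OF x] rgt_P[OF y]])
    qed
    then show ?thesis using bdst_natS[of "P n" "\<lambda>v. lft a (rgt v c)" "Gf n" ys] P_closed Gf_P by simp
  qed
  finally show ?thesis .
qed

lemma Gf_aug: "aug (Gf 0 [y0, y1]) = mul y0 y1"
  using p0 by (simp add: Gf_def aug_lft aug_rgt rgt_P mul_oneL)

lemma mem0: "length zs = Suc 0 \<Longrightarrow> bdst (Gf 0) (one # zs @ [one]) \<in> d 0 ` P 1"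
proof -
  assume l: "length zs = Suc 0"
  define B where "B = bdst (Gf 0) (one # zs @ [one])"
  have BP: "B \<in> P 0" by (simp add: B_def bdst_Gf_in)
  have "\<forall>x\<in>P 0. \<forall>y\<in>P 0. aug (x + y) = aug x + aug y" by (simp add: aug_add)
  then have "aug B = bdst (\<lambda>ys. aug (Gf 0 ys)) (one # zs @ [one])"
    using bdst_natS[of "P 0" aug "Gf 0"] P_closed Gf_P by (simp add: B_def)
  also have "\<dots> = bdst (bdst hd) (one # zs @ [one])"
  proof (rule bdst_cong[of 2])
    show "eqon 2 (\<lambda>ys. aug (Gf 0 ys)) (bdst hd)"
    proof (unfold eqon_def, intro allI impI)
      fix ys :: "'a list" assume "length ys = 2"
      then have "2 \<le> length ys" by simp
      then obtain y0 mid y1 where "ys = y0 # mid @ [y1]" using len2_split by blast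
      then have "ys = [y0, y1]" using \<open>length ys = 2\<close> by simp
      then show "aug (Gf 0 ys) = bdst hd ys" by (simp add: Gf_aug)
    qed
  qed (use l in simp)
  also have "\<dots> = 0" by (rule bdst_bdst)
  finally show ?thesis using exact_Z[OF BP] B_def by simp
qed

lemma chain_from_mem:
  assumes M: "\<And>zs. length zs = Suc n \<Longrightarrow> bdst (Gf n) (one # zs @ [one]) \<in> d n ` P (Suc n)"
    and l: "length ys = Suc (Suc (Suc n))"
  shows "d n (Gf (Suc n) ys) = bdst (Gf n) ys"
proof -
  obtain a zs c where ys: "ys = a # zs @ [c]" using l len2_split[of ys] by fastforce
  then have lz: "length zs = Suc n" using l by simp
  define B where "B = bdst (Gf n) (one # zs @ [one])"
  have "d n (Gf (Suc n) ys) = d n (lft a (rgt (sig n B) c))" by (simp only: ys Gf_split g_Suc B_def)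
  also have "\<dots> = lft a (rgt (d n (sig n B)) c)" by (simp add: d_lft d_rgt rgt_P sig_P)
  also have "\<dots> = lft a (rgt B c)" using M[OF lz] sig_d by (simp add: B_def)
  also have "\<dots> = bdst (Gf n) (lmul a (rmul c (one # zs @ [one])))"
    unfolding B_def by (rule bdst_Gf_bim[symmetric]) (simp add: lz)
  also have "lmul a (rmul c (one # zs @ [one])) = ys"
    by (simp add: ys rmul_def butlast_append mul_oneL mul_oneR)
  finally show ?thesis .
qed

lemma mem_all: "length zs = Suc n \<Longrightarrow> bdst (Gf n) (one # zs @ [one]) \<in> d n ` P (Suc n)"
proof (induction n arbitrary: zs)
  case 0 then show ?case using mem0 by simp
next
  case (Suc m)
  define B where "B = bdst (Gf (Suc m)) (one # zs @ [one])"
  have BP: "B \<in> P (Suc m)" by (simp add: B_def bdst_Gf_in)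
  have "\<forall>x\<in>P (Suc m). \<forall>y\<in>P (Suc m). d m (x + y) = d m x + d m y" by (simp add: d_add)
  then have "d m B = bdst (\<lambda>ys. d m (Gf (Suc m) ys)) (one # zs @ [one])"
    using bdst_natS[of "P (Suc m)" "d m" "Gf (Suc m)"] P_closed Gf_P by (simp add: B_def)
  also have "\<dots> = bdst (bdst (Gf m)) (one # zs @ [one])"
  proof (rule bdst_cong[of "Suc (Suc (Suc m))"])
    show "eqon (Suc (Suc (Suc m))) (\<lambda>ys. d m (Gf (Suc m) ys)) (bdst (Gf m))"
      unfolding eqon_def using chain_from_mem[OF Suc.IH] by blast
  qed (simp add: Suc.prems)
  also have "\<dots> = 0" by (rule bdst_bdst)
  finally show ?case using exact_Suc[OF BP] B_def by simp
qed

lemma Gf_chain: "length ys = Suc (Suc (Suc n)) \<Longrightarrow> d n (Gf (Suc n) ys) = bdst (Gf n) ys"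
  by (rule chain_from_mem[OF mem_all])

lemma g_chain: "length xs = Suc n \<Longrightarrow> d n (g (Suc n) xs) = bdst (Gf n) (one # xs @ [one])"
  using mem_all sig_d by (simp add: g_Suc)

end


context R begin

lemma lin_comp_out: "lin_on sc scv UNIV h \<Longrightarrow> lin_on scv scv UNIV l \<Longrightarrow> lin_on sc scv UNIV (\<lambda>x. l (h x))"
  by (simp add: lin_on_def)

lemma mlf_frame: "mlf scv (Suc (Suc m)) F \<Longrightarrow> mlf scv m (\<lambda>xs. F (u # xs @ [v]))"
  unfolding mlf_def
proof (intro allI impI)
  fix us vs :: "'a list"
  assume F: "\<forall>us vs. length us + length vs + 1 = Suc (Suc m) \<longrightarrow> lin_on sc scv UNIV (\<lambda>x. F (us @ x # vs))"
    and l: "length us + length vs + 1 = m"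
  have "length (u # us) + length (vs @ [v]) + 1 = Suc (Suc m)" using l by simp
  from F[rule_format, OF this] show "lin_on sc scv UNIV (\<lambda>x. F (u # (us @ x # vs) @ [v]))" by simp
qed

lemma mlf_Gf: assumes g: "mlf scp n (g n)" shows "mlf scp (Suc (Suc n)) (Gf n)"
  unfolding mlf_def
proof (intro allI impI)
  fix us vs :: "'a list" assume l: "length us + length vs + 1 = Suc (Suc n)"
  show "lin_on sc scp UNIV (\<lambda>x. Gf n (us @ x # vs))"
  proof (cases us)
    case Nil
    then have "vs \<noteq> []" using l by auto
    then obtain mid yl where vs: "vs = mid @ [yl]" using rev_exhaust by blast
    have P: "rgt (g n mid) yl \<in> P n" by (rule rgt_P[OF g_P])
    show ?thesis using Nil vs lft_addL[OF P] lft_scL[OF P] by (simp add: Gf_split lin_on_def)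
  next
    case (Cons u us')
    show ?thesis
    proof (cases "vs = []")
      case True
      have gP: "g n us' \<in> P n" by (rule g_P)
      show ?thesis unfolding lin_on_def
      proof (intro conjI ballI allI)
        fix x y
        show "Gf n (us @ (x + y) # vs) = Gf n (us @ x # vs) + Gf n (us @ y # vs)"
          using Cons True by (simp add: Gf_split rgt_addR[OF gP] lft_add[OF rgt_P[OF gP] rgt_P[OF gP]])
      next
        fix c x
        show "Gf n (us @ sc c x # vs) = scp c (Gf n (us @ x # vs))"
          using Cons True by (simp add: Gf_split rgt_scR[OF gP] lft_sc[OF rgt_P[OF gP]])
      qed
    next
      case False
      then obtain vs' yl where vs: "vs = vs' @ [yl]" using rev_exhaust by blast
      have lg: "lin_on sc scp UNIV (\<lambda>x. g n (us' @ x # vs'))"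
        using mlf_slot[OF g, of us' vs'] l Cons vs by simp
      have e: "Gf n (us @ x # vs) = lft u (rgt (g n (us' @ x # vs')) yl)" for x
        using Gf_split[of n u "us' @ x # vs'" yl] by (simp add: Cons vs)
      show ?thesis unfolding lin_on_def e
      proof (intro conjI ballI allI)
        fix x y
        show "lft u (rgt (g n (us' @ (x + y) # vs')) yl) = lft u (rgt (g n (us' @ x # vs')) yl) + lft u (rgt (g n (us' @ y # vs')) yl)"
          using lg by (simp add: lin_on_def rgt_add[OF g_P g_P] lft_add[OF rgt_P[OF g_P] rgt_P[OF g_P]])
      next
        fix c x
        show "lft u (rgt (g n (us' @ sc c x # vs')) yl) = scp c (lft u (rgt (g n (us' @ x # vs')) yl))"
          using lg by (simp add: lin_on_def rgt_sc[OF g_P] lft_sc[OF rgt_P[OF g_P]])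
      qed
    qed
  qed
qed

lemma mlf_g: "mlf scp n (g n)"
proof (induction n)
  case 0 then show ?case by (simp add: mlf_def)
next
  case (Suc n)
  have m: "mlf scp (Suc n) (\<lambda>xs. bdst (Gf n) (one # xs @ [one]))"
    by (rule mlf_frame[OF bdst_ml[OF vsp mlf_Gf[OF Suc.IH]]])
  show ?case unfolding mlf_def g_Suc
    using lin_comp_out[OF mlf_slot[OF m] sig_lin] by blast
qed

lemma mlf_Gf': "mlf scp (Suc (Suc n)) (Gf n)" by (rule mlf_Gf[OF mlf_g])

lemma bdst_closed:
  fixes f :: "'a list \<Rightarrow> 'k"
  shows "bdst f xs = (\<Sum>i<length xs - 1. (-1)^i * f (take i xs @ mul (xs ! i) (xs ! Suc i) # drop (i + 2) xs))"
proof (induction f xs rule: bdst.induct)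
  case (1 f a0 a1 r)
  have "bdst f (a0 # a1 # r) = f (mul a0 a1 # r) - bdst (\<lambda>ys. f (a0 # ys)) (a1 # r)" by simp
  also have "\<dots> = f (mul a0 a1 # r) +
     (\<Sum>i<length r. (-1)^(Suc i) * f (take (Suc i) (a0 # a1 # r) @ mul ((a0 # a1 # r) ! Suc i) ((a0 # a1 # r) ! Suc (Suc i)) # drop (Suc i + 2) (a0 # a1 # r)))"
    using 1 by (simp add: sum_negf[symmetric])
  also have "\<dots> = (\<Sum>i<Suc (length r). (-1)^i * f (take i (a0 # a1 # r) @ mul ((a0 # a1 # r) ! i) ((a0 # a1 # r) ! Suc i) # drop (i + 2) (a0 # a1 # r)))"
    by (simp only: sum.lessThan_Suc_shift) simp
  finally show ?case by simp
qed auto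


definition tilde :: "('a list \<Rightarrow> 'k) \<Rightarrow> 'a list \<Rightarrow> 'k" where
  "tilde \<psi> zs = eps (hd zs) * \<psi> (butlast (tl zs)) * eps (last zs)"

lemma tilde_split: "tilde \<psi> (y0 # M @ [yl]) = eps y0 * \<psi> M * eps yl"
  by (simp add: tilde_def)

lemma HD:
  assumes l: "length xs = Suc n"
  shows "bdst (tilde \<psi>) (y0 # xs @ [yl]) = eps y0 * hoch_diff mul eps n \<psi> xs * eps yl"
proof -
  define L where "L = y0 # xs @ [yl]"
  define F where "F i = (-1)^i * tilde \<psi> (take i L @ mul (L ! i) (L ! Suc i) # drop (i + 2) L)" for i
  obtain x0 xs' where xs: "xs = x0 # xs'" using l by (cases xs) auto
  have "bdst (tilde \<psi>) L = (\<Sum>i<Suc (Suc n). F i)"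
    unfolding bdst_closed F_def using l by (simp add: L_def)
  also have "\<dots> = F 0 + ((\<Sum>i<n. F (Suc i)) + F (Suc n))"
    by (subst sum.lessThan_Suc_shift) (simp only: sum.lessThan_Suc)
  finally have main: "bdst (tilde \<psi>) L = F 0 + ((\<Sum>i<n. F (Suc i)) + F (Suc n))" .
  have F0: "F 0 = eps y0 * (eps x0 * \<psi> xs') * eps yl"
    by (simp add: F_def L_def xs eps_mul tilde_def)
  have FS: "F (Suc i) = eps y0 * ((-1)^(i+1) * \<psi> (take i xs @ mul (xs ! i) (xs ! Suc i) # drop (i + 2) xs)) * eps yl"
    if i: "i < n" for i
  proof -
    have "take (Suc i) L @ mul (L ! Suc i) (L ! Suc (Suc i)) # drop (Suc i + 2) L
        = y0 # (take i xs @ mul (xs ! i) (xs ! Suc i) # drop (i + 2) xs) @ [yl]"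
      using i l by (simp add: L_def nth_append)
    then show ?thesis
      using tilde_split[of \<psi> y0 "take i xs @ mul (xs ! i) (xs ! Suc i) # drop (i + 2) xs" yl] by (simp add: F_def)
  qed
  have Fn: "F (Suc n) = eps y0 * ((-1)^(n+1) * \<psi> (butlast xs) * eps (last xs)) * eps yl"
  proof -
    have lx: "last xs = xs ! n" using l by (metis diff_Suc_1 last_conv_nth list.size(3) nat.distinct(1))
    have "take (Suc n) L @ mul (L ! Suc n) (L ! Suc (Suc n)) # drop (Suc n + 2) L
        = y0 # butlast xs @ [mul (last xs) yl]"
      using l lx by (simp add: L_def nth_append butlast_conv_take)
    then show ?thesis by (simp add: F_def tilde_split eps_mul)
  qed
  have sumeq: "(\<Sum>i<n. F (Suc i)) = (\<Sum>i<n. eps y0 * ((-1)^(i+1) * \<psi> (take i xs @ mul (xs ! i) (xs ! Suc i) # drop (i + 2) xs)) * eps yl)"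
    by (rule sum.cong) (simp_all add: FS)
  show ?thesis
    using main F0 sumeq Fn l
    by (simp add: L_def hoch_diff_def xs sum_distrib_left sum_distrib_right algebra_simps)
qed

end


context R begin

lemma ext_natS:
  assumes l: "\<forall>u\<in>S. \<forall>v\<in>S. l (u + v) = l u + l v" and S0: "0 \<in> S" and Sadd: "\<forall>u\<in>S. \<forall>v\<in>S. u + v \<in> S"
    and T: "\<And>a b c. b \<in> Bs n \<Longrightarrow> T a b c \<in> S" and x: "x \<in> P n"
  shows "l (ext n T x) = ext n (\<lambda>a b c. l (T a b c)) x"
proof -
  have l0: "l 0 = 0" using l S0 by (metis add.right_neutral add_left_cancel)
  have "\<forall>t\<in>set ts. (\<lambda>(a, b, c). T a b c) t \<in> S \<Longrightarrow>
    l (sum_list (map (\<lambda>(a, b, c). T a b c) ts)) = sum_list (map (\<lambda>(a, b, c). l (T a b c)) ts)" for ts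
  proof (induction ts)
    case Nil then show ?case by (simp add: l0)
  next
    case (Cons t ts)
    have "sum_list (map (\<lambda>(a, b, c). T a b c) ts) \<in> S"
      using Cons.prems by (induction ts) (auto simp: S0 Sadd)
    then show ?case using Cons l by (auto simp: case_prod_unfold)
  qed
  moreover have "\<forall>t\<in>set (rep n x). (\<lambda>(a, b, c). T a b c) t \<in> S"
    using rep[OF x] T unfolding inB_def by auto
  ultimately show ?thesis unfolding ext_def by (simp add: case_prod_unfold)
qed

lemma Fd_natS:
  assumes l: "\<forall>u\<in>S. \<forall>v\<in>S. l (u + v) = l u + l v" and S0: "0 \<in> S" and Sadd: "\<forall>u\<in>S. \<forall>v\<in>S. u + v \<in> S"
  shows "(\<And>ys. f ys \<in> S) \<Longrightarrow> x \<in> P n \<Longrightarrow> l (Fd n f x) = Fd n (\<lambda>ys. l (f ys)) x"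
proof (induction n arbitrary: f x)
  case 0 then show ?case unfolding Fd.simps by (intro ext_natS[OF l S0 Sadd]) auto
next
  case (Suc n)
  show ?case unfolding Fd.simps
  proof (subst ext_natS[OF l S0 Sadd _ Suc.prems(2)])
    show "Fd n (\<lambda>ys. f (a # rmul c ys)) (d n b) \<in> S" if "b \<in> Bs (Suc n)" for a b c
      by (rule Fd_in[OF d_P[OF Bs_P'[OF that]]]) (use Suc.prems S0 Sadd in auto)
    show "ext (Suc n) (\<lambda>a b c. l (Fd n (\<lambda>ys. f (a # rmul c ys)) (d n b))) x =
        ext (Suc n) (\<lambda>a b c. Fd n (\<lambda>ys. l (f (a # rmul c ys))) (d n b)) x"
      by (rule ext_cong[OF Suc.prems(2)]) (rule Suc.IH, use Suc.prems d_P[OF Bs_P'] in auto)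
  qed
qed

lemma P_add_ball: "\<forall>u\<in>P n. \<forall>v\<in>P n. u + v \<in> P n" using P_add by blast

lemma hoch_slot: "\<psi> \<in> hoch_cochains sc n \<Longrightarrow> length us + length vs + 1 = n \<Longrightarrow> lin_on sc (*) UNIV (\<lambda>x. \<psi> (us @ x # vs))"
  by (simp add: hoch_cochains_def)
lemma hoch_len: "\<psi> \<in> hoch_cochains sc n \<Longrightarrow> length xs \<noteq> n \<Longrightarrow> \<psi> xs = 0"
  by (simp add: hoch_cochains_def)

lemma hoch_mlf: "\<psi> \<in> hoch_cochains sc n \<Longrightarrow> mlf (*) n \<psi>"
  by (simp add: hoch_cochains_def mlf_def)

lemma tilde_ml:
  assumes psi: "\<psi> \<in> hoch_cochains sc n"
  shows "mlf (*) (Suc (Suc n)) (tilde \<psi>)"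
  unfolding mlf_def
proof (intro allI impI)
  fix us vs :: "'a list" assume l: "length us + length vs + 1 = Suc (Suc n)"
  show "lin_on sc (*) UNIV (\<lambda>x. tilde \<psi> (us @ x # vs))"
  proof (cases us)
    case Nil
    then have "vs \<noteq> []" using l by auto
    then obtain mid yl where vs: "vs = mid @ [yl]" using rev_exhaust by blast
    show ?thesis using Nil vs by (simp add: tilde_split lin_on_def eps_add eps_sc algebra_simps)
  next
    case (Cons u us')
    show ?thesis
    proof (cases "vs = []")
      case True
      have e: "tilde \<psi> (us @ x # vs) = eps u * \<psi> us' * eps x" for x
        using tilde_split[of \<psi> u us' x] by (simp add: Cons True)
      show ?thesis unfolding e by (simp add: lin_on_def eps_add eps_sc algebra_simps)
    next
      case False
      then obtain vs' yl where vs: "vs = vs' @ [yl]" using rev_exhaust by blast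
      have lg: "lin_on sc (*) UNIV (\<lambda>x. \<psi> (us' @ x # vs'))"
        using hoch_slot[OF psi, of us' vs'] l Cons vs by simp
      have e: "tilde \<psi> (us @ x # vs) = eps u * \<psi> (us' @ x # vs') * eps yl" for x
        using tilde_split[of \<psi> u "us' @ x # vs'" yl] by (simp add: Cons vs)
      show ?thesis unfolding e using lg by (simp add: lin_on_def algebra_simps)
    qed
  qed
qed

lemma tilde_bim: "2 \<le> length ys \<Longrightarrow> tilde \<psi> (lmul a (rmul c ys)) = (eps a * eps c) * tilde \<psi> ys"
proof -
  assume "2 \<le> length ys"
  then obtain y0 mid yl where ys: "ys = y0 # mid @ [yl]" using len2_split by blast
  have "lmul a (rmul c ys) = mul a y0 # mid @ [mul yl c]" by (simp add: ys rmul_def butlast_append)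
  then show ?thesis by (simp add: ys tilde_split eps_mul algebra_simps)
qed

definition Fst :: "nat \<Rightarrow> ('a list \<Rightarrow> 'k) \<Rightarrow> 'p \<Rightarrow> 'k" where
  "Fst n \<psi> = (\<lambda>x. if x \<in> P n then Fd n (tilde \<psi>) x else 0)"

definition Gst :: "nat \<Rightarrow> ('p \<Rightarrow> 'k) \<Rightarrow> 'a list \<Rightarrow> 'k" where
  "Gst n w = (\<lambda>xs. if length xs = n then w (g n xs) else 0)"

lemma Fd_tilde_bim:
  assumes psi: "\<psi> \<in> hoch_cochains sc n" and x: "x \<in> P n"
  shows "Fd n (tilde \<psi>) (lft a (rgt x c)) = (eps a * eps c) * Fd n (tilde \<psi>) x"
proof -
  have "Fd n (tilde \<psi>) (lft a (rgt x c)) = Fd n (\<lambda>ys. tilde \<psi> (lmul a (rmul c ys))) x"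
    by (rule Fd_bim[OF VK tilde_ml[OF psi] x])
  also have "\<dots> = Fd n (\<lambda>ys. (eps a * eps c) * tilde \<psi> ys) x"
    by (rule Fd_cong[OF _ x]) (simp add: eqon_def tilde_bim)
  also have "\<dots> = (eps a * eps c) * Fd n (tilde \<psi>) x"
    by (rule Fd_nat[symmetric]) (simp add: algebra_simps)
  finally show ?thesis .
qed

lemma Fst_bimk: assumes psi: "\<psi> \<in> hoch_cochains sc n" shows "bimk n (Fst n \<psi>)"
  unfolding bimk_def
proof (intro conjI allI ballI impI)
  show "x \<notin> P n \<Longrightarrow> Fst n \<psi> x = 0" for x by (simp add: Fst_def)
  show "lin_on scp (*) (P n) (Fst n \<psi>)"
    using Fd_lin[OF VK tilde_ml[OF psi]] by (simp add: lin_on_def Fst_def P_add P_sc)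
  fix a x assume x: "x \<in> P n"
  show "Fst n \<psi> (lft a x) = eps a * Fst n \<psi> x"
    using Fd_tilde_bim[OF psi x, of a one] x by (simp add: Fst_def lft_P rgt_one eps_one)
  show "Fst n \<psi> (rgt x a) = Fst n \<psi> x * eps a"
    using Fd_tilde_bim[OF psi x, of one a] x by (simp add: Fst_def rgt_P lft_one[OF rgt_P[OF x]] eps_one mult.commute)
qed

lemma Fst_homAA: "\<psi> \<in> hoch_cochains sc n \<Longrightarrow> Fst n \<psi> \<in> homAA scp (P n) (HP n) lft rgt eps"
  using Fst_bimk homAA_iff by blast

lemma tilde_add: "tilde (\<lambda>xs. \<psi>1 xs + \<psi>2 xs) = (\<lambda>xs. tilde \<psi>1 xs + tilde \<psi>2 xs)"
  by (rule ext) (simp add: tilde_def algebra_simps)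
lemma tilde_sc: "tilde (\<lambda>xs. c * \<psi> xs) = (\<lambda>xs. c * tilde \<psi> xs)"
  by (rule ext) (simp add: tilde_def algebra_simps)

lemma Fst_add: "Fst n (\<lambda>xs. \<psi>1 xs + \<psi>2 xs) = (\<lambda>x. Fst n \<psi>1 x + Fst n \<psi>2 x)"
  by (rule ext) (simp add: Fst_def tilde_add Fd_add)

lemma Fst_sc: "Fst n (\<lambda>xs. c * \<psi> xs) = (\<lambda>x. c * Fst n \<psi> x)"
  by (rule ext) (simp add: Fst_def tilde_sc Fd_nat[of "\<lambda>v. c * v", symmetric] algebra_simps)

lemma tilde_chain:
  assumes "length ys = Suc (Suc (Suc n))"
  shows "bdst (tilde \<psi>) ys = tilde (hoch_diff mul eps n \<psi>) ys"
proof -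
  obtain y0 xs yl where ys: "ys = y0 # xs @ [yl]" using assms len2_split[of ys] by fastforce
  then have l: "length xs = Suc n" using assms by simp
  show ?thesis using HD[OF l] by (simp add: ys tilde_split)
qed

lemma Fst_chain:
  assumes psi: "\<psi> \<in> hoch_cochains sc n"
  shows "hom_diff P d n (Fst n \<psi>) = Fst (Suc n) (hoch_diff mul eps n \<psi>)"
proof (rule ext)
  fix x show "hom_diff P d n (Fst n \<psi>) x = Fst (Suc n) (hoch_diff mul eps n \<psi>) x"
  proof (cases "x \<in> P (Suc n)")
    case True
    have "Fd n (tilde \<psi>) (d n x) = Fd (Suc n) (bdst (tilde \<psi>)) x"
      by (rule Fd_chain[OF VK tilde_ml[OF psi] True, symmetric])
    also have "\<dots> = Fd (Suc n) (tilde (hoch_diff mul eps n \<psi>)) x"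
      by (rule Fd_cong[OF _ True]) (simp add: eqon_def tilde_chain)
    finally show ?thesis using True d_P[OF True] by (simp add: hom_diff_def Fst_def)
  qed (simp add: hom_diff_def Fst_def)
qed

lemma comp_lin_P: "lin_on sc scp UNIV h \<Longrightarrow> (\<And>x. h x \<in> P n) \<Longrightarrow> lin_on scp (*) (P n) l \<Longrightarrow> lin_on sc (*) UNIV (\<lambda>x. l (h x))"
  by (simp add: lin_on_def)

lemma Gst_coch: assumes w: "bimk n w" shows "Gst n w \<in> hoch_cochains sc n"
  unfolding hoch_cochains_def
proof (intro CollectI conjI allI impI)
  show "length xs \<noteq> n \<Longrightarrow> Gst n w xs = 0" for xs by (simp add: Gst_def)
  fix us vs :: "'a list" assume l: "length us + length vs + 1 = n"
  have "lin_on sc (*) UNIV (\<lambda>x. w (g n (us @ x # vs)))"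
    by (rule comp_lin_P[OF mlf_slot[OF mlf_g l] g_P bimk_lin[OF w]])
  then show "lin_on sc (*) UNIV (\<lambda>x. Gst n w (us @ x # vs))" using l by (simp add: Gst_def)
qed

lemma w_Gf:
  assumes w: "bimk n w" and l: "length ys = Suc (Suc n)"
  shows "w (Gf n ys) = tilde (Gst n w) ys"
proof -
  obtain y0 mid yl where ys: "ys = y0 # mid @ [yl]" using l len2_split[of ys] by fastforce
  then have lm: "length mid = n" using l by simp
  show ?thesis
    using bimk_lft[OF w rgt_P[OF g_P]] bimk_rgt[OF w g_P] lm
    by (simp add: ys Gf_split tilde_split Gst_def)
qed

lemma bimk_addb: "bimk n w \<Longrightarrow> \<forall>u\<in>P n. \<forall>v\<in>P n. w (u + v) = w u + w v"
  using bimk_add' by blast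

lemma Gst_chain:
  assumes w: "bimk n w"
  shows "Gst (Suc n) (hom_diff P d n w) = hoch_diff mul eps n (Gst n w)"
proof (rule ext)
  fix xs :: "'a list"
  show "Gst (Suc n) (hom_diff P d n w) xs = hoch_diff mul eps n (Gst n w) xs"
  proof (cases "length xs = Suc n")
    case True
    have "Gst (Suc n) (hom_diff P d n w) xs = w (d n (g (Suc n) xs))"
      using True g_P by (simp add: Gst_def hom_diff_def)
    also have "\<dots> = w (bdst (Gf n) (one # xs @ [one]))" by (simp add: g_chain[OF True])
    also have "\<dots> = bdst (\<lambda>ys. w (Gf n ys)) (one # xs @ [one])"
      using bdst_natS[of "P n" w "Gf n"] bimk_addb[OF w] P_closed Gf_P by simp
    also have "\<dots> = bdst (tilde (Gst n w)) (one # xs @ [one])"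
      by (rule bdst_cong[of "Suc (Suc n)"]) (auto simp: eqon_def True w_Gf[OF w])
    also have "\<dots> = hoch_diff mul eps n (Gst n w) xs" using HD[OF True] by (simp add: eps_one)
    finally show ?thesis .
  next
    case False then show ?thesis by (simp add: Gst_def hoch_diff_def)
  qed
qed

lemma Fst_Gst:
  assumes w: "bimk n w" and x: "x \<in> P n"
  shows "Fst n (Gst n w) x = w (Fd n (Gf n) x)"
proof -
  have "Fst n (Gst n w) x = Fd n (\<lambda>ys. w (Gf n ys)) x"
    using x by (simp add: Fst_def Fd_cong[OF _ x] eqon_def w_Gf[OF w])
  also have "\<dots> = w (Fd n (Gf n) x)"
    by (rule Fd_natS[symmetric, OF bimk_addb[OF w] P_0 P_add_ball Gf_P x])
  finally show ?thesis .
qed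

end


context R begin

definition GFm :: "nat \<Rightarrow> 'p \<Rightarrow> 'p" where "GFm n x = Fd n (Gf n) x"

lemma GF_P: "x \<in> P n \<Longrightarrow> GFm n x \<in> P n"
  unfolding GFm_def by (rule Fd_in) (auto simp: Gf_P P_0 P_add)

lemma GF_lin: "lin_on scp scp (P n) (GFm n)"
  unfolding GFm_def[abs_def] by (rule Fd_lin[OF vsp mlf_Gf'])

lemma GF_add: "x \<in> P n \<Longrightarrow> y \<in> P n \<Longrightarrow> GFm n (x + y) = GFm n x + GFm n y"
  using GF_lin by (simp add: lin_on_def)

lemma lr_add: "\<forall>u\<in>P n. \<forall>v\<in>P n. lft a (rgt (u + v) c) = lft a (rgt u c) + lft a (rgt v c)"
proof (intro ballI)
  fix x y assume x: "x \<in> P n" and y: "y \<in> P n"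
  show "lft a (rgt (x + y) c) = lft a (rgt x c) + lft a (rgt y c)"
    by (simp add: rgt_add[OF x y] lft_add[OF rgt_P[OF x] rgt_P[OF y]])
qed

lemma GF_bim: "x \<in> P n \<Longrightarrow> GFm n (lft a (rgt x c)) = lft a (rgt (GFm n x) c)"
proof -
  assume x: "x \<in> P n"
  have "GFm n (lft a (rgt x c)) = Fd n (\<lambda>ys. Gf n (lmul a (rmul c ys))) x"
    unfolding GFm_def by (rule Fd_bim[OF vsp mlf_Gf' x])
  also have "\<dots> = Fd n (\<lambda>ys. lft a (rgt (Gf n ys) c)) x"
    by (rule Fd_cong[OF _ x]) (simp add: eqon_def Gf_bim)
  also have "\<dots> = lft a (rgt (GFm n x) c)"
    unfolding GFm_def by (rule Fd_natS[symmetric, OF lr_add P_0 P_add_ball Gf_P x])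
  finally show ?thesis .
qed

lemma d_addb: "\<forall>u\<in>P (Suc n). \<forall>v\<in>P (Suc n). d n (u + v) = d n u + d n v"
  using d_add by blast

lemma GF_chain: "x \<in> P (Suc n) \<Longrightarrow> d n (GFm (Suc n) x) = GFm n (d n x)"
proof -
  assume x: "x \<in> P (Suc n)"
  have "d n (GFm (Suc n) x) = Fd (Suc n) (\<lambda>ys. d n (Gf (Suc n) ys)) x"
    unfolding GFm_def by (rule Fd_natS[OF d_addb P_0 P_add_ball Gf_P x])
  also have "\<dots> = Fd (Suc n) (bdst (Gf n)) x"
    by (rule Fd_cong[OF _ x]) (simp add: eqon_def Gf_chain)
  also have "\<dots> = GFm n (d n x)"
    unfolding GFm_def by (rule Fd_chain[OF vsp mlf_Gf' x])
  finally show ?thesis .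
qed

lemma mlf_hd: "mlf sc 1 hd"
  by (auto simp: mlf_def lin_on_def)

lemma aug_addb: "\<forall>u\<in>P 0. \<forall>v\<in>P 0. aug (u + v) = aug u + aug v"
  using aug_add by blast

lemma GF_aug: "x \<in> P 0 \<Longrightarrow> aug (GFm 0 x) = aug x"
proof -
  assume x: "x \<in> P 0"
  have "aug (GFm 0 x) = Fd 0 (\<lambda>ys. aug (Gf 0 ys)) x"
    unfolding GFm_def by (rule Fd_natS[OF aug_addb P_0 P_add_ball Gf_P x])
  also have "\<dots> = Fd 0 (bdst hd) x"
  proof (rule Fd_cong[OF _ x], unfold eqon_def, intro allI impI)
    fix ys :: "'a list" assume "length ys = Suc (Suc 0)"
    then have "2 \<le> length ys" by simp
    then obtain y0 mid y1 where "ys = y0 # mid @ [y1]" using len2_split by blast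
    then have "ys = [y0, y1]" using \<open>length ys = Suc (Suc 0)\<close> by simp
    then show "aug (Gf 0 ys) = bdst hd ys" by (simp add: Gf_aug)
  qed
  also have "\<dots> = aug x" using Fd_chain0[OF VA mlf_hd x] by simp
  finally show ?thesis .
qed

primrec Hh :: "nat \<Rightarrow> 'p \<Rightarrow> 'p" where
  "Hh 0 = ext 0 (\<lambda>a b c. lft a (rgt (sig 0 (b - GFm 0 b)) c))"
| "Hh (Suc n) = ext (Suc n) (\<lambda>a b c. lft a (rgt (sig (Suc n) (b - GFm (Suc n) b - Hh n (d n b))) c))"

definition hg :: "nat \<Rightarrow> 'p \<Rightarrow> 'p" where
  "hg n b = (case n of 0 \<Rightarrow> sig 0 (b - GFm 0 b) | Suc m \<Rightarrow> sig (Suc m) (b - GFm (Suc m) b - Hh m (d m b)))"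

lemma Hh_ext: "Hh n = ext n (\<lambda>a b c. lft a (rgt (hg n b) c))"
  by (cases n) (simp_all add: hg_def)

declare Hh.simps[simp del]

lemma hg_P: "hg n b \<in> P (Suc n)"
  by (cases n) (simp_all add: hg_def sig_P)

lemma good_hg: "goodT scp n (\<lambda>a b c. lft a (rgt (hg n b) c))"
  unfolding goodT_def lin_on_def
proof (intro conjI ballI allI)
  fix b x y c k a
  have hP: "hg n b \<in> P (Suc n)" by (rule hg_P)
  show "lft (x + y) (rgt (hg n b) c) = lft x (rgt (hg n b) c) + lft y (rgt (hg n b) c)"
    by (rule lft_addL[OF rgt_P[OF hP]])
  show "lft (sc k x) (rgt (hg n b) c) = scp k (lft x (rgt (hg n b) c))"
    by (rule lft_scL[OF rgt_P[OF hP]])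
  show "lft a (rgt (hg n b) (x + y)) = lft a (rgt (hg n b) x) + lft a (rgt (hg n b) y)"
    by (simp add: rgt_addR[OF hP] lft_add[OF rgt_P[OF hP] rgt_P[OF hP]])
  show "lft a (rgt (hg n b) (sc k x)) = scp k (lft a (rgt (hg n b) x))"
    by (simp add: rgt_scR[OF hP] lft_sc[OF rgt_P[OF hP]])
qed

lemma Hh_P: "x \<in> P n \<Longrightarrow> Hh n x \<in> P (Suc n)"
  unfolding Hh_ext by (rule ext_in) (auto simp: lft_P rgt_P hg_P P_0 P_add)

lemma Hh_lin: "lin_on scp scp (P n) (Hh n)"
  unfolding Hh_ext by (rule ext_lin[OF vsp good_hg])

lemma Hh_add: "x \<in> P n \<Longrightarrow> y \<in> P n \<Longrightarrow> Hh n (x + y) = Hh n x + Hh n y"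
  using Hh_lin by (simp add: lin_on_def)

lemma Hh_bim: "x \<in> P n \<Longrightarrow> Hh n (lft a (rgt x c)) = lft a (rgt (Hh n x) c)"
proof -
  assume x: "x \<in> P n"
  have "Hh n (lft a (rgt x c)) = ext n (\<lambda>a' b c'. lft (mul a a') (rgt (hg n b) (mul c' c))) x"
    unfolding Hh_ext by (rule ext_bim[OF vsp good_hg x])
  also have "\<dots> = ext n (\<lambda>a' b c'. lft a (rgt (lft a' (rgt (hg n b) c')) c)) x"
  proof (rule ext_cong[OF x])
    fix a' b c'
    have hP: "hg n b \<in> P (Suc n)" by (rule hg_P)
    have "lft (mul a a') (rgt (hg n b) (mul c' c)) = lft (mul a a') (rgt (rgt (hg n b) c') c)"
      by (simp only: rgt_mul[OF hP])
    also have "\<dots> = lft a (lft a' (rgt (rgt (hg n b) c') c))" by (rule lft_mul[OF rgt_P[OF rgt_P[OF hP]]])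
    also have "\<dots> = lft a (rgt (lft a' (rgt (hg n b) c')) c)" by (simp add: lft_rgt[OF rgt_P[OF hP]])
    finally show "lft (mul a a') (rgt (hg n b) (mul c' c)) = lft a (rgt (lft a' (rgt (hg n b) c')) c)" .
  qed
  also have "\<dots> = lft a (rgt (Hh n x) c)"
    unfolding Hh_ext by (rule ext_natS[symmetric, OF lr_add[of "Suc n"] P_0[of "Suc n"] P_add_ball[of "Suc n"] _ x]) (simp add: lft_P rgt_P hg_P)
  finally show ?thesis .
qed

lemma Hh_gen: "b \<in> Bs n \<Longrightarrow> Hh n b = hg n b"
  unfolding Hh_ext using ext_gen[OF vsp good_hg] lft_one[OF hg_P] rgt_one[OF hg_P] by simp


definition Rr :: "nat \<Rightarrow> 'p \<Rightarrow> 'p" where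
  "Rr n x = x - GFm n x - (case n of 0 \<Rightarrow> 0 | Suc m \<Rightarrow> Hh m (d m x))"

lemma hg_Rr: "hg n b = sig n (Rr n b)"
  by (cases n) (simp_all add: hg_def Rr_def)

lemma Rr_P: "x \<in> P n \<Longrightarrow> Rr n x \<in> P n"
  by (cases n) (auto simp: Rr_def intro!: P_diff GF_P Hh_P d_P)

lemma Rr_add: "x \<in> P n \<Longrightarrow> y \<in> P n \<Longrightarrow> Rr n (x + y) = Rr n x + Rr n y"
proof (cases n)
  case 0 assume "x \<in> P n" "y \<in> P n" then show ?thesis using 0 by (simp add: Rr_def GF_add)
next
  case (Suc m) assume x: "x \<in> P n" and y: "y \<in> P n"
  then show ?thesis using Suc by (simp add: Rr_def GF_add d_add Hh_add d_P)
qed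

lemma lr_diff: "u \<in> P n \<Longrightarrow> v \<in> P n \<Longrightarrow> lft a (rgt (u - v) c) = lft a (rgt u c) - lft a (rgt v c)"
proof -
  assume u: "u \<in> P n" and v: "v \<in> P n"
  show ?thesis by (simp add: rgt_diff[OF u v] lft_diff[OF rgt_P[OF u] rgt_P[OF v]])
qed

lemma Rr_bim: "x \<in> P n \<Longrightarrow> Rr n (lft a (rgt x c)) = lft a (rgt (Rr n x) c)"
proof (cases n)
  case 0 assume x: "x \<in> P n"
  then show ?thesis using 0 by (simp add: Rr_def GF_bim lr_diff GF_P)
next
  case (Suc m) assume x: "x \<in> P n"
  have "d m (lft a (rgt x c)) = lft a (rgt (d m x) c)" using x Suc by (simp add: d_lft d_rgt rgt_P)
  have xG: "x - GFm (Suc m) x \<in> P (Suc m)" using x Suc by (simp add: P_diff GF_P)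
  have HP: "Hh m (d m x) \<in> P (Suc m)" using x Suc by (simp add: Hh_P d_P)
  have "lft a (rgt (Rr n x) c) = lft a (rgt (x - GFm (Suc m) x) c) - lft a (rgt (Hh m (d m x)) c)"
    using Suc lr_diff[OF xG HP] by (simp add: Rr_def)
  also have "\<dots> = lft a (rgt x c) - lft a (rgt (GFm (Suc m) x) c) - lft a (rgt (Hh m (d m x)) c)"
    using x Suc lr_diff[of x "Suc m" "GFm (Suc m) x"] GF_P by simp
  finally show ?thesis using x Suc \<open>d m (lft a (rgt x c)) = lft a (rgt (d m x) c)\<close>
    by (simp add: Rr_def GF_bim Hh_bim d_P)
qed

lemma HI: "x \<in> P n \<Longrightarrow> d n (Hh n x) = Rr n x"
proof (induction n arbitrary: x)
  case 0
  have gen: "d 0 (Hh 0 b) = Rr 0 b" if b: "b \<in> Bs 0" for b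
  proof -
    have bP: "b \<in> P 0" by (rule Bs_P'[OF b])
    have "aug (Rr 0 b) = aug b - aug (GFm 0 b)"
      using addS_diff[of "P 0" aug b "GFm 0 b"] aug_addb P_0 P_minus bP GF_P[OF bP] by (simp add: Rr_def)
    then have "aug (Rr 0 b) = 0" using GF_aug[OF bP] by simp
    then have "Rr 0 b \<in> d 0 ` P 1" using exact_Z Rr_P[OF bP] by blast
    then show ?thesis using Hh_gen[OF b] hg_Rr sig_d by simp
  qed
  have f1: "d 0 (Hh 0 x) = ext 0 (\<lambda>a b c. d 0 (Hh 0 (lft a (rgt b c)))) x"
    by (rule ext_unique[OF _ _ "0.prems"]) (auto simp: Hh_add Hh_P d_add)
  have f2: "Rr 0 x = ext 0 (\<lambda>a b c. Rr 0 (lft a (rgt b c))) x"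
    by (rule ext_unique[OF _ _ "0.prems"]) (auto simp: Rr_add)
  show ?case unfolding f1 f2
    by (rule ext_cong[OF "0.prems"]) (simp add: Hh_bim Rr_bim Bs_P' d_lft d_rgt Hh_P rgt_P gen)
next
  case (Suc m)
  have gen: "d (Suc m) (Hh (Suc m) b) = Rr (Suc m) b" if b: "b \<in> Bs (Suc m)" for b
  proof -
    have bP: "b \<in> P (Suc m)" by (rule Bs_P'[OF b])
    have dbP: "d m b \<in> P m" by (rule d_P[OF bP])
    have "d m (Rr (Suc m) b) = d m b - d m (GFm (Suc m) b) - d m (Hh m (d m b))"
      using bP by (simp add: Rr_def d_diff GF_P Hh_P dbP P_diff)
    also have "\<dots> = d m b - GFm m (d m b) - Rr m (d m b)" by (simp add: GF_chain[OF bP] Suc.IH[OF dbP])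
    also have "\<dots> = (case m of 0 \<Rightarrow> 0 | Suc m' \<Rightarrow> Hh m' (d m' (d m b)))" by (simp add: Rr_def)
    also have "\<dots> = 0"
    proof (cases m)
      case (Suc m')
      have "d m' (d m b) = 0" using dd[of b m'] bP Suc by simp
      then show ?thesis using Suc lin_on_zero[OF Hh_lin P_0] by simp
    qed simp
    finally have "Rr (Suc m) b \<in> d (Suc m) ` P (Suc (Suc m))" using exact_Suc Rr_P[OF bP] by blast
    then show ?thesis using Hh_gen[OF b] hg_Rr sig_d by simp
  qed
  have f1: "d (Suc m) (Hh (Suc m) x) = ext (Suc m) (\<lambda>a b c. d (Suc m) (Hh (Suc m) (lft a (rgt b c)))) x"
    by (rule ext_unique[OF _ _ Suc.prems]) (auto simp: Hh_add Hh_P d_add)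
  have f2: "Rr (Suc m) x = ext (Suc m) (\<lambda>a b c. Rr (Suc m) (lft a (rgt b c))) x"
    by (rule ext_unique[OF _ _ Suc.prems]) (auto simp: Rr_add)
  show ?case unfolding f1 f2
    by (rule ext_cong[OF Suc.prems]) (simp add: Hh_bim Rr_bim Bs_P' d_lft d_rgt Hh_P rgt_P gen)
qed


definition Tw :: "nat \<Rightarrow> ('p \<Rightarrow> 'k) \<Rightarrow> 'p \<Rightarrow> 'k" where
  "Tw m w = (\<lambda>y. if y \<in> P m then w (Hh m y) else 0)"

lemma Hh_lft: "x \<in> P m \<Longrightarrow> Hh m (lft a x) = lft a (Hh m x)"
  using Hh_bim[of x m a one] by (simp add: rgt_one rgt_one[OF Hh_P])
lemma Hh_rgt: "x \<in> P m \<Longrightarrow> Hh m (rgt x c) = rgt (Hh m x) c"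
  using Hh_bim[of x m one c] by (simp add: lft_one[OF rgt_P] lft_one[OF rgt_P[OF Hh_P]])

lemma Tw_bimk: assumes w: "bimk (Suc m) w" shows "bimk m (Tw m w)"
  unfolding bimk_def
proof (intro conjI allI ballI impI)
  show "x \<notin> P m \<Longrightarrow> Tw m w x = 0" for x by (simp add: Tw_def)
  show "lin_on scp (*) (P m) (Tw m w)"
    using Hh_lin[of m] bimk_lin[OF w] Hh_P by (simp add: lin_on_def Tw_def P_add P_sc)
  fix a x assume x: "x \<in> P m"
  show "Tw m w (lft a x) = eps a * Tw m w x"
    using x by (simp add: Tw_def lft_P Hh_lft bimk_lft[OF w Hh_P])
  show "Tw m w (rgt x a) = Tw m w x * eps a"
    using x by (simp add: Tw_def rgt_P Hh_rgt bimk_rgt[OF w Hh_P])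
qed

lemma surj_part:
  assumes w: "bimk n w" and cyc: "\<forall>y\<in>P (Suc n). w (d n y) = 0" and y: "y \<in> P n"
  shows "w y - Fst n (Gst n w) y = (case n of 0 \<Rightarrow> 0 | Suc m \<Rightarrow> w (Hh m (d m y)))"
proof -
  have wa: "\<forall>u\<in>P n. \<forall>v\<in>P n. w (u + v) = w u + w v" by (rule bimk_addb[OF w])
  have "w y - Fst n (Gst n w) y = w y - w (GFm n y)" by (simp add: Fst_Gst[OF w y] GFm_def)
  also have "\<dots> = w (y - GFm n y)"
    using addS_diff[of "P n" w y "GFm n y"] wa P_0 P_minus y GF_P[OF y] by simp
  also have "y - GFm n y = d n (Hh n y) + (case n of 0 \<Rightarrow> 0 | Suc m \<Rightarrow> Hh m (d m y))"
    using HI[OF y] by (simp add: Rr_def)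
  also have "w \<dots> = w (d n (Hh n y)) + w (case n of 0 \<Rightarrow> 0 | Suc m \<Rightarrow> Hh m (d m y))"
  proof (cases n)
    case 0 then show ?thesis using bimk_0[OF w] by simp
  next
    case (Suc m)
    have "Hh m (d m y) \<in> P n" using Suc y by (simp add: Hh_P d_P)
    then show ?thesis using wa d_P[OF Hh_P[OF y]] Suc by simp
  qed
  also have "\<dots> = (case n of 0 \<Rightarrow> 0 | Suc m \<Rightarrow> w (Hh m (d m y)))"
    using cyc Hh_P[OF y] bimk_0[OF w] by (cases n) auto
  finally show ?thesis .
qed

end


context R begin

declare Fd.simps[simp del]

definition uu :: "'a list \<Rightarrow> 'a list" where "uu xs = one # butlast (tl xs) @ [one]"

primrec K :: "nat \<Rightarrow> ('a list \<Rightarrow> 'k) \<Rightarrow> 'a list \<Rightarrow> 'k" where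
  "K 0 f xs = f (hd xs # rmul (last xs) (uu xs)) - Fd 0 (\<lambda>zs. f (hd xs # rmul (last xs) zs)) (Gf 0 (uu xs))"
| "K (Suc n) f xs = f (hd xs # rmul (last xs) (uu xs)) - Fd (Suc n) (\<lambda>zs. f (hd xs # rmul (last xs) zs)) (Gf (Suc n) (uu xs))
      - bdst (K n (\<lambda>zs. f (hd xs # rmul (last xs) zs))) (uu xs)"

definition Kb :: "nat \<Rightarrow> ('a list \<Rightarrow> 'k) \<Rightarrow> 'a list \<Rightarrow> 'k" where
  "Kb n f u = f u - Fd n f (Gf n u) - (case n of 0 \<Rightarrow> 0 | Suc m \<Rightarrow> bdst (K m f) u)"

lemma K_Kb: "K n f xs = Kb n (\<lambda>zs. f (hd xs # rmul (last xs) zs)) (uu xs)"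
  by (cases n) (simp_all add: Kb_def)

declare K.simps[simp del]

lemma K_nat:
  assumes l: "\<forall>x y. l (x + y) = l x + l y"
  shows "K n (\<lambda>ys. l (f ys)) xs = l (K n f xs)"
proof -
  have l0: "l 0 = 0" and ld: "\<And>x y. l (x - y) = l x - l y" using addS[of UNIV l] l by auto
  show ?thesis
  proof (induction n arbitrary: f xs)
    case 0 then show ?case by (simp add: K_Kb Kb_def Fd_nat[OF l] ld)
  next
    case (Suc n)
    have e: "K n (\<lambda>zs. l (f (hd xs # rmul (last xs) zs))) = (\<lambda>ys. l (K n (\<lambda>zs. f (hd xs # rmul (last xs) zs)) ys))"
      by (rule ext) (rule Suc.IH)
    have "bdst (K n (\<lambda>zs. l (f (hd xs # rmul (last xs) zs)))) (uu xs) = l (bdst (K n (\<lambda>zs. f (hd xs # rmul (last xs) zs))) (uu xs))"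
      unfolding e by (simp add: bdst_nat[OF l])
    then show ?case by (simp add: K_Kb Kb_def Fd_nat[OF l] ld)
  qed
qed

lemma K_add: "K n (\<lambda>ys. f ys + h ys) xs = K n f xs + K n h xs"
proof (induction n arbitrary: f h xs)
  case 0 then show ?case by (simp add: K_Kb Kb_def Fd_add)
next
  case (Suc n)
  have "bdst (K n (\<lambda>zs. f (hd xs # rmul (last xs) zs) + h (hd xs # rmul (last xs) zs))) (uu xs)
      = bdst (K n (\<lambda>zs. f (hd xs # rmul (last xs) zs))) (uu xs) + bdst (K n (\<lambda>zs. h (hd xs # rmul (last xs) zs))) (uu xs)"
  proof -
    have e: "K n (\<lambda>zs. f (hd xs # rmul (last xs) zs) + h (hd xs # rmul (last xs) zs))
        = (\<lambda>ys. K n (\<lambda>zs. f (hd xs # rmul (last xs) zs)) ys + K n (\<lambda>zs. h (hd xs # rmul (last xs) zs)) ys)"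
      by (rule ext) (rule Suc.IH)
    show ?thesis unfolding e by (rule bdst_add)
  qed
  then show ?case by (simp add: K_Kb Kb_def Fd_add)
qed

lemma K_diff: "K n (\<lambda>ys. f ys - h ys) xs = K n f xs - K n h xs"
  using K_add[of n f "\<lambda>ys. - h ys" xs] K_nat[of uminus n h xs] by simp

lemma K_zero: "K n (\<lambda>ys. 0) xs = 0"
  using K_nat[of "\<lambda>v. 0" n "\<lambda>ys. 0" xs] by simp

lemma uu_len: "length xs = Suc (Suc n) \<Longrightarrow> length (uu xs) = Suc (Suc n)"
  by (simp add: uu_def)

lemma Gf_uu_P: "Gf n u \<in> P n" by (rule Gf_P)

lemma K_cong: "eqon (Suc (Suc (Suc n))) f f' \<Longrightarrow> length xs = Suc (Suc n) \<Longrightarrow> K n f xs = K n f' xs"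
proof (induction n arbitrary: f f' xs)
  case 0
  have e: "eqon (Suc (Suc 0)) (\<lambda>zs. f (hd xs # rmul (last xs) zs)) (\<lambda>zs. f' (hd xs # rmul (last xs) zs))"
    using "0.prems"(1) by (auto simp: eqon_def)
  show ?case using e "0.prems"(2) Fd_cong[OF e Gf_P] by (simp add: K_Kb Kb_def eqon_def uu_len)
next
  case (Suc n)
  have e: "eqon (Suc (Suc (Suc n))) (\<lambda>zs. f (hd xs # rmul (last xs) zs)) (\<lambda>zs. f' (hd xs # rmul (last xs) zs))"
    using Suc.prems(1) by (auto simp: eqon_def)
  have b: "bdst (K n (\<lambda>zs. f (hd xs # rmul (last xs) zs))) (uu xs) = bdst (K n (\<lambda>zs. f' (hd xs # rmul (last xs) zs))) (uu xs)"
    by (rule bdst_cong[of "Suc (Suc n)"]) (use Suc.IH[OF e] Suc.prems(2) in \<open>auto simp: eqon_def uu_len\<close>)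
  show ?case using e Suc.prems(2) Fd_cong[OF e Gf_P] b by (simp add: K_Kb Kb_def eqon_def uu_len)
qed

lemma Kb_cong: "eqon (Suc (Suc n)) f f' \<Longrightarrow> length u = Suc (Suc n) \<Longrightarrow> Kb n f u = Kb n f' u"
proof -
  assume e: "eqon (Suc (Suc n)) f f'" and l: "length u = Suc (Suc n)"
  have b: "(case n of 0 \<Rightarrow> 0 | Suc m \<Rightarrow> bdst (K m f) u) = (case n of 0 \<Rightarrow> 0 | Suc m \<Rightarrow> bdst (K m f') u)"
  proof (cases n)
    case (Suc m)
    have "bdst (K m f) u = bdst (K m f') u"
      by (rule bdst_cong[of "Suc (Suc m)"]) (use K_cong e l Suc in \<open>auto simp: eqon_def\<close>)
    then show ?thesis using Suc by simp
  qed simp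
  show ?thesis using e l Fd_cong[OF e Gf_P] b by (simp add: Kb_def eqon_def)
qed

lemma K_bim:
  assumes l: "length xs = Suc (Suc n)"
  shows "K n f (lmul a (rmul c xs)) = K n (\<lambda>ys. f (lmul a (rmul c ys))) xs"
proof -
  obtain x0 mid xl where xs: "xs = x0 # mid @ [xl]" using l len2_split[of xs] by fastforce
  have e1: "lmul a (rmul c xs) = mul a x0 # mid @ [mul xl c]" by (simp add: xs rmul_def butlast_append)
  have eq: "eqon (Suc (Suc n)) (\<lambda>zs. f (mul a x0 # rmul (mul xl c) zs)) (\<lambda>zs. f (lmul a (rmul c (x0 # rmul xl zs))))"
    by (auto simp: eqon_def rmul_Cons_len rmul_rmul)
  have lm: "length (one # mid @ [one]) = Suc (Suc n)" using l xs by simp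
  have "K n f (lmul a (rmul c xs)) = Kb n (\<lambda>zs. f (mul a x0 # rmul (mul xl c) zs)) (one # mid @ [one])"
    by (simp add: K_Kb e1 uu_def)
  also have "\<dots> = Kb n (\<lambda>zs. f (lmul a (rmul c (x0 # rmul xl zs)))) (one # mid @ [one])"
    by (rule Kb_cong[OF eq lm])
  also have "\<dots> = K n (\<lambda>ys. f (lmul a (rmul c ys))) xs" by (simp add: K_Kb xs uu_def)
  finally show ?thesis .
qed


lemma Theta_chain:
  assumes X: "mlf (*) (Suc n) \<Xi>" and l: "length u = Suc (Suc n)"
  shows "Fd n (bdst \<Xi>) (Gf n u) = (case n of 0 \<Rightarrow> bdst \<Xi> u | Suc m \<Rightarrow> bdst (\<lambda>z. Fd m \<Xi> (Gf m z)) u)"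
proof (cases n)
  case 0
  obtain u0 mid u1 where "u = u0 # mid @ [u1]" using l len2_split[of u] by fastforce
  then have u: "u = [u0, u1]" using l 0 by simp
  have "Fd 0 (bdst \<Xi>) (Gf 0 u) = \<Xi> [aug (Gf 0 u)]" using Fd_chain0[OF VK _ Gf_P] X 0 by simp
  then show ?thesis using 0 by (simp add: u Gf_aug)
next
  case (Suc m)
  have X': "mlf (*) (Suc (Suc m)) \<Xi>" using X Suc by simp
  have "Fd (Suc m) (bdst \<Xi>) (Gf (Suc m) u) = Fd m \<Xi> (d m (Gf (Suc m) u))"
    by (rule Fd_chain[OF VK X' Gf_P])
  also have "\<dots> = Fd m \<Xi> (bdst (Gf m) u)" using l Suc by (simp add: Gf_chain)
  also have "\<dots> = bdst (\<lambda>z. Fd m \<Xi> (Gf m z)) u"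
  proof -
    have "\<forall>x\<in>P m. \<forall>y\<in>P m. Fd m \<Xi> (x + y) = Fd m \<Xi> x + Fd m \<Xi> y"
      using Fd_lin[OF VK X'] by (simp add: lin_on_def)
    then show ?thesis using bdst_natS[of "P m" "Fd m \<Xi>" "Gf m" u] P_closed Gf_P by simp
  qed
  finally show ?thesis using Suc by simp
qed

lemma bdst_lr: "bdst f (lmul a (rmul c ys)) = bdst (\<lambda>z. f (lmul a (rmul c z))) ys"
  by (simp add: bdst_lmul[symmetric] bdst_rmul[symmetric])

lemma KI_one:
  assumes f: "mlf (*) (Suc (Suc n)) f" and lm: "length mid = n"
    and IH: "\<And>m f xs. n = Suc m \<Longrightarrow> mlf (*) (Suc (Suc m)) f \<Longrightarrow> length xs = Suc (Suc m) \<Longrightarrow>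
         f xs - Fd m f (Gf m xs) = K m (bdst f) xs + (case m of 0 \<Rightarrow> 0 | Suc m' \<Rightarrow> bdst (K m' f) xs)"
  shows "f (one # mid @ [one]) - Fd n f (Gf n (one # mid @ [one])) =
     K n (bdst f) (one # mid @ [one]) + (case n of 0 \<Rightarrow> 0 | Suc m \<Rightarrow> bdst (K m f) (one # mid @ [one]))"
proof -
  define u where "u = one # mid @ [one]"
  have lu: "length u = Suc (Suc n)" using lm by (simp add: u_def)
  define sf where "sf = (\<lambda>zs. f (one # zs))"
  have msf: "mlf (*) (Suc n) sf" unfolding sf_def using mlf_Cons[OF f, of one] by simp
  have uu_u: "uu u = u" by (simp add: u_def uu_def)
  have e1: "eqon (Suc (Suc n)) (\<lambda>zs. bdst f (one # rmul (last u) zs)) (\<lambda>zs. f zs - bdst sf zs)"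
  proof (unfold eqon_def, intro allI impI)
    fix zs :: "'a list" assume "length zs = Suc (Suc n)"
    then have "zs \<noteq> []" by auto
    then show "bdst f (one # rmul (last u) zs) = f zs - bdst sf zs"
      by (simp add: u_def rmul_one bdst_one sf_def)
  qed
  have Kb1: "K n (bdst f) u = Kb n (\<lambda>zs. f zs - bdst sf zs) u"
    unfolding K_Kb uu_u using Kb_cong[OF e1 lu] by (simp add: u_def)
  have Kf: "K m (\<lambda>zs. f zs - bdst sf zs) = (\<lambda>ys. K m f ys - K m (bdst sf) ys)" for m
    by (rule ext) (rule K_diff)
  show ?thesis
  proof (cases n)
    case 0
    have "Fd 0 (bdst sf) (Gf 0 u) = bdst sf u" using Theta_chain[OF msf lu] 0 by simp
    then show ?thesis using Kb1 0 by (simp add: Kb_def Fd_diff u_def[symmetric])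
  next
    case (Suc m)
    have T: "Fd n (bdst sf) (Gf n u) = bdst (\<lambda>z. Fd m sf (Gf m z)) u" using Theta_chain[OF msf lu] Suc by simp
    have msf': "mlf (*) (Suc (Suc m)) sf" using msf Suc by simp
    have e2: "eqon (Suc (Suc m)) (\<lambda>z. sf z - Fd m sf (Gf m z))
        (\<lambda>z. K m (bdst sf) z + (case m of 0 \<Rightarrow> 0 | Suc m' \<Rightarrow> bdst (K m' sf) z))"
      unfolding eqon_def using IH[OF Suc msf'] by blast
    have "bdst (\<lambda>z. sf z - Fd m sf (Gf m z)) u = bdst (\<lambda>z. K m (bdst sf) z + (case m of 0 \<Rightarrow> 0 | Suc m' \<Rightarrow> bdst (K m' sf) z)) u"
      by (rule bdst_cong[OF e2]) (simp add: lu Suc)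
    also have "\<dots> = bdst (K m (bdst sf)) u"
    proof (cases m)
      case 0 then show ?thesis by (simp add: bdst_zero)
    next
      case (Suc m') then show ?thesis by (simp add: bdst_add bdst_bdst)
    qed
    finally have B: "bdst sf u - bdst (\<lambda>z. Fd m sf (Gf m z)) u = bdst (K m (bdst sf)) u"
      by (simp add: bdst_diff)
    have "K n (bdst f) u = (f u - bdst sf u) - (Fd n f (Gf n u) - Fd n (bdst sf) (Gf n u))
        - (bdst (K m f) u - bdst (K m (bdst sf)) u)"
      using Kb1 Suc by (simp add: Kb_def Fd_diff Kf bdst_diff)
    then show ?thesis using T B Suc by (simp add: u_def[symmetric] algebra_simps)
  qed
qed

lemma KI:
  "mlf (*) (Suc (Suc n)) f \<Longrightarrow> length xs = Suc (Suc n) \<Longrightarrow>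
    f xs - Fd n f (Gf n xs) = K n (bdst f) xs + (case n of 0 \<Rightarrow> 0 | Suc m \<Rightarrow> bdst (K m f) xs)"
proof (induction n arbitrary: f xs rule: less_induct)
  case (less n)
  obtain a0 mid c where xs: "xs = a0 # mid @ [c]" using less.prems(2) len2_split[of xs] by fastforce
  have lm: "length mid = n" using less.prems(2) xs by simp
  define f' where "f' = (\<lambda>ys. f (lmul a0 (rmul c ys)))"
  have mf': "mlf (*) (Suc (Suc n)) f'" unfolding f'_def using mlf_rmul[OF mlf_lmul[OF less.prems(1)], of a0 c] by simp
  define u where "u = one # mid @ [one]"
  have lu: "length u = Suc (Suc n)" using lm by (simp add: u_def)
  have xsu: "xs = lmul a0 (rmul c u)" by (simp add: xs u_def rmul_def butlast_append mul_oneL mul_oneR)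
  have I: "f' u - Fd n f' (Gf n u) = K n (bdst f') u + (case n of 0 \<Rightarrow> 0 | Suc m \<Rightarrow> bdst (K m f') u)"
    unfolding u_def by (rule KI_one[OF mf' lm]) (rule less.IH, auto)
  have gP: "g n mid \<in> P n" by (rule g_P)
  have a1: "f xs = f' u" by (simp add: xsu f'_def)
  have a2: "Fd n f (Gf n xs) = Fd n f' (Gf n u)"
  proof -
    have "Fd n f (Gf n xs) = Fd n f (lft a0 (rgt (g n mid) c))" by (simp add: xs Gf_split)
    also have "\<dots> = Fd n f' (g n mid)" unfolding f'_def by (rule Fd_bim[OF VK less.prems(1) gP])
    also have "\<dots> = Fd n f' (Gf n u)" by (simp add: u_def Gf_split lft_one[OF gP] rgt_one[OF gP])
    finally show ?thesis .
  qed
  have a3: "K n (bdst f) xs = K n (bdst f') u"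
  proof -
    have "K n (bdst f) xs = K n (\<lambda>ys. bdst f (lmul a0 (rmul c ys))) u" unfolding xsu by (rule K_bim[OF lu])
    also have "(\<lambda>ys. bdst f (lmul a0 (rmul c ys))) = bdst f'" by (rule ext) (simp add: f'_def bdst_lr)
    finally show ?thesis .
  qed
  have a4: "(case n of 0 \<Rightarrow> 0 | Suc m \<Rightarrow> bdst (K m f) xs) = (case n of 0 \<Rightarrow> 0 | Suc m \<Rightarrow> bdst (K m f') u)"
  proof (cases n)
    case (Suc m)
    have "bdst (K m f) xs = bdst (\<lambda>z. K m f (lmul a0 (rmul c z))) u" unfolding xsu by (rule bdst_lr)
    also have "\<dots> = bdst (K m f') u"
      by (rule bdst_cong[of "Suc (Suc m)"]) (auto simp: eqon_def f'_def K_bim lu Suc)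
    finally show ?thesis using Suc by simp
  qed simp
  show ?case using I a1 a2 a3 a4 by simp
qed


lemma Kb_add: "Kb n (\<lambda>z. f1 z + f2 z) u = Kb n f1 u + Kb n f2 u"
proof -
  have "K m (\<lambda>z. f1 z + f2 z) = (\<lambda>z. K m f1 z + K m f2 z)" for m by (rule ext) (rule K_add)
  then show ?thesis by (cases n) (simp_all add: Kb_def Fd_add bdst_add)
qed

lemma Kb_nat:
  assumes l: "\<forall>x y. l (x + y) = l x + l y"
  shows "Kb n (\<lambda>z. l (f z)) u = l (Kb n f u)"
proof -
  have l0: "l 0 = 0" and ld: "\<And>x y. l (x - y) = l x - l y" using addS[of UNIV l] l by auto
  have "K m (\<lambda>z. l (f z)) = (\<lambda>z. l (K m f z))" for m by (rule ext) (rule K_nat[OF l])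
  then show ?thesis by (cases n) (simp_all add: Kb_def Fd_nat[OF l] bdst_nat[OF l] ld l0)
qed

lemma Kb_lin_fun:
  assumes "\<And>x y. eqon (Suc (Suc n)) (F (x + y)) (\<lambda>z. F x z + F y z)"
    and "\<And>k x. eqon (Suc (Suc n)) (F (sc k x)) (\<lambda>z. k * F x z)"
    and l: "length u = Suc (Suc n)"
  shows "lin_on sc (*) UNIV (\<lambda>x. Kb n (F x) u)"
  unfolding lin_on_def
proof (intro conjI ballI allI)
  fix x y show "Kb n (F (x + y)) u = Kb n (F x) u + Kb n (F y) u"
    using Kb_cong[OF assms(1) l] Kb_add by simp
next
  fix k x show "Kb n (F (sc k x)) u = k * Kb n (F x) u"
    using Kb_cong[OF assms(2) l] Kb_nat[of "\<lambda>v. k * v"] by (simp add: algebra_simps)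
qed

lemma Kb_frame_ml:
  assumes Phi: "mlf (*) (Suc (Suc n)) \<Phi>"
    and IH: "\<And>m. n = Suc m \<Longrightarrow> mlf (*) (Suc (Suc m)) (K m \<Phi>)"
  shows "mlf (*) n (\<lambda>mid. Kb n \<Phi> (one # mid @ [one]))"
  unfolding mlf_def
proof (intro allI impI)
  fix us vs :: "'a list" assume l: "length us + length vs + 1 = n"
  have A: "lin_on sc (*) UNIV (\<lambda>x. \<Phi> (one # (us @ x # vs) @ [one]))"
    using mlf_slot[OF mlf_frame[OF Phi] l] by simp
  have B: "lin_on sc (*) UNIV (\<lambda>x. Fd n \<Phi> (Gf n (one # (us @ x # vs) @ [one])))"
    using comp_lin_P[OF mlf_slot[OF mlf_frame[OF mlf_Gf'] l] Gf_P Fd_lin[OF VK Phi]] by simp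
  have C: "lin_on sc (*) UNIV (\<lambda>x. (case n of 0 \<Rightarrow> 0 | Suc m \<Rightarrow> bdst (K m \<Phi>) (one # us @ x # vs @ [one])))"
  proof (cases n)
    case 0 then show ?thesis by (simp add: lin_on_def)
  next
    case (Suc m)
    have "mlf (*) (Suc (Suc (Suc m))) (bdst (K m \<Phi>))" by (rule bdst_ml[OF VK IH[OF Suc]])
    from mlf_slot[OF mlf_frame[OF this] l[unfolded Suc]] show ?thesis using Suc by simp
  qed
  show "lin_on sc (*) UNIV (\<lambda>x. Kb n \<Phi> (one # (us @ x # vs) @ [one]))"
    using lin_diff[OF VK lin_diff[OF VK A B] C] by (simp add: Kb_def)
qed

lemma K_ml_step:
  assumes f: "mlf (*) (Suc (Suc (Suc n))) f"
    and IH: "\<And>m \<Phi>. n = Suc m \<Longrightarrow> mlf (*) (Suc (Suc (Suc m))) \<Phi> \<Longrightarrow> mlf (*) (Suc (Suc m)) (K m \<Phi>)"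
  shows "mlf (*) (Suc (Suc n)) (K n f)"
  unfolding mlf_def
proof (intro allI impI)
  fix us vs :: "'a list" assume l: "length us + length vs + 1 = Suc (Suc n)"
  show "lin_on sc (*) UNIV (\<lambda>x. K n f (us @ x # vs))"
  proof (cases us)
    case Nil
    then have "vs \<noteq> []" using l by auto
    then obtain mid c where vs: "vs = mid @ [c]" using rev_exhaust by blast
    have lm: "length mid = n" using l Nil vs by simp
    have e: "K n f (us @ x # vs) = Kb n (\<lambda>zs. f (x # rmul c zs)) (one # mid @ [one])" for x
      by (simp add: K_Kb Nil vs uu_def)
    show ?thesis unfolding e
    proof (rule Kb_lin_fun)
      fix x y show "eqon (Suc (Suc n)) (\<lambda>zs. f ((x + y) # rmul c zs)) (\<lambda>z. f (x # rmul c z) + f (y # rmul c z))"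
        using mlf_slot[OF f, of "[]"] by (auto simp: eqon_def lin_on_def)
    next
      fix k x show "eqon (Suc (Suc n)) (\<lambda>zs. f (sc k x # rmul c zs)) (\<lambda>z. k * f (x # rmul c z))"
        using mlf_slot[OF f, of "[]"] by (auto simp: eqon_def lin_on_def)
    qed (simp add: lm)
  next
    case (Cons x0 us')
    show ?thesis
    proof (cases "vs = []")
      case True
      have lm: "length us' = n" using l Cons True by simp
      have e: "K n f (us @ x # vs) = Kb n (\<lambda>zs. f (x0 # rmul x zs)) (one # us' @ [one])" for x
        by (simp add: K_Kb Cons True uu_def)
      have sl: "lin_on sc (*) UNIV (\<lambda>x. f (x0 # zs' @ [x]))" if "length zs' = Suc n" for zs'
        using mlf_slot[OF f, of "x0 # zs'" "[]"] that by simp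
      show ?thesis unfolding e
      proof (rule Kb_lin_fun)
        fix x y show "eqon (Suc (Suc n)) (\<lambda>zs. f (x0 # rmul (x + y) zs)) (\<lambda>z. f (x0 # rmul x z) + f (x0 # rmul y z))"
        proof (unfold eqon_def, intro allI impI)
          fix z :: "'a list" assume lz: "length z = Suc (Suc n)"
          then have "z \<noteq> []" by auto
          then obtain z' zl where z: "z = z' @ [zl]" using rev_exhaust by blast
          have "length z' = Suc n" using lz z by simp
          then show "f (x0 # rmul (x + y) z) = f (x0 # rmul x z) + f (x0 # rmul y z)"
            using sl[of z'] by (simp add: z rmul_append_single mul_addR lin_on_def)
        qed
      next
        fix k x show "eqon (Suc (Suc n)) (\<lambda>zs. f (x0 # rmul (sc k x) zs)) (\<lambda>z. k * f (x0 # rmul x z))"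
        proof (unfold eqon_def, intro allI impI)
          fix z :: "'a list" assume lz: "length z = Suc (Suc n)"
          then have "z \<noteq> []" by auto
          then obtain z' zl where z: "z = z' @ [zl]" using rev_exhaust by blast
          have "length z' = Suc n" using lz z by simp
          then show "f (x0 # rmul (sc k x) z) = k * f (x0 # rmul x z)"
            using sl[of z'] by (simp add: z rmul_append_single mul_scR lin_on_def)
        qed
      qed (simp add: lm)
    next
      case False
      then obtain vs' c where vs: "vs = vs' @ [c]" using rev_exhaust by blast
      define \<Phi> where "\<Phi> = (\<lambda>zs. f (x0 # rmul c zs))"
      have mP: "mlf (*) (Suc (Suc n)) \<Phi>" unfolding \<Phi>_def using mlf_rmul[OF mlf_Cons[OF f, of x0], of c] by simp
      have fr: "mlf (*) n (\<lambda>mid. Kb n \<Phi> (one # mid @ [one]))"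
      proof (rule Kb_frame_ml[OF mP])
        fix m assume nm: "n = Suc m"
        then have "mlf (*) (Suc (Suc (Suc m))) \<Phi>" using mP by simp
        then show "mlf (*) (Suc (Suc m)) (K m \<Phi>)" by (rule IH[OF nm])
      qed
      have ll: "length us' + length vs' + 1 = n" using l Cons vs by simp
      have e: "K n f (us @ x # vs) = Kb n \<Phi> (one # (us' @ x # vs') @ [one])" for x
      proof -
        have "butlast (us' @ x # vs' @ [c]) = us' @ x # vs'" by (simp add: butlast_append)
        then show ?thesis by (simp add: K_Kb Cons vs uu_def \<Phi>_def)
      qed
      show ?thesis unfolding e using mlf_slot[OF fr ll] by simp
    qed
  qed
qed

lemma K_ml: "mlf (*) (Suc (Suc (Suc n))) f \<Longrightarrow> mlf (*) (Suc (Suc n)) (K n f)"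
proof (induction n arbitrary: f)
  case (0 f) show ?case by (rule K_ml_step[OF "0.prems"]) simp
next
  case (Suc n f)
  show ?case
  proof (rule K_ml_step[OF Suc.prems])
    fix m \<Phi> assume "Suc n = Suc m" "mlf (*) (Suc (Suc (Suc m))) \<Phi>"
    then show "mlf (*) (Suc (Suc m)) (K m \<Phi>)" using Suc.IH by simp
  qed
qed

end


context R begin

definition chi :: "nat \<Rightarrow> ('a list \<Rightarrow> 'k) \<Rightarrow> 'a list \<Rightarrow> 'k" where
  "chi m \<psi> = (\<lambda>xs. if length xs = m then K m (tilde \<psi>) (one # xs @ [one]) else 0)"

lemma chi_coch: assumes psi: "\<psi> \<in> hoch_cochains sc (Suc m)" shows "chi m \<psi> \<in> hoch_cochains sc m"
  unfolding hoch_cochains_def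
proof (intro CollectI conjI allI impI)
  show "length xs \<noteq> m \<Longrightarrow> chi m \<psi> xs = 0" for xs by (simp add: chi_def)
  fix us vs :: "'a list" assume l: "length us + length vs + 1 = m"
  have "mlf (*) m (\<lambda>xs. K m (tilde \<psi>) (one # xs @ [one]))"
    by (rule mlf_frame[OF K_ml]) (use tilde_ml[OF psi] in simp)
  from mlf_slot[OF this l] show "lin_on sc (*) UNIV (\<lambda>x. chi m \<psi> (us @ x # vs))"
    using l by (simp add: chi_def)
qed

lemma K_tilde:
  assumes l: "length ys = Suc (Suc m)"
  shows "K m (tilde \<psi>) ys = tilde (chi m \<psi>) ys"
proof -
  obtain a0 mid c where ys: "ys = a0 # mid @ [c]" using l len2_split[of ys] by fastforce
  have lm: "length mid = m" using l ys by simp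
  define u where "u = one # mid @ [one]"
  have lu: "length u = Suc (Suc m)" using lm by (simp add: u_def)
  have ysu: "ys = lmul a0 (rmul c u)" by (simp add: ys u_def rmul_def butlast_append mul_oneL mul_oneR)
  have "K m (tilde \<psi>) ys = K m (\<lambda>zs. tilde \<psi> (lmul a0 (rmul c zs))) u" unfolding ysu by (rule K_bim[OF lu])
  also have "\<dots> = K m (\<lambda>zs. (eps a0 * eps c) * tilde \<psi> zs) u"
    by (rule K_cong[OF _ lu]) (simp add: eqon_def tilde_bim)
  also have "\<dots> = (eps a0 * eps c) * K m (tilde \<psi>) u" by (rule K_nat) (simp add: algebra_simps)
  also have "\<dots> = tilde (chi m \<psi>) ys" by (simp add: ys tilde_split chi_def lm u_def)
  finally show ?thesis .
qed

lemma C_htpy: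
  assumes psi: "\<psi> \<in> hoch_cochains sc n" and cyc: "hoch_diff mul eps n \<psi> = (\<lambda>_. 0)"
    and l: "length xs = n"
  shows "\<psi> xs - Gst n (Fst n \<psi>) xs = (case n of 0 \<Rightarrow> 0 | Suc m \<Rightarrow> hoch_diff mul eps m (chi m \<psi>) xs)"
proof -
  define u where "u = one # xs @ [one]"
  have lu: "length u = Suc (Suc n)" using l by (simp add: u_def)
  have KI': "tilde \<psi> u - Fd n (tilde \<psi>) (Gf n u) = K n (bdst (tilde \<psi>)) u + (case n of 0 \<Rightarrow> 0 | Suc m \<Rightarrow> bdst (K m (tilde \<psi>)) u)"
    by (rule KI[OF tilde_ml[OF psi] lu])
  have gP: "g n xs \<in> P n" by (rule g_P)
  have a1: "tilde \<psi> u = \<psi> xs" by (simp add: u_def tilde_split eps_one)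
  have a2: "Fd n (tilde \<psi>) (Gf n u) = Gst n (Fst n \<psi>) xs"
    using l gP by (simp add: u_def Gf_split lft_one[OF gP] rgt_one[OF gP] Gst_def Fst_def)
  have a3: "K n (bdst (tilde \<psi>)) u = 0"
  proof -
    have "K n (bdst (tilde \<psi>)) u = K n (\<lambda>_. 0) u"
      by (rule K_cong[OF _ lu]) (simp add: eqon_def tilde_chain cyc tilde_def)
    then show ?thesis by (simp add: K_zero)
  qed
  have a4: "(case n of 0 \<Rightarrow> 0 | Suc m \<Rightarrow> bdst (K m (tilde \<psi>)) u) = (case n of 0 \<Rightarrow> 0 | Suc m \<Rightarrow> hoch_diff mul eps m (chi m \<psi>) xs)"
  proof (cases n)
    case (Suc m)
    have "bdst (K m (tilde \<psi>)) u = bdst (tilde (chi m \<psi>)) u"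
      by (rule bdst_cong[of "Suc (Suc m)"]) (auto simp: eqon_def K_tilde lu Suc)
    also have "\<dots> = hoch_diff mul eps m (chi m \<psi>) xs" using HD[of xs m] l Suc by (simp add: u_def eps_one)
    finally show ?thesis using Suc by simp
  qed simp
  show ?thesis using KI' a1 a2 a3 a4 by simp
qed

lemma hoch_diff_add: "hoch_diff mul eps n (\<lambda>xs. f1 xs + f2 xs) = (\<lambda>xs. hoch_diff mul eps n f1 xs + hoch_diff mul eps n f2 xs)"
proof (rule ext)
  fix xs :: "'a list"
  define L where "L i = take i xs @ mul (xs ! i) (xs ! Suc i) # drop (i + 2) xs" for i
  have S: "(\<Sum>i<n. (-1) ^ (i + 1) * (f1 (L i) + f2 (L i))) = (\<Sum>i<n. (-1) ^ (i + 1) * f1 (L i)) + (\<Sum>i<n. (-1) ^ (i + 1) * f2 (L i))"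
    by (simp only: distrib_left sum.distrib)
  show "hoch_diff mul eps n (\<lambda>xs. f1 xs + f2 xs) xs = hoch_diff mul eps n f1 xs + hoch_diff mul eps n f2 xs"
    unfolding hoch_diff_def L_def[symmetric] using S by (simp add: algebra_simps)
qed

lemma hoch_cochains_add: "f1 \<in> hoch_cochains sc n \<Longrightarrow> f2 \<in> hoch_cochains sc n \<Longrightarrow> (\<lambda>xs. f1 xs + f2 xs) \<in> hoch_cochains sc n"
  unfolding hoch_cochains_def by (auto intro: lin_add[OF VK])

lemma Fst_zero: "Fst n (\<lambda>_. 0) = (\<lambda>_. 0)"
proof -
  have "tilde (\<lambda>_. 0) = (\<lambda>_. 0)" by (rule ext) (simp add: tilde_def)
  moreover have "Fd n (\<lambda>_. (0::'k)) x = 0" for x using Fd_nat[of "\<lambda>v. (0::'k)" n "\<lambda>_. 0" x] by simp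
  ultimately show ?thesis by (intro ext) (simp add: Fst_def)
qed

lemma Gst_zero: "Gst n (\<lambda>_. 0) = (\<lambda>_. 0)" by (rule ext) (simp add: Gst_def)

lemma main: "quot_iso (hoch_cocycles sc mul eps n) (hoch_coboundaries sc mul eps n)
                      (hom_cocycles scp P HP lft rgt eps d n) (hom_coboundaries scp P HP lft rgt eps d n)"
  unfolding quot_iso_def
proof (intro exI[of _ "Fst n"] conjI ballI allI)
  fix z assume z: "z \<in> hoch_cocycles sc mul eps n"
  then have zc: "z \<in> hoch_cochains sc n" and zd: "hoch_diff mul eps n z = (\<lambda>_. 0)"
    by (auto simp: hoch_cocycles_def)
  show "Fst n z \<in> hom_cocycles scp P HP lft rgt eps d n"
    using Fst_homAA[OF zc] Fst_chain[OF zc] zd Fst_zero by (simp add: hom_cocycles_def)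
  show "(Fst n z \<in> hom_coboundaries scp P HP lft rgt eps d n) = (z \<in> hoch_coboundaries sc mul eps n)"
  proof
    assume "z \<in> hoch_coboundaries sc mul eps n"
    then show "Fst n z \<in> hom_coboundaries scp P HP lft rgt eps d n"
    proof (cases n)
      case 0 then show ?thesis using \<open>z \<in> hoch_coboundaries sc mul eps n\<close> Fst_zero
        by (simp add: hoch_coboundaries_def hom_coboundaries_def)
    next
      case (Suc m)
      then obtain \<chi> where \<chi>: "\<chi> \<in> hoch_cochains sc m" "z = hoch_diff mul eps m \<chi>"
        using \<open>z \<in> hoch_coboundaries sc mul eps n\<close> by (auto simp: hoch_coboundaries_def)
      have "Fst n z = hom_diff P d m (Fst m \<chi>)" using Fst_chain[OF \<chi>(1)] \<chi>(2) Suc by simp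
      then show ?thesis using Fst_homAA[OF \<chi>(1)] Suc by (simp add: hom_coboundaries_def)
    qed
  next
    assume B2: "Fst n z \<in> hom_coboundaries scp P HP lft rgt eps d n"
    show "z \<in> hoch_coboundaries sc mul eps n"
    proof (cases n)
      case 0
      have "Fst n z = (\<lambda>_. 0)" using B2 0 by (simp add: hom_coboundaries_def)
      then have "z = (\<lambda>_. 0)"
      proof -
        assume F0: "Fst n z = (\<lambda>_. 0)"
        show "z = (\<lambda>_. 0)"
        proof (rule ext)
          fix xs show "z xs = 0"
          proof (cases "length xs = n")
            case True
            then show ?thesis using C_htpy[OF zc zd True] F0 Gst_zero 0 by simp
          next
            case False then show ?thesis using hoch_len[OF zc False] by simp
          qed
        qed
      qed
      then show ?thesis using 0 by (simp add: hoch_coboundaries_def)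
    next
      case (Suc m)
      obtain w where w: "w \<in> homAA scp (P m) (HP m) lft rgt eps" "Fst n z = hom_diff P d m w"
        using B2 Suc by (auto simp: hom_coboundaries_def)
      have wb: "bimk m w" using w(1) homAA_iff by blast
      have GF: "Gst n (Fst n z) = hoch_diff mul eps m (Gst m w)" using Gst_chain[OF wb] w(2) Suc by simp
      define \<chi> where "\<chi> = (\<lambda>xs. Gst m w xs + chi m z xs)"
      have \<chi>c: "\<chi> \<in> hoch_cochains sc m"
        unfolding \<chi>_def using Gst_coch[OF wb] chi_coch zc Suc by (intro hoch_cochains_add) auto
      have "z = hoch_diff mul eps m \<chi>"
      proof (rule ext)
        fix xs
        show "z xs = hoch_diff mul eps m \<chi> xs"
        proof (cases "length xs = n")
          case True
          then show ?thesis using C_htpy[OF zc zd True] GF Suc by (simp add: \<chi>_def hoch_diff_add algebra_simps)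
        next
          case False then show ?thesis using hoch_len[OF zc False] Suc by (simp add: hoch_diff_def)
        qed
      qed
      then show ?thesis using \<chi>c Suc by (auto simp: hoch_coboundaries_def)
    qed
  qed
next
  fix z w assume "z \<in> hoch_cocycles sc mul eps n" "w \<in> hoch_cocycles sc mul eps n"
  show "Fst n (\<lambda>x. z x + w x) = (\<lambda>y. Fst n z y + Fst n w y)" by (rule Fst_add)
next
  fix c z assume "z \<in> hoch_cocycles sc mul eps n"
  show "Fst n (\<lambda>x. c * z x) = (\<lambda>y. c * Fst n z y)" by (rule Fst_sc)
next
  fix w assume w: "w \<in> hom_cocycles scp P HP lft rgt eps d n"
  then have wh: "w \<in> homAA scp (P n) (HP n) lft rgt eps" and wd: "hom_diff P d n w = (\<lambda>_. 0)"
    by (auto simp: hom_cocycles_def)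
  have wb: "bimk n w" using wh homAA_iff by blast
  have cyc: "\<forall>y\<in>P (Suc n). w (d n y) = 0"
  proof
    fix y assume "y \<in> P (Suc n)"
    then show "w (d n y) = 0" using fun_cong[OF wd, of y] by (simp add: hom_diff_def)
  qed
  have z1: "Gst n w \<in> hoch_cocycles sc mul eps n"
    using Gst_coch[OF wb] Gst_chain[OF wb] wd Gst_zero by (simp add: hoch_cocycles_def)
  have "(\<lambda>y. w y - Fst n (Gst n w) y) \<in> hom_coboundaries scp P HP lft rgt eps d n"
  proof (cases n)
    case 0
    have "(\<lambda>y. w y - Fst n (Gst n w) y) = (\<lambda>_. 0)"
    proof (rule ext)
      fix y show "w y - Fst n (Gst n w) y = 0"
      proof (cases "y \<in> P n")
        case True then show ?thesis using surj_part[OF wb cyc True] 0 by simp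
      next
        case False then show ?thesis using bimk_out[OF wb False] by (simp add: Fst_def)
      qed
    qed
    then show ?thesis using 0 by (simp add: hom_coboundaries_def)
  next
    case (Suc m)
    have "(\<lambda>y. w y - Fst n (Gst n w) y) = hom_diff P d m (Tw m w)"
    proof (rule ext)
      fix y show "w y - Fst n (Gst n w) y = hom_diff P d m (Tw m w) y"
      proof (cases "y \<in> P n")
        case True
        then show ?thesis using surj_part[OF wb cyc True] Suc d_P[of y m] by (simp add: hom_diff_def Tw_def)
      next
        case False then show ?thesis using bimk_out[OF wb False] Suc by (simp add: Fst_def hom_diff_def)
      qed
    qed
    moreover have "Tw m w \<in> homAA scp (P m) (HP m) lft rgt eps"
      using Tw_bimk[of m w] wb Suc homAA_iff by simp
    ultimately show ?thesis using Suc by (simp add: hom_coboundaries_def)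
  qed
  then show "\<exists>z\<in>hoch_cocycles sc mul eps n. (\<lambda>y. w y - Fst n z y) \<in> hom_coboundaries scp P HP lft rgt eps d n"
    using z1 by blast
qed

end


theorem proposition4p24:
  fixes sc :: "'k::field \<Rightarrow> 'a::ab_group_add \<Rightarrow> 'a"
    and H :: "'g::ab_group_add \<Rightarrow> 'a set"
    and act :: "'g \<Rightarrow> 'a \<Rightarrow> 'a"
    and mul :: "'a \<Rightarrow> 'a \<Rightarrow> 'a" and one :: 'a and eps :: "'a \<Rightarrow> 'k"
    and scp :: "'k \<Rightarrow> 'p::ab_group_add \<Rightarrow> 'p"
    and P :: "nat \<Rightarrow> 'p set" and HP :: "nat \<Rightarrow> 'g \<Rightarrow> 'p set" and actp :: "'g \<Rightarrow> 'p \<Rightarrow> 'p"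
    and lft :: "'a \<Rightarrow> 'p \<Rightarrow> 'p" and rgt :: "'p \<Rightarrow> 'a \<Rightarrow> 'p"
    and d :: "nat \<Rightarrow> 'p \<Rightarrow> 'p" and aug :: "'p \<Rightarrow> 'a"
  assumes alg: "yd_aug_alg sc H act mul one eps"
    and vsp: "vector_space scp"
    and bimod: "\<forall>n. yd_bimod sc H act mul one scp (P n) (HP n) actp lft rgt"
    and diff: "\<forall>n. yd_bimod_hom scp (P (Suc n)) (HP (Suc n)) actp lft rgt scp (P n) (HP n) actp lft rgt (d n)"
    and augm: "yd_bimod_hom scp (P 0) (HP 0) actp lft rgt sc UNIV H act mul mul aug"
    and exact_aug: "aug ` P 0 = UNIV"
    and exact_0: "{x \<in> P 0. aug x = 0} = d 0 ` P 1"
    and exact_n: "\<forall>n. {x \<in> P (Suc n). d n x = 0} = d (Suc n) ` P (Suc (Suc n))"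
    and free: "\<forall>n. free_fin_graded sc lft rgt (P n) (HP n)"
  shows "\<forall>n. quot_iso (hoch_cocycles sc mul eps n) (hoch_coboundaries sc mul eps n)
                      (hom_cocycles scp P HP lft rgt eps d n) (hom_coboundaries scp P HP lft rgt eps d n)"
proof -
  interpret R sc H act mul one eps scp P HP actp lft rgt d aug
    by (rule R.intro[OF alg vsp bimod diff augm exact_aug exact_0 exact_n free])
  show ?thesis using main by blast
qed

end
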